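(* Let Assumption 1' hold. For every $c_1,\dots,c_n\in\mathbb{R}$, every $x_0\in\mathbb{R}^{pn}$ and every locally integrable input $u(\cdot)$, consider $\dot x=A_{\mathrm M}x+B_{\mathrm M}u$, $y=C_{\mathrm M}x$, $x(0)=x_0$, together with the filters $\dot\zeta=A_{\mathrm r,m}\zeta+B_{\mathrm r,m}u$, $\zeta(0)=0_{mn,1}$, and $\dot\mu=A_{\mathrm r,p}\mu+B_{\mathrm r,p}y$, $\mu(0)=0_{pn,1}$. Then $\chi=\mathrm{col}(\zeta,\mu)\in\mathbb{R}^{(m+p)n}$ satisfies, for all $t\ge0$, \[\dot\chi(t)=A_{\mathrm M,\mathrm f}\chi(t)+B_{\mathrm M,\mathrm f}u(t)+G_{\mathrm M,\mathrm f}\,\mathrm{e}^{A_{\mathrm r,p}^\top t}x_0,\] and the pair $(A_{\mathrm M,\mathrm f},B_{\mathrm M,\mathrm f})$ is reachable.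
   Context: Fix integers $n,m,p\ge1$ and matrices $A_i\in\mathbb{R}^{p\times p}$, $B_i\in\mathbb{R}^{p\times m}$, $i=1,\dots,n$, defining the MIMO system $y^{(n)}+A_1y^{(n-1)}+\dots+A_ny=B_1u^{(n-1)}+\dots+B_nu$, $y(t)\in\mathbb{R}^p$, $u(t)\in\mathbb{R}^m$. Assumption 1': this input–output system is the input–output description of a reachable and observable state-space system $\dot{\bar x}=\bar A\bar x+\bar Bu$, $y=\bar C\bar x$ of dimension $h=pn$ with $\mathrm{rank}\,\mathrm{col}(\bar C,\bar C\bar A,\dots,\bar C\bar A^{n-1})=h$. Define $C_{\mathrm M}=[0_{p,p(n-1)}\;I_p]$, $A_{\mathrm M}\in\mathbb{R}^{pn\times pn}$ whose first $p(n-1)$ columns are $\begin{bmatrix}0_{p,p(n-1)}\\ I_{p(n-1)}\end{bmatrix}$ and whose last $p$ columns are $\mathrm{col}(-A_n,\dots,-A_1)$, and $B_{\mathrm M}=\mathrm{col}(B_n,\dots,B_1)$. For real $c_1,\dots,c_n$, $A_{\mathrm r}\in\mathbb{R}^{n\times n}$ has first $n-1$ rows $[0_{n-1,1}\;I_{n-1}]$ and last row $(-c_n,\dots,-c_1)$, $B_{\mathrm r}=(0,\dots,0,1)^\top\in\mathbb{R}^n$; $A_{\mathrm r,m}=A_{\mathrm r}\otimes I_m$, $B_{\mathrm r,m}=B_{\mathrm r}\otimes I_m$, $A_{\mathrm r,p}=A_{\mathrm r}\otimes I_p$, $B_{\mathrm r,p}=B_{\mathrm r}\otimes I_p$ ($\otimes$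 the Kronecker product). Define $A_{\mathrm M,\mathrm f}=\begin{bmatrix}A_{\mathrm r,m}&0_{mn,pn}\\ L_{B}&A_{\mathrm c}\end{bmatrix}$, where $L_B\in\mathbb{R}^{pn\times mn}$ has first $(n-1)p$ rows zero and last $p$ rows $[B_n\;\cdots\;B_1]$, and $A_{\mathrm c}\in\mathbb{R}^{pn\times pn}$ has first $(n-1)p$ rows $[0_{(n-1)p,p}\;I_{(n-1)p}]$ and last $p$ rows $[-A_n\;\cdots\;-A_1]$; $B_{\mathrm M,\mathrm f}=\mathrm{col}(B_{\mathrm r,m},0_{pn,m})$; $G_{\mathrm M,\mathrm f}=\mathrm{col}(0_{mn,pn},B_{\mathrm r,p}C_{\mathrm M})$. *)

theory Defs
  imports "HOL-Analysis.Analysis" "Jordan_Normal_Form.DL_Rank"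
begin

definition kron :: "real mat \<Rightarrow> real mat \<Rightarrow> real mat" where
  "kron A B = mat (dim_row A * dim_row B) (dim_col A * dim_col B)
     (\<lambda>(i,j). A $$ (i div dim_row B, j div dim_col B) * B $$ (i mod dim_row B, j mod dim_col B))"

definition mat_exp :: "real mat \<Rightarrow> real \<Rightarrow> real mat" where
  "mat_exp M t = mat (dim_row M) (dim_col M)
     (\<lambda>(i,j). (\<Sum>k. (t ^ k / fact k) * (M ^\<^sub>m k) $$ (i,j)))"

definition mat_rank :: "real mat \<Rightarrow> nat" where
  "mat_rank M = vec_space.rank (dim_row M) M"

definition ctrb_mat :: "real mat \<Rightarrow> real mat \<Rightarrow> real mat" where
  "ctrb_mat A B = mat (dim_row A) (dim_row A * dim_col B)
     (\<lambda>(i,j). (A ^\<^sub>m (j div dim_col B) * B) $$ (i, j mod dim_col B))"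

definition reachable_pair :: "real mat \<Rightarrow> real mat \<Rightarrow> bool" where
  "reachable_pair A B \<longleftrightarrow> A \<in> carrier_mat (dim_row A) (dim_row A) \<and> dim_row B = dim_row A
     \<and> mat_rank (ctrb_mat A B) = dim_row A"

definition obs_mat :: "real mat \<Rightarrow> real mat \<Rightarrow> nat \<Rightarrow> real mat" where
  "obs_mat C A k = mat (dim_row C * k) (dim_col C)
     (\<lambda>(i,j). (C * A ^\<^sub>m (i div dim_row C)) $$ (i mod dim_row C, j))"

text \<open>Coefficients: A i, B i for i = 1..n; c i for i = 1..n.\<close>

definition A_r :: "nat \<Rightarrow> (nat \<Rightarrow> real) \<Rightarrow> real mat" where
  "A_r n c = mat n n (\<lambda>(i,j). if i < n - 1 then (if j = i + 1 then 1 else 0) else - c (n - j))"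

definition B_r :: "nat \<Rightarrow> real mat" where
  "B_r n = mat n 1 (\<lambda>(i,j). if i = n - 1 then 1 else 0)"

definition C_M :: "nat \<Rightarrow> nat \<Rightarrow> real mat" where
  "C_M n p = mat p (p * n) (\<lambda>(i,j). if j = p * (n - 1) + i then 1 else 0)"

definition A_M :: "nat \<Rightarrow> nat \<Rightarrow> (nat \<Rightarrow> real mat) \<Rightarrow> real mat" where
  "A_M n p A = mat (p * n) (p * n) (\<lambda>(i,j).
      if j < p * (n - 1) then (if i = j + p then 1 else 0)
      else - (A (n - i div p)) $$ (i mod p, j - p * (n - 1)))"

definition B_M :: "nat \<Rightarrow> nat \<Rightarrow> nat \<Rightarrow> (nat \<Rightarrow> real mat) \<Rightarrow> real mat" where
  "B_M n m p B = mat (p * n) m (\<lambda>(i,j). (B (n - i div p)) $$ (i mod p, j))"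

definition L_B :: "nat \<Rightarrow> nat \<Rightarrow> nat \<Rightarrow> (nat \<Rightarrow> real mat) \<Rightarrow> real mat" where
  "L_B n m p B = mat (p * n) (m * n) (\<lambda>(i,j).
      if i < (n - 1) * p then 0
      else (B (n - j div m)) $$ (i - (n - 1) * p, j mod m))"

definition A_c :: "nat \<Rightarrow> nat \<Rightarrow> (nat \<Rightarrow> real mat) \<Rightarrow> real mat" where
  "A_c n p A = mat (p * n) (p * n) (\<lambda>(i,j).
      if i < (n - 1) * p then (if j = i + p then 1 else 0)
      else - (A (n - j div p)) $$ (i - (n - 1) * p, j mod p))"

definition A_Mf :: "nat \<Rightarrow> nat \<Rightarrow> nat \<Rightarrow> (nat \<Rightarrow> real mat) \<Rightarrow> (nat \<Rightarrow> real mat)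
    \<Rightarrow> (nat \<Rightarrow> real) \<Rightarrow> real mat" where
  "A_Mf n m p A B c = four_block_mat (kron (A_r n c) (1\<^sub>m m)) (0\<^sub>m (m * n) (p * n))
      (L_B n m p B) (A_c n p A)"

definition B_Mf :: "nat \<Rightarrow> nat \<Rightarrow> nat \<Rightarrow> real mat" where
  "B_Mf n m p = kron (B_r n) (1\<^sub>m m) @\<^sub>r 0\<^sub>m (p * n) m"

definition G_Mf :: "nat \<Rightarrow> nat \<Rightarrow> nat \<Rightarrow> real mat" where
  "G_Mf n m p = 0\<^sub>m (m * n) (p * n) @\<^sub>r (kron (B_r n) (1\<^sub>m p) * C_M n p)"

text \<open>(Abar, Bbar, Cbar) has the given input-output description: eliminating the state from
  y = Cbar x, y' = Cbar Abar x + Cbar Bbar u, ... yields exactly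
  y^(n) + A_1 y^(n-1) + ... + A_n y = B_1 u^(n-1) + ... + B_n u, i.e. the coefficient of x
  vanishes and the coefficient of u^(i) equals B_(n-i).\<close>
definition io_description ::
  "nat \<Rightarrow> nat \<Rightarrow> nat \<Rightarrow> (nat \<Rightarrow> real mat) \<Rightarrow> (nat \<Rightarrow> real mat)
     \<Rightarrow> real mat \<Rightarrow> real mat \<Rightarrow> real mat \<Rightarrow> bool" where
  "io_description n m p A B Abar Bbar Cbar \<longleftrightarrow>
     (\<forall>r<p. \<forall>j<dim_row Abar.
        (Cbar * Abar ^\<^sub>m n) $$ (r,j) + (\<Sum>k=1..n. (A k * Cbar * Abar ^\<^sub>m (n - k)) $$ (r,j)) = 0)
   \<and> (\<forall>i<n. \<forall>r<p. \<forall>j<m.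
        (B (n - i)) $$ (r,j) = (Cbar * Abar ^\<^sub>m (n - 1 - i) * Bbar) $$ (r,j)
           + (\<Sum>k=1..n-1-i. (A k * Cbar * Abar ^\<^sub>m (n - 1 - i - k) * Bbar) $$ (r,j)))"

definition assumption_1' ::
  "nat \<Rightarrow> nat \<Rightarrow> nat \<Rightarrow> (nat \<Rightarrow> real mat) \<Rightarrow> (nat \<Rightarrow> real mat) \<Rightarrow> bool" where
  "assumption_1' n m p A B \<longleftrightarrow>
     (\<exists>Abar Bbar Cbar.
        Abar \<in> carrier_mat (p * n) (p * n) \<and> Bbar \<in> carrier_mat (p * n) m
      \<and> Cbar \<in> carrier_mat p (p * n)
      \<and> io_description n m p A B Abar Bbar Cbar
      \<and> reachable_pair Abar Bbar
      \<and> mat_rank (obs_mat Cbar Abar n) = p * n)"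

definition loc_integrable_input :: "nat \<Rightarrow> (real \<Rightarrow> real vec) \<Rightarrow> bool" where
  "loc_integrable_input m u \<longleftrightarrow>
     (\<forall>t. dim_vec (u t) = m) \<and> (\<forall>i<m. \<forall>t\<ge>0. set_integrable lborel {0..t} (\<lambda>s. u s $ i))"

definition solves_lin_ode ::
  "real mat \<Rightarrow> real mat \<Rightarrow> real vec \<Rightarrow> (real \<Rightarrow> real vec) \<Rightarrow> (real \<Rightarrow> real vec) \<Rightarrow> bool" where
  "solves_lin_ode A B x0 u x \<longleftrightarrow>
     (\<forall>t\<ge>0. dim_vec (x t) = dim_row A) \<and>
     (\<forall>t\<ge>0. \<forall>i<dim_row A.
        set_integrable lborel {0..t} (\<lambda>s. (A *\<^sub>v x s + B *\<^sub>v u s) $ i) \<and>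
        x t $ i = x0 $ i + (LINT s:{0..t}|lborel. (A *\<^sub>v x s + B *\<^sub>v u s) $ i))"

end

theory Submission
  imports Defs
begin

lemma self_scalar_zero:
  fixes v :: "real vec"
  assumes "v \<bullet> v = 0" "v \<in> carrier_vec c"
  shows "v = 0\<^sub>v c"
proof -
  have "(\<Sum>i\<in>{0..<c}. v $ i * v $ i) = 0" using assms unfolding scalar_prod_def by auto
  then have "\<forall>i\<in>{0..<c}. v $ i * v $ i = 0"
    by (subst sum_nonneg_eq_0_iff[symmetric]) auto
  then show ?thesis using assms(2) by (intro eq_vecI) auto
qed

lemma rank_R2:
  fixes M :: "real mat"
  assumes M: "M \<in> carrier_mat N c"
    and inj: "\<And>w. w \<in> carrier_vec N \<Longrightarrow> (\<forall>j<c. (\<Sum>i<N. w $ i * M $$ (i,j)) = 0) \<Longrightarrow> w = 0\<^sub>v N"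
  shows "vec_space.rank N M = N"
proof -
  interpret vec_space "TYPE(real)" N .
  define G where "G = M * M\<^sup>T"
  have G: "G \<in> carrier_mat N N" using M unfolding G_def by auto
  have detG: "det G \<noteq> 0"
  proof
    assume "det G = 0"
    then obtain v where v: "v \<in> carrier_vec N" "v \<noteq> 0\<^sub>v N" "G *\<^sub>v v = 0\<^sub>v N"
      using det_0_iff_vec_prod_zero_field[OF G] by auto
    have Mv: "M\<^sup>T *\<^sub>v v \<in> carrier_vec c" using M v by auto
    have "(M\<^sup>T *\<^sub>v v) \<bullet> (M\<^sup>T *\<^sub>v v) = v \<bullet> (M *\<^sub>v (M\<^sup>T *\<^sub>v v))"
      by (rule transpose_vec_mult_scalar[OF M Mv v(1)])
    also have "\<dots> = v \<bullet> (G *\<^sub>v v)" unfolding G_def using M v by simp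
    also have "\<dots> = 0" using v by simp
    finally have "M\<^sup>T *\<^sub>v v = 0\<^sub>v c"
      using Mv by (rule self_scalar_zero)
    then have "\<forall>j<c. (\<Sum>i<N. v $ i * M $$ (i,j)) = 0"
    proof (intro allI impI)
      fix j assume j: "j < c" and z: "M\<^sup>T *\<^sub>v v = 0\<^sub>v c"
      have "(M\<^sup>T *\<^sub>v v) $ j = 0" using z j by simp
      moreover have "(M\<^sup>T *\<^sub>v v) $ j = (\<Sum>i<N. v $ i * M $$ (i,j))"
        using M v j by (auto simp: scalar_prod_def atLeast0LessThan mult.commute intro!: sum.cong)
      ultimately show "(\<Sum>i<N. v $ i * M $$ (i,j)) = 0" by simp
    qed
    with inj v show False by blast
  qed
  have "G \<in> Units (ring_mat TYPE(real) N ())" by (rule det_non_zero_imp_unit[OF G detG])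
  then have "\<exists>Gi\<in>carrier_mat N N. Gi * G = 1\<^sub>m N \<and> G * Gi = 1\<^sub>m N"
    unfolding Units_def ring_mat_def by simp
  then obtain Gi where Gi: "Gi \<in> carrier_mat N N" "G * Gi = 1\<^sub>m N" by blast
  have cs: "span (set (cols M)) = {y\<in>carrier_vec N. \<exists>x\<in>carrier_vec c. M *\<^sub>v x = y}"
    using col_space_eq[OF M] M unfolding col_space_def by simp
  have span: "span (set (cols M)) = carrier V"
  proof
    show "span (set (cols M)) \<subseteq> carrier V" unfolding cs by auto
    show "carrier V \<subseteq> span (set (cols M))"
    proof
      fix y :: "real vec" assume "y \<in> carrier V"
      then have y: "y \<in> carrier_vec N" by simp
      have Gy: "Gi *\<^sub>v y \<in> carrier_vec N" using Gi y by simp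
      have "M *\<^sub>v (M\<^sup>T *\<^sub>v (Gi *\<^sub>v y)) = (M * M\<^sup>T) *\<^sub>v (Gi *\<^sub>v y)"
        using M Gy by (simp add: assoc_mult_mat_vec)
      also have "\<dots> = G *\<^sub>v (Gi *\<^sub>v y)" unfolding G_def ..
      also have "\<dots> = (G * Gi) *\<^sub>v y" by (rule assoc_mult_mat_vec[symmetric, OF G Gi(1) y])
      also have "\<dots> = y" using Gi y by simp
      finally have "M *\<^sub>v (M\<^sup>T *\<^sub>v (Gi *\<^sub>v y)) = y" .
      moreover have "M\<^sup>T *\<^sub>v (Gi *\<^sub>v y) \<in> carrier_vec c" using M Gy by simp
      ultimately show "y \<in> span (set (cols M))" unfolding cs using y by blast
    qed
  qed
  have vsV: "vs (carrier V) = V" by simp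
  show ?thesis unfolding rank_def span vsV by (rule dim_is_n)
qed

lemma rank_R1:
  fixes M :: "real mat"
  assumes M: "M \<in> carrier_mat N c"
    and rk: "vec_space.rank N M = N"
    and w: "w \<in> carrier_vec N"
    and orth: "\<forall>j<c. (\<Sum>i<N. w $ i * M $$ (i,j)) = 0"
  shows "w = 0\<^sub>v N"
proof -
  interpret vec_space "TYPE(real)" N .
  obtain S where S: "maximal S (\<lambda>T. T \<subseteq> set (cols M) \<and> lin_indpt T)"
    using maximal_exists[of "(\<lambda>T. T \<subseteq> set (cols M) \<and> lin_indpt T)" "card (set (cols M))" "{}"]
    by (meson List.finite_set card_mono empty_iff empty_subsetI finite_lin_indpt2 rev_finite_subset)
  have cardS: "card S = N" using rank_card_indpt[OF M S] rk by simp
  have Ssub: "S \<subseteq> set (cols M)" and Sli: "lin_indpt S" using S unfolding maximal_def by auto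
  have colsC: "set (cols M) \<subseteq> carrier V" using cols_dim[of M] carrier_matD(1)[OF M] by simp
  have finS: "finite S" using Ssub finite_subset by blast
  have "basis S"
    by (rule dim_li_is_basis) (use finS Ssub colsC Sli cardS in \<open>auto simp: dim_is_n\<close>)
  then have spanS: "span S = carrier V" unfolding basis_def by auto
  have "span S \<subseteq> span (set (cols M))" by (rule span_is_monotone[OF Ssub])
  then have wspan: "w \<in> span (set (cols M))" using spanS w by auto
  have cs: "span (set (cols M)) = {y\<in>carrier_vec N. \<exists>x\<in>carrier_vec c. M *\<^sub>v x = y}"
    using col_space_eq[OF M] M unfolding col_space_def by simp
  obtain x where x: "x \<in> carrier_vec c" "M *\<^sub>v x = w" using wspan unfolding cs by blast
  have MTw: "M\<^sup>T *\<^sub>v w = 0\<^sub>v c"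
  proof (rule eq_vecI)
    fix j assume "j < dim_vec (0\<^sub>v c :: real vec)"
    then have j: "j < c" by simp
    have "(M\<^sup>T *\<^sub>v w) $ j = (\<Sum>i<N. w $ i * M $$ (i,j))"
      using M w j by (auto simp: scalar_prod_def atLeast0LessThan mult.commute intro!: sum.cong)
    then show "(M\<^sup>T *\<^sub>v w) $ j = 0\<^sub>v c $ j" using orth j by simp
  qed (use M in simp)
  have "w \<bullet> w = w \<bullet> (M *\<^sub>v x)" using x by simp
  also have "\<dots> = (M\<^sup>T *\<^sub>v w) \<bullet> x" by (rule transpose_vec_mult_scalar[OF M x(1) w, symmetric])
  also have "\<dots> = 0" unfolding MTw using x by simp
  finally show ?thesis using w by (rule self_scalar_zero)
qed

lemma sum_blocks: fixes g :: "nat \<Rightarrow> real" shows "(\<Sum>i<n*p. g i) = (\<Sum>b<n. \<Sum>r<p. g (b*p + r))"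
proof -
  have "(\<Sum>i<n*p. g i) = (\<Sum>b<n. sum g {b*p..<b*p+p})"
    using sum.nat_group[of g p n] by (simp add: lessThan_atLeast0)
  also have "\<dots> = (\<Sum>b<n. \<Sum>r<p. g (b*p + r))"
  proof (rule sum.cong[OF refl])
    fix b
    have "\<And>a q. sum g {a..<a+q} = (\<Sum>r<q. g (a + r))"
    proof -
      fix a q show "sum g {a..<a+q} = (\<Sum>r<q. g (a + r))" by (induct q) auto
    qed
    then show "sum g {b*p..<b*p+p} = (\<Sum>r<p. g (b*p + r))" .
  qed
  finally show ?thesis .
qed

lemma bdiv[simp]: "t < (m::nat) \<Longrightarrow> (b*m+t) div m = b" by simp
lemma bmod[simp]: "t < (m::nat) \<Longrightarrow> (b*m+t) mod m = t" by simp
lemma blt: "b < n \<Longrightarrow> t < (m::nat) \<Longrightarrow> b*m+t < n*m"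
proof -
  assume "b < n" "t < m"
  then have "b*m + t < b*m + m" by simp
  also have "\<dots> = Suc b * m" by simp
  also have "\<dots> \<le> n * m" using \<open>b<n\<close> by (intro mult_le_mono1) simp
  finally show ?thesis .
qed
lemma beq: "t < (m::nat) \<Longrightarrow> t' < m \<Longrightarrow> (b*m+t = b'*m+t') = (b = b' \<and> t = t')"
  by (metis bdiv bmod)

lemma mult_entry:
  fixes X Y :: "real mat"
  assumes "X \<in> carrier_mat a b" "Y \<in> carrier_mat b c" "i < a" "j < c"
  shows "(X * Y) $$ (i,j) = (\<Sum>l<b. X $$ (i,l) * Y $$ (l,j))"
  using assms by (auto simp: scalar_prod_def atLeast0LessThan intro!: sum.cong)

lemma mv_entry:
  fixes X :: "real mat"
  assumes "X \<in> carrier_mat a b" "v \<in> carrier_vec b" "i < a"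
  shows "(X *\<^sub>v v) $ i = (\<Sum>l<b. X $$ (i,l) * v $ l)"
  using assms by (auto simp: scalar_prod_def atLeast0LessThan intro!: sum.cong)

lemma rowit_gen:
  fixes f :: "nat \<Rightarrow> nat \<Rightarrow> real" and M X :: "real mat"
  assumes M: "M \<in> carrier_mat d d"
    and rec: "\<And>k j. j < d \<Longrightarrow> f (Suc k) j = (\<Sum>i<d. f k i * M $$ (i,j))"
  shows "X \<in> carrier_mat d e \<Longrightarrow> l < e \<Longrightarrow>
     (\<Sum>i<d. f k i * X $$ (i,l)) = (\<Sum>i<d. f 0 i * (M ^\<^sub>m k * X) $$ (i,l))"
proof (induct k arbitrary: X)
  case 0
  then show ?case using M by simp
next
  case (Suc k)
  have MX: "M * X \<in> carrier_mat d e" using M Suc.prems by simp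
  have "(\<Sum>i<d. f (Suc k) i * X $$ (i,l)) = (\<Sum>i<d. (\<Sum>j<d. f k j * M $$ (j,i)) * X $$ (i,l))"
    using rec by simp
  also have "\<dots> = (\<Sum>j<d. f k j * (\<Sum>i<d. M $$ (j,i) * X $$ (i,l)))"
    unfolding sum_distrib_left sum_distrib_right mult.assoc by (rule sum.swap)
  also have "\<dots> = (\<Sum>j<d. f k j * (M * X) $$ (j,l))"
    by (rule sum.cong[OF refl], subst mult_entry[OF M Suc.prems(1) _ Suc.prems(2)]) auto
  also have "\<dots> = (\<Sum>i<d. f 0 i * (M ^\<^sub>m k * (M * X)) $$ (i,l))"
    using Suc.hyps[OF MX Suc.prems(2)] .
  also have "M ^\<^sub>m k * (M * X) = M ^\<^sub>m Suc k * X"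
    using M Suc.prems by (simp add: assoc_mult_mat[symmetric, of _ d d _ d _ e])
  finally show ?case .
qed

lemma unroll:
  fixes g :: "nat \<Rightarrow> nat \<Rightarrow> real" and \<beta> :: "nat \<Rightarrow> nat \<Rightarrow> real" and G :: "nat \<Rightarrow> nat \<Rightarrow> real"
  assumes rec: "\<And>k j. k < K \<Longrightarrow> j < n \<Longrightarrow>
      g (Suc k) j = (if 1 \<le> j then g k (j-1) else 0) + (\<Sum>r<p. \<beta> k r * G (n-j) r)"
  shows "k \<le> K \<Longrightarrow> j < n \<Longrightarrow> g k j = (if k \<le> j then g 0 (j-k) else 0)
            + (\<Sum>i<min k (Suc j). \<Sum>r<p. \<beta> (k-1-i) r * G (n-j+i) r)"
proof (induct k arbitrary: j)
  case 0
  then show ?case by simp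
next
  case (Suc k)
  have kK: "k < K" using Suc.prems by simp
  show ?case
  proof (cases j)
    case 0
    then show ?thesis using rec[OF kK Suc.prems(2)] by simp
  next
    case (Suc j')
    have IH: "g k j' = (if k \<le> j' then g 0 (j'-k) else 0)
            + (\<Sum>i<min k (Suc j'). \<Sum>r<p. \<beta> (k-1-i) r * G (n-j'+i) r)"
      using Suc.hyps[of j'] Suc.prems Suc by simp
    have "min (Suc k) (Suc j) = Suc (min k (Suc j'))" using Suc by simp
    then have "(\<Sum>i<min (Suc k) (Suc j). \<Sum>r<p. \<beta> (Suc k-1-i) r * G (n-j+i) r)
       = (\<Sum>i<Suc (min k (Suc j')). \<Sum>r<p. \<beta> (Suc k-1-i) r * G (n-j+i) r)" by simp
    also have "\<dots> = (\<Sum>r<p. \<beta> (Suc k-1-0) r * G (n-j+0) r) + (\<Sum>i<min k (Suc j'). \<Sum>r<p. \<beta> (Suc k-1-Suc i) r * G (n-j+Suc i) r)"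
      by (rule sum.lessThan_Suc_shift)
    also have "\<dots> = (\<Sum>r<p. \<beta> k r * G (n-j) r) + (\<Sum>i<min k (Suc j'). \<Sum>r<p. \<beta> (k-1-i) r * G (n-j'+i) r)"
    proof -
      have "\<And>i. Suc (n - j + i) = n + i - j'" "\<And>i. n - j' + i = n + i - j'" using Suc Suc.prems by simp_all
      then show ?thesis by simp
    qed
    finally have eq: "(\<Sum>i<min (Suc k) (Suc j). \<Sum>r<p. \<beta> (Suc k-1-i) r * G (n-j+i) r)
       = (\<Sum>r<p. \<beta> k r * G (n-j) r) + (\<Sum>i<min k (Suc j'). \<Sum>r<p. \<beta> (k-1-i) r * G (n-j'+i) r)" .
    have "g (Suc k) j = g k j' + (\<Sum>r<p. \<beta> k r * G (n-j) r)" using rec[OF kK Suc.prems(2)] Suc by simp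
    also have "\<dots> = (if Suc k \<le> j then g 0 (j - Suc k) else 0) + ((\<Sum>r<p. \<beta> k r * G (n-j) r)
        + (\<Sum>i<min k (Suc j'). \<Sum>r<p. \<beta> (k-1-i) r * G (n-j'+i) r))"
      unfolding IH using Suc by simp
    also have "\<dots> = (if Suc k \<le> j then g 0 (j - Suc k) else 0) +
        (\<Sum>i<min (Suc k) (Suc j). \<Sum>r<p. \<beta> (Suc k-1-i) r * G (n-j+i) r)"
      unfolding eq ..
    finally show ?thesis .
  qed
qed

lemma sum_add_split:
  fixes g :: "nat \<Rightarrow> real"
  shows "(\<Sum>i<a+b. g i) = (\<Sum>i<a. g i) + (\<Sum>i<b. g (a+i))"
  by (induct b) (auto simp: ac_simps)

lemma sum_delta_mult:
  fixes g :: "nat \<Rightarrow> real"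
  assumes "t < m"
  shows "(\<Sum>t'<m. g t' * (if t' = t then 1 else 0)) = g t"
        "(\<Sum>t'<m. g t' * (if t = t' then 1 else 0)) = g t"
        "(\<Sum>t'<m. (if t' = t then 1 else 0) * g t') = g t"
        "(\<Sum>t'<m. (if t = t' then 1 else 0) * g t') = g t"
proof -
  have "(\<Sum>t'<m. g t' * (if t' = t then 1 else 0)) = (\<Sum>t'<m. if t' = t then g t' else 0)"
    by (intro sum.cong) auto
  also have "\<dots> = g t" using assms by simp
  finally show "(\<Sum>t'<m. g t' * (if t' = t then 1 else 0)) = g t" .
  have "(\<Sum>t'<m. g t' * (if t = t' then 1 else 0)) = (\<Sum>t'<m. if t' = t then g t' else 0)"
    by (intro sum.cong) auto
  also have "\<dots> = g t" using assms by simp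
  finally show "(\<Sum>t'<m. g t' * (if t = t' then 1 else 0)) = g t" .
  have "(\<Sum>t'<m. (if t' = t then 1 else 0) * g t') = (\<Sum>t'<m. if t' = t then g t' else 0)"
    by (intro sum.cong) auto
  also have "\<dots> = g t" using assms by simp
  finally show "(\<Sum>t'<m. (if t' = t then 1 else 0) * g t') = g t" .
  have "(\<Sum>t'<m. (if t = t' then 1 else 0) * g t') = (\<Sum>t'<m. if t' = t then g t' else 0)"
    by (intro sum.cong) auto
  also have "\<dots> = g t" using assms by simp
  finally show "(\<Sum>t'<m. (if t = t' then 1 else 0) * g t') = g t" .
qed

lemma kron_entry:
  assumes "X \<in> carrier_mat a b" "Y \<in> carrier_mat c d" "i < a" "k < c" "j < b" "l < d"
  shows "kron X Y $$ (i*c+k, j*d+l) = X $$ (i,j) * Y $$ (k,l)"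
  using assms blt[of i a k c] blt[of j b l d] unfolding kron_def by simp

lemma kron_carrier: "X \<in> carrier_mat a b \<Longrightarrow> Y \<in> carrier_mat c d \<Longrightarrow> kron X Y \<in> carrier_mat (a*c) (b*d)"
  unfolding kron_def by auto

lemma blt_iff: "r < (p::nat) \<Longrightarrow> (b*p + r < q*p) = (b < q)"
proof
  assume "r < p" "b*p + r < q*p"
  then have "b*p < q*p" by linarith
  then show "b < q" by (metis mult_less_cancel2)
next
  assume "r < p" "b < q"
  then show "b*p + r < q*p" using blt by blast
qed

lemma A_r_entry: "b' < n \<Longrightarrow> b < n \<Longrightarrow> A_r n c $$ (b',b) = (if b' < n - 1 then (if b = b'+1 then 1 else 0) else - c (n-b))"
  unfolding A_r_def by simp

lemma A_r_carrier: "A_r n c \<in> carrier_mat n n" unfolding A_r_def by simp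
lemma B_r_carrier: "B_r n \<in> carrier_mat n 1" unfolding B_r_def by simp

lemma A_r_colsum:
  fixes g :: "nat \<Rightarrow> real"
  assumes "b < n"
  shows "(\<Sum>b'<n. g b' * A_r n c $$ (b',b)) = (if 1 \<le> b then g (b-1) else 0) - c (n-b) * g (n-1)"
proof -
  obtain n1 where n: "n = Suc n1" using assms by (cases n) auto
  have "(\<Sum>b'<n. g b' * A_r n c $$ (b',b)) = (\<Sum>b'<n1. g b' * (if b = b'+1 then 1 else 0)) - c (n-b) * g n1"
    using assms unfolding n by (simp add: A_r_entry)
  also have "(\<Sum>b'<n1. g b' * (if b = b'+1 then 1 else 0)) = (if 1 \<le> b then g (b-1) else 0)"
  proof (cases b)
    case 0 then show ?thesis by simp
  next
    case (Suc b1)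
    then have "b1 < n1" using assms n by simp
    then show ?thesis using Suc sum_delta_mult(2)[of b1 n1 g] by simp
  qed
  finally show ?thesis using n by simp
qed

lemma AMf_dims:
  "dim_row (A_Mf n m p A B c) = n*m + p*n" "dim_col (A_Mf n m p A B c) = n*m + p*n"
  "A_Mf n m p A B c \<in> carrier_mat (n*m + p*n) (n*m + p*n)"
  unfolding A_Mf_def kron_def A_r_def A_c_def by auto

lemma BMf_dims: "B_Mf n m p \<in> carrier_mat (n*m + p*n) m"
  unfolding B_Mf_def kron_def B_r_def by (auto simp: append_rows_def)

lemma AMf_col_z:
  fixes f :: "nat \<Rightarrow> real"
  assumes b: "b < n" and t: "t < m"
  shows "(\<Sum>i<n*m+p*n. f i * A_Mf n m p A B c $$ (i, b*m+t)) =
     (if 1 \<le> b then f ((b-1)*m+t) else 0) - c (n-b) * f ((n-1)*m+t)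
     + (\<Sum>r<p. f (n*m + (n-1)*p + r) * B (n-b) $$ (r,t))"
proof -
  obtain n1 where n: "n = Suc n1" using b by (cases n) auto
  have j: "b*m+t < n*m" using blt[OF b t] .
  let ?K = "kron (A_r n c) (1\<^sub>m m)"
  have K: "?K \<in> carrier_mat (n*m) (n*m)" using kron_carrier[OF A_r_carrier, of "1\<^sub>m m" m m] by simp
  have dL: "dim_row (L_B n m p B) = p*n" "dim_col (L_B n m p B) = m*n" unfolding L_B_def by auto
  have dC: "dim_row (A_c n p A) = p*n" "dim_col (A_c n p A) = p*n" unfolding A_c_def by auto
  have "(\<Sum>i<n*m+p*n. f i * A_Mf n m p A B c $$ (i, b*m+t)) =
       (\<Sum>i<n*m. f i * A_Mf n m p A B c $$ (i, b*m+t)) + (\<Sum>i<p*n. f (n*m+i) * A_Mf n m p A B c $$ (n*m+i, b*m+t))"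
    by (rule sum_add_split)
  also have "(\<Sum>i<n*m. f i * A_Mf n m p A B c $$ (i, b*m+t)) = (\<Sum>i<n*m. f i * ?K $$ (i, b*m+t))"
    using j K dC unfolding A_Mf_def by (intro sum.cong refl) (simp add: carrier_matD)
  also have "\<dots> = (\<Sum>b'<n. \<Sum>t'<m. f (b'*m+t') * ?K $$ (b'*m+t', b*m+t))" by (rule sum_blocks)
  also have "\<dots> = (\<Sum>b'<n. \<Sum>t'<m. f (b'*m+t') * (A_r n c $$ (b',b) * (if t' = t then 1 else 0)))"
    using b t by (intro sum.cong refl) (simp add: kron_entry[OF A_r_carrier, of "1\<^sub>m m" m m])
  also have "\<dots> = (\<Sum>b'<n. f (b'*m+t) * A_r n c $$ (b',b))"
  proof (rule sum.cong[OF refl])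
    fix b' show "(\<Sum>t'<m. f (b'*m+t') * (A_r n c $$ (b',b) * (if t' = t then 1 else 0))) = f (b'*m+t) * A_r n c $$ (b',b)"
      using sum_delta_mult(1)[OF t, of "\<lambda>t'. f (b'*m+t') * A_r n c $$ (b',b)"] by (simp add: mult.assoc)
  qed
  also have "\<dots> = (if 1 \<le> b then f ((b-1)*m+t) else 0) - c (n-b) * f ((n-1)*m+t)"
    by (rule A_r_colsum[OF b])
  also have "(\<Sum>i<p*n. f (n*m+i) * A_Mf n m p A B c $$ (n*m+i, b*m+t)) = (\<Sum>i<n*p. f (n*m+i) * L_B n m p B $$ (i, b*m+t))"
    using j K dC dL unfolding A_Mf_def by (intro sum.cong refl) (auto simp: carrier_matD mult.commute)
  also have "\<dots> = (\<Sum>b'<n. \<Sum>r<p. f (n*m+(b'*p+r)) * L_B n m p B $$ (b'*p+r, b*m+t))" by (rule sum_blocks)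
  also have "\<dots> = (\<Sum>b'<n. \<Sum>r<p. f (n*m+(b'*p+r)) * (if b' < n-1 then 0 else B (n-b) $$ (r, t)))"
  proof (intro sum.cong refl)
    fix b' r assume b': "b' \<in> {..<n}" and r: "r \<in> {..<p}"
    have i: "b'*p+r < p*n" using blt[of b' n r p] b' r by (simp add: mult.commute)
    have j': "b*m+t < m*n" using j by (simp add: mult.commute)
    have e: "\<not> b' < n - 1 \<Longrightarrow> b'*p + r - (n-1)*p = r" using b' by (subgoal_tac "b' = n-1") auto
    show "f (n*m+(b'*p+r)) * L_B n m p B $$ (b'*p+r, b*m+t) = f (n*m+(b'*p+r)) * (if b' < n-1 then 0 else B (n-b) $$ (r, t))"
      using i j' b' r t blt_iff[of r p b' "n-1"] e unfolding L_B_def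
      by (auto simp: mult.commute[of "n-1" p])
  qed
  also have "\<dots> = (\<Sum>r<p. f (n*m + (n-1)*p + r) * B (n-b) $$ (r,t))"
    unfolding n by (simp add: ac_simps)
  finally show ?thesis .
qed

lemma AMf_col_mu:
  fixes f :: "nat \<Rightarrow> real"
  assumes b: "b < n" and r: "r < p"
  shows "(\<Sum>i<n*m+p*n. f i * A_Mf n m p A B c $$ (i, n*m+(b*p+r))) =
     (if 1 \<le> b then f (n*m+((b-1)*p+r)) else 0) - (\<Sum>r'<p. f (n*m + ((n-1)*p + r')) * A (n-b) $$ (r',r))"
proof -
  obtain n1 where n: "n = Suc n1" using b by (cases n) auto
  have j: "b*p+r < p*n" using blt[OF b r] by (simp add: mult.commute)
  let ?K = "kron (A_r n c) (1\<^sub>m m)"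
  have K: "?K \<in> carrier_mat (n*m) (n*m)" using kron_carrier[OF A_r_carrier, of "1\<^sub>m m" m m] by simp
  have dL: "dim_row (L_B n m p B) = p*n" "dim_col (L_B n m p B) = m*n" unfolding L_B_def by auto
  have dC: "dim_row (A_c n p A) = p*n" "dim_col (A_c n p A) = p*n" unfolding A_c_def by auto
  have "(\<Sum>i<n*m+p*n. f i * A_Mf n m p A B c $$ (i, n*m+(b*p+r))) =
       (\<Sum>i<n*m. f i * A_Mf n m p A B c $$ (i, n*m+(b*p+r))) + (\<Sum>i<p*n. f (n*m+i) * A_Mf n m p A B c $$ (n*m+i, n*m+(b*p+r)))"
    by (rule sum_add_split)
  also have "(\<Sum>i<n*m. f i * A_Mf n m p A B c $$ (i, n*m+(b*p+r))) = 0"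
    using j K dC unfolding A_Mf_def by (intro sum.neutral) (auto simp: carrier_matD mult.commute[of m n])
  also have "(\<Sum>i<p*n. f (n*m+i) * A_Mf n m p A B c $$ (n*m+i, n*m+(b*p+r))) = (\<Sum>i<n*p. f (n*m+i) * A_c n p A $$ (i, b*p+r))"
    using j K dC dL unfolding A_Mf_def by (intro sum.cong refl) (auto simp: carrier_matD mult.commute)
  also have "\<dots> = (\<Sum>b'<n. \<Sum>r'<p. f (n*m+(b'*p+r')) * A_c n p A $$ (b'*p+r', b*p+r))" by (rule sum_blocks)
  also have "\<dots> = (\<Sum>b'<n. \<Sum>r'<p. f (n*m+(b'*p+r')) *
       (if b' < n-1 then (if b = b'+1 \<and> r = r' then 1 else 0) else - A (n-b) $$ (r', r)))"
  proof (intro sum.cong refl)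
    fix b' r' assume b': "b' \<in> {..<n}" and r': "r' \<in> {..<p}"
    have i: "b'*p+r' < p*n" using blt[of b' n r' p] b' r' by (simp add: mult.commute)
    have e: "\<not> b' < n - 1 \<Longrightarrow> b'*p + r' - (n-1)*p = r'" using b' by (subgoal_tac "b' = n-1") auto
    have e2: "(b*p+r = b'*p+r'+p) = (b = b'+1 \<and> r = r')"
      using beq[of r p r' b "b'+1"] r r' by (simp add: ac_simps)
    show "f (n*m+(b'*p+r')) * A_c n p A $$ (b'*p+r', b*p+r) = f (n*m+(b'*p+r')) *
       (if b' < n-1 then (if b = b'+1 \<and> r = r' then 1 else 0) else - A (n-b) $$ (r', r))"
      using i j b' r r' blt_iff[of r' p b' "n-1"] e e2 unfolding A_c_def
      by (auto simp: mult.commute[of "n-1" p])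
  qed
  also have "\<dots> = (\<Sum>b'<n1. \<Sum>r'<p. f (n*m+(b'*p+r')) * (if b = b'+1 \<and> r = r' then 1 else 0))
      - (\<Sum>r'<p. f (n*m + ((n-1)*p + r')) * A (n-b) $$ (r',r))"
    unfolding n by (simp add: sum_negf)
  also have "(\<Sum>b'<n1. \<Sum>r'<p. f (n*m+(b'*p+r')) * (if b = b'+1 \<and> r = r' then 1 else 0))
     = (\<Sum>b'<n1. f (n*m+(b'*p+r)) * (if b = b'+1 then 1 else 0))"
  proof (rule sum.cong[OF refl])
    fix b' show "(\<Sum>r'<p. f (n*m+(b'*p+r')) * (if b = b'+1 \<and> r = r' then 1 else 0)) = f (n*m+(b'*p+r)) * (if b = b'+1 then 1 else 0)"
      using sum_delta_mult(2)[OF r, of "\<lambda>r'. f (n*m+(b'*p+r')) * (if b = b'+1 then 1 else 0)"]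
      by (simp add: if_distrib[of "\<lambda>x. _ * x"] cong: if_cong) (smt (verit) sum.cong)
  qed
  also have "\<dots> = (if 1 \<le> b then f (n*m+((b-1)*p+r)) else 0)"
  proof (cases b)
    case 0 then show ?thesis by simp
  next
    case (Suc b1)
    then have "b1 < n1" using b n by simp
    then show ?thesis using Suc sum_delta_mult(2)[of b1 n1 "\<lambda>b'. f (n*m+(b'*p+r))"] by simp
  qed
  finally show ?thesis by simp
qed

lemma B_r_entry: "b' < n \<Longrightarrow> B_r n $$ (b', 0) = (if b' = n-1 then 1 else 0)"
  unfolding B_r_def by simp

lemma BMf_row:
  fixes f :: "nat \<Rightarrow> real"
  assumes n: "n \<ge> 1" and l: "l < m"
  shows "(\<Sum>i<n*m+p*n. f i * B_Mf n m p $$ (i, l)) = f ((n-1)*m + l)"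
proof -
  let ?K = "kron (B_r n) (1\<^sub>m m)"
  have K: "?K \<in> carrier_mat (n*m) (1*m)" using kron_carrier[OF B_r_carrier, of "1\<^sub>m m" m m] by simp
  have "(\<Sum>i<n*m+p*n. f i * B_Mf n m p $$ (i, l)) =
       (\<Sum>i<n*m. f i * B_Mf n m p $$ (i, l)) + (\<Sum>i<p*n. f (n*m+i) * B_Mf n m p $$ (n*m+i, l))"
    by (rule sum_add_split)
  also have "(\<Sum>i<p*n. f (n*m+i) * B_Mf n m p $$ (n*m+i, l)) = 0"
    using K l unfolding B_Mf_def append_rows_def by (intro sum.neutral) (auto simp: carrier_matD)
  also have "(\<Sum>i<n*m. f i * B_Mf n m p $$ (i, l)) = (\<Sum>i<n*m. f i * ?K $$ (i, 0*m+l))"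
    using K l unfolding B_Mf_def append_rows_def by (intro sum.cong refl) (auto simp: carrier_matD)
  also have "\<dots> = (\<Sum>b'<n. \<Sum>t'<m. f (b'*m+t') * ?K $$ (b'*m+t', 0*m+l))" by (rule sum_blocks)
  also have "\<dots> = (\<Sum>b'<n. \<Sum>t'<m. f (b'*m+t') * ((if b' = n-1 then 1 else 0) * (if t' = l then 1 else 0)))"
  proof (intro sum.cong refl)
    fix b' t' assume "b' \<in> {..<n}" "t' \<in> {..<m}"
    then show "f (b'*m+t') * ?K $$ (b'*m+t', 0*m+l) = f (b'*m+t') * ((if b' = n-1 then 1 else 0) * (if t' = l then 1 else 0))"
      using kron_entry[where X="B_r n" and Y="1\<^sub>m m" and a=n and b=1 and c=m and d=m and i=b' and k=t' and j=0 and l=l]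
        l B_r_entry[of b' n] B_r_carrier[of n] by simp
  qed
  also have "\<dots> = (\<Sum>b'<n. f (b'*m+l) * (if b' = n-1 then 1 else 0))"
  proof (rule sum.cong[OF refl])
    fix b' show "(\<Sum>t'<m. f (b'*m+t') * ((if b' = n-1 then 1 else 0) * (if t' = l then 1 else 0))) = f (b'*m+l) * (if b' = n-1 then 1 else 0)"
      using sum_delta_mult(1)[OF l, of "\<lambda>t'. f (b'*m+t') * (if b' = n-1 then 1 else 0)"] by (simp add: mult.assoc)
  qed
  also have "\<dots> = f ((n-1)*m + l)" using n sum_delta_mult(1)[of "n-1" n "\<lambda>b'. f (b'*m+l)"] by simp
  finally show ?thesis by simp
qed

definition Ap :: "(nat \<Rightarrow> real mat) \<Rightarrow> nat \<Rightarrow> nat \<Rightarrow> nat \<Rightarrow> real" where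
  "Ap A k r r' = (if k = 0 then (if r = r' then 1 else 0) else A k $$ (r,r'))"

definition Cp :: "real mat \<Rightarrow> real mat \<Rightarrow> nat \<Rightarrow> nat \<Rightarrow> nat \<Rightarrow> real" where
  "Cp Cb Ab q r j = (Cb * Ab ^\<^sub>m q) $$ (r,j)"

lemma Cp_Suc:
  assumes Ab: "Ab \<in> carrier_mat d d" and Cb: "Cb \<in> carrier_mat p d" and r: "r < p" and j: "j < d"
  shows "Cp Cb Ab (Suc q) r j = (\<Sum>l<d. Cp Cb Ab q r l * Ab $$ (l,j))"
proof -
  have "Cb * Ab ^\<^sub>m Suc q = (Cb * Ab ^\<^sub>m q) * Ab"
    using Ab Cb by (simp add: assoc_mult_mat[symmetric, of _ p d _ d _ d])
  moreover have "((Cb * Ab ^\<^sub>m q) * Ab) $$ (r,j) = (\<Sum>l<d. (Cb * Ab ^\<^sub>m q) $$ (r,l) * Ab $$ (l,j))"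
    by (rule mult_entry[of _ p d _ d]) (use Ab Cb r j in auto)
  ultimately show ?thesis unfolding Cp_def by simp
qed

lemma Ap_sum_delta:
  fixes g :: "nat \<Rightarrow> real"
  assumes "r < p"
  shows "(\<Sum>r'<p. Ap A 0 r r' * g r') = g r"
  unfolding Ap_def using sum_delta_mult(4)[OF assms, of g] by simp

lemma io1':
  assumes io: "io_description n m p A B Ab Bb Cb"
    and Ab: "Ab \<in> carrier_mat (p*n) (p*n)" and Cb: "Cb \<in> carrier_mat p (p*n)"
    and Ak: "\<forall>i\<in>{1..n}. A i \<in> carrier_mat p p"
    and r: "r < p" and j: "j < p*n"
  shows "(\<Sum>k<Suc n. \<Sum>r'<p. Ap A k r r' * Cp Cb Ab (n-k) r' j) = 0"
proof -
  have h: "(Cb * Ab ^\<^sub>m n) $$ (r,j) + (\<Sum>k=1..n. (A k * Cb * Ab ^\<^sub>m (n - k)) $$ (r,j)) = 0"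
    using io r j Ab unfolding io_description_def by auto
  have e: "\<And>k. k \<in> {1..n} \<Longrightarrow> (A k * Cb * Ab ^\<^sub>m (n - k)) $$ (r,j) = (\<Sum>r'<p. A k $$ (r,r') * Cp Cb Ab (n-k) r' j)"
  proof -
    fix k assume k: "k \<in> {1..n}"
    have Akc: "A k \<in> carrier_mat p p" using Ak k by auto
    have "A k * Cb * Ab ^\<^sub>m (n - k) = A k * (Cb * Ab ^\<^sub>m (n - k))"
      using Akc Cb Ab by (simp add: assoc_mult_mat[of _ p p _ "p*n" _ "p*n"])
    moreover have "(A k * (Cb * Ab ^\<^sub>m (n - k))) $$ (r,j) = (\<Sum>r'<p. A k $$ (r,r') * (Cb * Ab ^\<^sub>m (n - k)) $$ (r',j))"
      by (rule mult_entry[of _ p p _ "p*n"]) (use Akc Cb Ab r j in auto)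
    ultimately show "(A k * Cb * Ab ^\<^sub>m (n - k)) $$ (r,j) = (\<Sum>r'<p. A k $$ (r,r') * Cp Cb Ab (n-k) r' j)"
      unfolding Cp_def by simp
  qed
  have "(\<Sum>k<Suc n. \<Sum>r'<p. Ap A k r r' * Cp Cb Ab (n-k) r' j)
     = (\<Sum>r'<p. Ap A 0 r r' * Cp Cb Ab (n-0) r' j) + (\<Sum>k<n. \<Sum>r'<p. Ap A (Suc k) r r' * Cp Cb Ab (n - Suc k) r' j)"
    by (rule sum.lessThan_Suc_shift)
  also have "(\<Sum>r'<p. Ap A 0 r r' * Cp Cb Ab (n-0) r' j) = (Cb * Ab ^\<^sub>m n) $$ (r,j)"
    using Ap_sum_delta[OF r] unfolding Cp_def by simp
  also have "(\<Sum>k<n. \<Sum>r'<p. Ap A (Suc k) r r' * Cp Cb Ab (n - Suc k) r' j)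
      = (\<Sum>k=1..n. (A k * Cb * Ab ^\<^sub>m (n - k)) $$ (r,j))"
  proof -
    have "(\<Sum>k=1..n. (A k * Cb * Ab ^\<^sub>m (n - k)) $$ (r,j)) = (\<Sum>k=1..n. \<Sum>r'<p. A k $$ (r,r') * Cp Cb Ab (n-k) r' j)"
      by (rule sum.cong[OF refl]) (rule e)
    also have "\<dots> = (\<Sum>k<n. \<Sum>r'<p. A (Suc k) $$ (r,r') * Cp Cb Ab (n - Suc k) r' j)"
      by (simp only: One_nat_def sum.atLeast1_atMost_eq)
    finally show ?thesis by (simp add: Ap_def)
  qed
  finally show ?thesis using h by simp
qed

lemma io2':
  assumes io: "io_description n m p A B Ab Bb Cb"
    and Ab: "Ab \<in> carrier_mat (p*n) (p*n)" and Bb: "Bb \<in> carrier_mat (p*n) m" and Cb: "Cb \<in> carrier_mat p (p*n)"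
    and Ak: "\<forall>i\<in>{1..n}. A i \<in> carrier_mat p p"
    and i: "i < n" and r: "r < p" and t: "t < m"
  shows "B (n-i) $$ (r,t) = (\<Sum>k<n-i. \<Sum>r'<p. Ap A k r r' * (\<Sum>l<p*n. Cp Cb Ab (n-1-i-k) r' l * Bb $$ (l,t)))"
proof -
  have h: "B (n - i) $$ (r,t) = (Cb * Ab ^\<^sub>m (n - 1 - i) * Bb) $$ (r,t)
           + (\<Sum>k=1..n-1-i. (A k * Cb * Ab ^\<^sub>m (n - 1 - i - k) * Bb) $$ (r,t))"
    using io r t i unfolding io_description_def by auto
  have e0: "\<And>q r. r < p \<Longrightarrow> (Cb * Ab ^\<^sub>m q * Bb) $$ (r,t) = (\<Sum>l<p*n. Cp Cb Ab q r l * Bb $$ (l,t))"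
  proof -
    fix q r assume r: "r < p"
    show "(Cb * Ab ^\<^sub>m q * Bb) $$ (r,t) = (\<Sum>l<p*n. Cp Cb Ab q r l * Bb $$ (l,t))"
      unfolding Cp_def by (rule mult_entry[of _ p "p*n" _ m]) (use Ab Bb Cb r t in auto)
  qed
  have ek: "\<And>k q. k \<in> {1..n} \<Longrightarrow> (A k * Cb * Ab ^\<^sub>m q * Bb) $$ (r,t) = (\<Sum>r'<p. A k $$ (r,r') * (\<Sum>l<p*n. Cp Cb Ab q r' l * Bb $$ (l,t)))"
  proof -
    fix k q assume k: "k \<in> {1..n}"
    have Akc: "A k \<in> carrier_mat p p" using Ak k by auto
    have CAB: "Cb * Ab ^\<^sub>m q * Bb \<in> carrier_mat p m" using Cb Ab Bb by auto
    have "A k * Cb * Ab ^\<^sub>m q * Bb = A k * (Cb * Ab ^\<^sub>m q * Bb)"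
    proof -
      have "A k * Cb * Ab ^\<^sub>m q = A k * (Cb * Ab ^\<^sub>m q)"
        using Akc Cb Ab by (simp add: assoc_mult_mat[of _ p p _ "p*n" _ "p*n"])
      then have "A k * Cb * Ab ^\<^sub>m q * Bb = A k * (Cb * Ab ^\<^sub>m q) * Bb" by simp
      also have "\<dots> = A k * (Cb * Ab ^\<^sub>m q * Bb)"
        using Akc Cb Ab Bb by (simp add: assoc_mult_mat[of _ p p _ "p*n" _ m])
      finally show ?thesis .
    qed
    moreover have "(A k * (Cb * Ab ^\<^sub>m q * Bb)) $$ (r,t) = (\<Sum>r'<p. A k $$ (r,r') * (Cb * Ab ^\<^sub>m q * Bb) $$ (r',t))"
      by (rule mult_entry[of _ p p _ m]) (use Akc CAB r t in auto)
    ultimately show "(A k * Cb * Ab ^\<^sub>m q * Bb) $$ (r,t) = (\<Sum>r'<p. A k $$ (r,r') * (\<Sum>l<p*n. Cp Cb Ab q r' l * Bb $$ (l,t)))"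
      using e0 by simp
  qed
  have ni: "n - i = Suc (n-1-i)" using i by simp
  have "(\<Sum>k<n-i. \<Sum>r'<p. Ap A k r r' * (\<Sum>l<p*n. Cp Cb Ab (n-1-i-k) r' l * Bb $$ (l,t)))
     = (\<Sum>r'<p. Ap A 0 r r' * (\<Sum>l<p*n. Cp Cb Ab (n-1-i-0) r' l * Bb $$ (l,t)))
       + (\<Sum>k<n-1-i. \<Sum>r'<p. Ap A (Suc k) r r' * (\<Sum>l<p*n. Cp Cb Ab (n-1-i-Suc k) r' l * Bb $$ (l,t)))"
    unfolding ni by (rule sum.lessThan_Suc_shift)
  also have "(\<Sum>r'<p. Ap A 0 r r' * (\<Sum>l<p*n. Cp Cb Ab (n-1-i-0) r' l * Bb $$ (l,t))) = (Cb * Ab ^\<^sub>m (n - 1 - i) * Bb) $$ (r,t)"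
    using Ap_sum_delta[OF r] e0[OF r] by simp
  also have "(\<Sum>k<n-1-i. \<Sum>r'<p. Ap A (Suc k) r r' * (\<Sum>l<p*n. Cp Cb Ab (n-1-i-Suc k) r' l * Bb $$ (l,t)))
     = (\<Sum>k=1..n-1-i. (A k * Cb * Ab ^\<^sub>m (n - 1 - i - k) * Bb) $$ (r,t))"
  proof -
    have "(\<Sum>k=1..n-1-i. (A k * Cb * Ab ^\<^sub>m (n - 1 - i - k) * Bb) $$ (r,t))
        = (\<Sum>k=1..n-1-i. \<Sum>r'<p. A k $$ (r,r') * (\<Sum>l<p*n. Cp Cb Ab (n-1-i-k) r' l * Bb $$ (l,t)))"
      by (rule sum.cong[OF refl]) (rule ek, auto)
    also have "\<dots> = (\<Sum>k<n-1-i. \<Sum>r'<p. A (Suc k) $$ (r,r') * (\<Sum>l<p*n. Cp Cb Ab (n-1-i-Suc k) r' l * Bb $$ (l,t)))"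
      by (simp only: One_nat_def sum.atLeast1_atMost_eq)
    finally show ?thesis by (simp add: Ap_def)
  qed
  finally show ?thesis using h by simp
qed

definition Mi :: "(nat \<Rightarrow> real mat) \<Rightarrow> real mat \<Rightarrow> real mat \<Rightarrow> nat \<Rightarrow> nat \<Rightarrow> nat \<Rightarrow> nat \<Rightarrow> nat \<Rightarrow> real" where
  "Mi A Cb Ab n p i r j = (\<Sum>k<n-i. \<Sum>r'<p. Ap A k r r' * Cp Cb Ab (n-1-i-k) r' j)"

lemma swap3:
  fixes a :: "nat \<Rightarrow> nat \<Rightarrow> real" and C :: "nat \<Rightarrow> nat \<Rightarrow> nat \<Rightarrow> real" and X :: "nat \<Rightarrow> real"
  shows "(\<Sum>l<d. (\<Sum>k<K. \<Sum>r'<p. a k r' * C k r' l) * X l) = (\<Sum>k<K. \<Sum>r'<p. a k r' * (\<Sum>l<d. C k r' l * X l))"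
proof -
  have "(\<Sum>l<d. (\<Sum>k<K. \<Sum>r'<p. a k r' * C k r' l) * X l) = (\<Sum>l<d. \<Sum>k<K. \<Sum>r'<p. a k r' * C k r' l * X l)"
    by (simp add: sum_distrib_right)
  also have "\<dots> = (\<Sum>k<K. \<Sum>l<d. \<Sum>r'<p. a k r' * C k r' l * X l)" by (rule sum.swap)
  also have "\<dots> = (\<Sum>k<K. \<Sum>r'<p. \<Sum>l<d. a k r' * C k r' l * X l)" by (rule sum.cong[OF refl]) (rule sum.swap)
  also have "\<dots> = (\<Sum>k<K. \<Sum>r'<p. a k r' * (\<Sum>l<d. C k r' l * X l))"
    by (simp add: sum_distrib_left mult.assoc)
  finally show ?thesis .
qed

context
  fixes n m p :: nat and A B :: "nat \<Rightarrow> real mat" and Ab Bb Cb :: "real mat"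
  assumes io: "io_description n m p A B Ab Bb Cb"
    and Ab: "Ab \<in> carrier_mat (p*n) (p*n)" and Bb: "Bb \<in> carrier_mat (p*n) m" and Cb: "Cb \<in> carrier_mat p (p*n)"
    and Ak: "\<forall>i\<in>{1..n}. A i \<in> carrier_mat p p"
    and n1: "n \<ge> 1"
begin

lemma Mi_Ab_pos:
  assumes i1: "1 \<le> i" and i: "i < n" and r: "r < p" and j: "j < p*n"
  shows "(\<Sum>l<p*n. Mi A Cb Ab n p i r l * Ab $$ (l,j)) = Mi A Cb Ab n p (i-1) r j - (\<Sum>r'<p. A (n-i) $$ (r,r') * Cp Cb Ab 0 r' j)"
proof -
  have "(\<Sum>l<p*n. Mi A Cb Ab n p i r l * Ab $$ (l,j)) = (\<Sum>k<n-i. \<Sum>r'<p. Ap A k r r' * (\<Sum>l<p*n. Cp Cb Ab (n-1-i-k) r' l * Ab $$ (l,j)))"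
    unfolding Mi_def by (rule swap3)
  also have "\<dots> = (\<Sum>k<n-i. \<Sum>r'<p. Ap A k r r' * Cp Cb Ab (n-i-k) r' j)"
  proof (intro sum.cong refl)
    fix k r' assume k: "k \<in> {..<n-i}" and r': "r' \<in> {..<p}"
    have "n-i-k = Suc (n-1-i-k)" using k by auto
    then show "Ap A k r r' * (\<Sum>l<p*n. Cp Cb Ab (n-1-i-k) r' l * Ab $$ (l,j)) = Ap A k r r' * Cp Cb Ab (n-i-k) r' j"
      using Cp_Suc[OF Ab Cb _ j, of r' "n-1-i-k"] r' by simp
  qed
  finally have 1: "(\<Sum>l<p*n. Mi A Cb Ab n p i r l * Ab $$ (l,j)) = (\<Sum>k<n-i. \<Sum>r'<p. Ap A k r r' * Cp Cb Ab (n-i-k) r' j)" .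
  have "Mi A Cb Ab n p (i-1) r j = (\<Sum>k<Suc (n-i). \<Sum>r'<p. Ap A k r r' * Cp Cb Ab (n-i-k) r' j)"
    unfolding Mi_def using i1 i by (intro sum.cong) auto
  also have "\<dots> = (\<Sum>k<n-i. \<Sum>r'<p. Ap A k r r' * Cp Cb Ab (n-i-k) r' j) + (\<Sum>r'<p. A (n-i) $$ (r,r') * Cp Cb Ab 0 r' j)"
    using i by (simp add: Ap_def)
  finally show ?thesis using 1 by simp
qed

lemma Mi_Ab_0:
  assumes r: "r < p" and j: "j < p*n"
  shows "(\<Sum>l<p*n. Mi A Cb Ab n p 0 r l * Ab $$ (l,j)) = - (\<Sum>r'<p. A n $$ (r,r') * Cp Cb Ab 0 r' j)"
proof -
  have "(\<Sum>l<p*n. Mi A Cb Ab n p 0 r l * Ab $$ (l,j)) = (\<Sum>k<n. \<Sum>r'<p. Ap A k r r' * (\<Sum>l<p*n. Cp Cb Ab (n-1-k) r' l * Ab $$ (l,j)))"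
    unfolding Mi_def by (simp add: swap3)
  also have "\<dots> = (\<Sum>k<n. \<Sum>r'<p. Ap A k r r' * Cp Cb Ab (n-k) r' j)"
  proof (intro sum.cong refl)
    fix k r' assume k: "k \<in> {..<n}" and r': "r' \<in> {..<p}"
    have "n-k = Suc (n-1-k)" using k by auto
    then show "Ap A k r r' * (\<Sum>l<p*n. Cp Cb Ab (n-1-k) r' l * Ab $$ (l,j)) = Ap A k r r' * Cp Cb Ab (n-k) r' j"
      using Cp_Suc[OF Ab Cb _ j, of r' "n-1-k"] r' by simp
  qed
  also have "\<dots> = (\<Sum>k<Suc n. \<Sum>r'<p. Ap A k r r' * Cp Cb Ab (n-k) r' j) - (\<Sum>r'<p. A n $$ (r,r') * Cp Cb Ab 0 r' j)"
    using n1 by (simp add: Ap_def)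
  also have "\<dots> = - (\<Sum>r'<p. A n $$ (r,r') * Cp Cb Ab 0 r' j)"
    using io1'[OF io Ab Cb Ak r j] by simp
  finally show ?thesis .
qed

lemma Mi_Bb:
  assumes i: "i < n" and r: "r < p" and t: "t < m"
  shows "(\<Sum>l<p*n. Mi A Cb Ab n p i r l * Bb $$ (l,t)) = B (n-i) $$ (r,t)"
  unfolding Mi_def swap3 using io2'[OF io Ab Bb Cb Ak i r t] by simp

lemma Mi_last:
  assumes r: "r < p"
  shows "Mi A Cb Ab n p (n-1) r j = Cp Cb Ab 0 r j"
  unfolding Mi_def using n1 Ap_sum_delta[OF r] by simp

lemma psi_Bb:
  fixes \<beta> :: "nat \<Rightarrow> nat \<Rightarrow> real"
  assumes t: "t < m"
  shows "(\<Sum>l<p*n. (\<Sum>i<n. \<Sum>r<p. \<beta> (s+i) r * Mi A Cb Ab n p i r l) * Bb $$ (l,t))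
       = (\<Sum>i<n. \<Sum>r<p. \<beta> (s+i) r * B (n-i) $$ (r,t))"
  unfolding swap3 using Mi_Bb[OF _ _ t] by simp

lemma psi_rec:
  fixes \<beta> :: "nat \<Rightarrow> nat \<Rightarrow> real"
  assumes E2: "\<And>s r. r < p \<Longrightarrow> \<beta> (s+n) r = - (\<Sum>i<n. \<Sum>r'<p. \<beta> (s+i) r' * A (n-i) $$ (r',r))"
    and j: "j < p*n"
  shows "(\<Sum>i<n. \<Sum>r<p. \<beta> (Suc s+i) r * Mi A Cb Ab n p i r j)
       = (\<Sum>l<p*n. (\<Sum>i<n. \<Sum>r<p. \<beta> (s+i) r * Mi A Cb Ab n p i r l) * Ab $$ (l,j))"
proof -
  obtain n1 where n: "n = Suc n1" using n1 by (cases n) auto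
  define Z where "Z i = (\<Sum>r<p. \<beta> (s+i) r * (\<Sum>r'<p. A (n-i) $$ (r,r') * Cp Cb Ab 0 r' j))" for i
  have "(\<Sum>l<p*n. (\<Sum>i<n. \<Sum>r<p. \<beta> (s+i) r * Mi A Cb Ab n p i r l) * Ab $$ (l,j))
      = (\<Sum>i<n. \<Sum>r<p. \<beta> (s+i) r * (\<Sum>l<p*n. Mi A Cb Ab n p i r l * Ab $$ (l,j)))"
    by (rule swap3)
  also have "\<dots> = (\<Sum>r<p. \<beta> (s+0) r * (\<Sum>l<p*n. Mi A Cb Ab n p 0 r l * Ab $$ (l,j)))
     + (\<Sum>i<n1. \<Sum>r<p. \<beta> (s+Suc i) r * (\<Sum>l<p*n. Mi A Cb Ab n p (Suc i) r l * Ab $$ (l,j)))"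
    unfolding n by (rule sum.lessThan_Suc_shift)
  also have "(\<Sum>r<p. \<beta> (s+0) r * (\<Sum>l<p*n. Mi A Cb Ab n p 0 r l * Ab $$ (l,j))) = - Z 0"
    unfolding Z_def using Mi_Ab_0[OF _ j] by (simp add: sum_negf)
  also have "(\<Sum>i<n1. \<Sum>r<p. \<beta> (s+Suc i) r * (\<Sum>l<p*n. Mi A Cb Ab n p (Suc i) r l * Ab $$ (l,j)))
     = (\<Sum>i<n1. (\<Sum>r<p. \<beta> (s+Suc i) r * Mi A Cb Ab n p i r j) - Z (Suc i))"
  proof (rule sum.cong[OF refl])
    fix i assume i: "i \<in> {..<n1}"
    have "(\<Sum>r<p. \<beta> (s+Suc i) r * (\<Sum>l<p*n. Mi A Cb Ab n p (Suc i) r l * Ab $$ (l,j)))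
       = (\<Sum>r<p. \<beta> (s+Suc i) r * (Mi A Cb Ab n p i r j - (\<Sum>r'<p. A (n-Suc i) $$ (r,r') * Cp Cb Ab 0 r' j)))"
      using Mi_Ab_pos[of "Suc i" _ j] i n j by (intro sum.cong refl) simp
    then show "(\<Sum>r<p. \<beta> (s+Suc i) r * (\<Sum>l<p*n. Mi A Cb Ab n p (Suc i) r l * Ab $$ (l,j)))
       = (\<Sum>r<p. \<beta> (s+Suc i) r * Mi A Cb Ab n p i r j) - Z (Suc i)"
      unfolding Z_def by (simp add: right_diff_distrib sum_subtractf)
  qed
  finally have R: "(\<Sum>l<p*n. (\<Sum>i<n. \<Sum>r<p. \<beta> (s+i) r * Mi A Cb Ab n p i r l) * Ab $$ (l,j))
     = - Z 0 + (\<Sum>i<n1. (\<Sum>r<p. \<beta> (s+Suc i) r * Mi A Cb Ab n p i r j) - Z (Suc i))" .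
  have K: "(\<Sum>r<p. (\<Sum>i<n. \<Sum>r'<p. \<beta> (s+i) r' * A (n-i) $$ (r',r)) * Cp Cb Ab 0 r j) = (\<Sum>i<n. Z i)"
  proof -
    have "(\<Sum>r<p. (\<Sum>i<n. \<Sum>r'<p. \<beta> (s+i) r' * A (n-i) $$ (r',r)) * Cp Cb Ab 0 r j)
       = (\<Sum>r<p. \<Sum>i<n. \<Sum>r'<p. \<beta> (s+i) r' * A (n-i) $$ (r',r) * Cp Cb Ab 0 r j)"
      by (simp add: sum_distrib_right)
    also have "\<dots> = (\<Sum>i<n. \<Sum>r<p. \<Sum>r'<p. \<beta> (s+i) r' * A (n-i) $$ (r',r) * Cp Cb Ab 0 r j)"
      by (rule sum.swap)
    also have "\<dots> = (\<Sum>i<n. \<Sum>r'<p. \<Sum>r<p. \<beta> (s+i) r' * A (n-i) $$ (r',r) * Cp Cb Ab 0 r j)"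
      by (rule sum.cong[OF refl]) (rule sum.swap)
    also have "\<dots> = (\<Sum>i<n. Z i)"
      unfolding Z_def by (simp add: sum_distrib_left mult.assoc)
    finally show ?thesis .
  qed
  have "(\<Sum>i<n. \<Sum>r<p. \<beta> (Suc s+i) r * Mi A Cb Ab n p i r j)
     = (\<Sum>i<n1. \<Sum>r<p. \<beta> (s+Suc i) r * Mi A Cb Ab n p i r j) + (\<Sum>r<p. \<beta> (s+n) r * Mi A Cb Ab n p n1 r j)"
    unfolding n by (simp add: sum.lessThan_Suc)
  also have "(\<Sum>r<p. \<beta> (s+n) r * Mi A Cb Ab n p n1 r j) = - (\<Sum>i<n. Z i)"
  proof -
    have "(\<Sum>r<p. \<beta> (s+n) r * Mi A Cb Ab n p n1 r j) = (\<Sum>r<p. (- (\<Sum>i<n. \<Sum>r'<p. \<beta> (s+i) r' * A (n-i) $$ (r',r))) * Cp Cb Ab 0 r j)"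
      using Mi_last E2 n by (intro sum.cong refl) simp
    then show ?thesis using K by (simp add: sum_negf)
  qed
  also have "(\<Sum>i<n. Z i) = Z 0 + (\<Sum>i<n1. Z (Suc i))" unfolding n by (rule sum.lessThan_Suc_shift)
  finally show ?thesis unfolding R by (simp add: sum_subtractf)
qed

end

primrec rowit :: "real mat \<Rightarrow> nat \<Rightarrow> (nat \<Rightarrow> real) \<Rightarrow> nat \<Rightarrow> nat \<Rightarrow> real" where
  "rowit M d w0 0 = w0"
| "rowit M d w0 (Suc k) = (\<lambda>j. \<Sum>i<d. rowit M d w0 k i * M $$ (i,j))"

lemma ctrb_entry:
  assumes "A \<in> carrier_mat d d" "B \<in> carrier_mat d m" "i < d" "k < d" "l < m"
  shows "ctrb_mat A B $$ (i, k*m+l) = (A ^\<^sub>m k * B) $$ (i, l)"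
proof -
  have "k*m+l < d*m" using blt[of k d l m] assms by simp
  then show ?thesis using assms unfolding ctrb_mat_def by simp
qed

lemma ctrb_carrier: "A \<in> carrier_mat d d \<Longrightarrow> B \<in> carrier_mat d m \<Longrightarrow> ctrb_mat A B \<in> carrier_mat d (d*m)"
  unfolding ctrb_mat_def by auto

lemma reach_main:
  fixes n m p :: nat and A B :: "nat \<Rightarrow> real mat" and c :: "nat \<Rightarrow> real"
  assumes n1: "n \<ge> 1" and m1: "m \<ge> 1" and p1: "p \<ge> 1"
    and Ak: "\<forall>i\<in>{1..n}. A i \<in> carrier_mat p p"
    and Bk: "\<forall>i\<in>{1..n}. B i \<in> carrier_mat p m"
    and as: "assumption_1' n m p A B"
  shows "reachable_pair (A_Mf n m p A B c) (B_Mf n m p)"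
proof -
  obtain Ab Bb Cb where Ab: "Ab \<in> carrier_mat (p*n) (p*n)" and Bb: "Bb \<in> carrier_mat (p*n) m"
    and Cb: "Cb \<in> carrier_mat p (p*n)" and io: "io_description n m p A B Ab Bb Cb"
    and rAB: "reachable_pair Ab Bb" and obs: "mat_rank (obs_mat Cb Ab n) = p*n"
    using as unfolding assumption_1'_def by blast
  define N where "N = n*m + p*n"
  let ?AA = "A_Mf n m p A B c" and ?BB = "B_Mf n m p"
  have AA: "?AA \<in> carrier_mat N N" using AMf_dims unfolding N_def by blast
  have BB: "?BB \<in> carrier_mat N m" using BMf_dims unfolding N_def by blast
  have ctrbC: "ctrb_mat ?AA ?BB \<in> carrier_mat N (N*m)" by (rule ctrb_carrier[OF AA BB])
  have rk: "vec_space.rank N (ctrb_mat ?AA ?BB) = N"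
  proof (rule rank_R2[OF ctrbC])
    fix w :: "real vec"
    assume w: "w \<in> carrier_vec N" and orth: "\<forall>j<N*m. (\<Sum>i<N. w $ i * ctrb_mat ?AA ?BB $$ (i,j)) = 0"
    define f where "f = rowit ?AA N (\<lambda>i. w $ i)"
    have frec: "\<And>k j. j < N \<Longrightarrow> f (Suc k) j = (\<Sum>i<N. f k i * ?AA $$ (i,j))" unfolding f_def by simp
    have f0: "\<And>i. f 0 i = w $ i" unfolding f_def by simp
    have H0: "\<And>k l. k < N \<Longrightarrow> l < m \<Longrightarrow> f k ((n-1)*m+l) = 0"
    proof -
      fix k l assume k: "k < N" and l: "l < m"
      have "f k ((n-1)*m+l) = (\<Sum>i<N. f k i * ?BB $$ (i,l))"
        using BMf_row[OF n1 l, of "f k" p] unfolding N_def by simp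
      also have "\<dots> = (\<Sum>i<N. f 0 i * (?AA ^\<^sub>m k * ?BB) $$ (i,l))"
        by (rule rowit_gen[where f=f, OF AA frec BB l])
      also have "\<dots> = (\<Sum>i<N. w $ i * ctrb_mat ?AA ?BB $$ (i, k*m+l))"
        using ctrb_entry[OF AA BB _ k l] f0 by simp
      also have "\<dots> = 0" using orth blt[OF k l] by simp
      finally show "f k ((n-1)*m+l) = 0" .
    qed
    define \<beta> where "\<beta> k r = f k (n*m + ((n-1)*p + r))" for k r
    have arec: "\<And>k b t. k < N \<Longrightarrow> b < n \<Longrightarrow> t < m \<Longrightarrow>
       f (Suc k) (b*m+t) = (if 1 \<le> b then f k ((b-1)*m+t) else 0) + (\<Sum>r<p. \<beta> k r * B (n-b) $$ (r,t))"
    proof -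
      fix k b t assume k: "k < N" and b: "b < n" and t: "t < m"
      have "b*m+t < N" using blt[OF b t] unfolding N_def by simp
      then show "f (Suc k) (b*m+t) = (if 1 \<le> b then f k ((b-1)*m+t) else 0) + (\<Sum>r<p. \<beta> k r * B (n-b) $$ (r,t))"
        using frec AMf_col_z[OF b t, of "f k" p A B c] H0[OF k t] unfolding \<beta>_def N_def by (simp add: add.assoc)
    qed
    have bbrec: "\<And>k b r. b < n \<Longrightarrow> r < p \<Longrightarrow>
       f (Suc k) (n*m+(b*p+r)) = (if 1 \<le> b then f k (n*m+((b-1)*p+r)) else 0) + (\<Sum>r'<p. \<beta> k r' * (- A (n-b) $$ (r',r)))"
    proof -
      fix k b r assume b: "b < n" and r: "r < p"
      have "n*m+(b*p+r) < N" using blt[OF b r] unfolding N_def by (simp add: mult.commute)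
      then show "f (Suc k) (n*m+(b*p+r)) = (if 1 \<le> b then f k (n*m+((b-1)*p+r)) else 0) + (\<Sum>r'<p. \<beta> k r' * (- A (n-b) $$ (r',r)))"
        using frec AMf_col_mu[OF b r, of "f k" m A B c] unfolding \<beta>_def N_def by (simp add: sum_negf)
    qed
    have ua: "\<And>k j t. k \<le> N \<Longrightarrow> j < n \<Longrightarrow> t < m \<Longrightarrow> f k (j*m+t) = (if k \<le> j then f 0 ((j-k)*m+t) else 0)
            + (\<Sum>i<min k (Suc j). \<Sum>r<p. \<beta> (k-1-i) r * B (n-j+i) $$ (r,t))"
    proof -
      fix k j t assume k: "k \<le> N" and j: "j < n" and t: "t < m"
      show "f k (j*m+t) = (if k \<le> j then f 0 ((j-k)*m+t) else 0)
            + (\<Sum>i<min k (Suc j). \<Sum>r<p. \<beta> (k-1-i) r * B (n-j+i) $$ (r,t))"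
        by (rule unroll[where g="\<lambda>k j. f k (j*m+t)" and G="\<lambda>i r. B i $$ (r,t)" and K=N, OF _ k j])
           (use arec t in simp)
    qed
    have ub: "\<And>k j r. j < n \<Longrightarrow> r < p \<Longrightarrow> f k (n*m+(j*p+r)) = (if k \<le> j then f 0 (n*m+((j-k)*p+r)) else 0)
            + (\<Sum>i<min k (Suc j). \<Sum>r'<p. \<beta> (k-1-i) r' * (- A (n-j+i) $$ (r',r)))"
    proof -
      fix k j r assume j: "j < n" and r: "r < p"
      show "f k (n*m+(j*p+r)) = (if k \<le> j then f 0 (n*m+((j-k)*p+r)) else 0)
            + (\<Sum>i<min k (Suc j). \<Sum>r'<p. \<beta> (k-1-i) r' * (- A (n-j+i) $$ (r',r)))"
        by (rule unroll[where g="\<lambda>k j. f k (n*m+(j*p+r))" and G="\<lambda>i r'. - A i $$ (r',r)" and K=k, OF _ order.refl j])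
           (use bbrec r in simp)
    qed
    have E1: "\<And>s t. s + n < N \<Longrightarrow> t < m \<Longrightarrow> (\<Sum>i<n. \<Sum>r<p. \<beta> (s+i) r * B (n-i) $$ (r,t)) = 0"
    proof -
      fix s t assume s: "s + n < N" and t: "t < m"
      have "0 = f (s+n) ((n-1)*m+t)" using H0[OF s t] by simp
      also have "\<dots> = (\<Sum>i<n. \<Sum>r<p. \<beta> (s+n-1-i) r * B (n-(n-1)+i) $$ (r,t))"
      proof -
        have "min (s+n) (Suc (n-1)) = n" "\<not> s+n \<le> n-1" "n-(n-1) = 1" using n1 by auto
        then show ?thesis using ua[of "s+n" "n-1" t] s t n1 by simp
      qed
      also have "\<dots> = (\<Sum>i<n. \<Sum>r<p. \<beta> (s+(n - Suc i)) r * B (n-(n - Suc i)) $$ (r,t))"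
        by (intro sum.cong refl) (use n1 in \<open>auto simp: Suc_diff_Suc\<close>)
      also have "\<dots> = (\<Sum>i<n. \<Sum>r<p. \<beta> (s+i) r * B (n-i) $$ (r,t))"
        by (rule sum.nat_diff_reindex)
      finally show "(\<Sum>i<n. \<Sum>r<p. \<beta> (s+i) r * B (n-i) $$ (r,t)) = 0" by simp
    qed
    have E2: "\<And>s r. r < p \<Longrightarrow> \<beta> (s+n) r = - (\<Sum>i<n. \<Sum>r'<p. \<beta> (s+i) r' * A (n-i) $$ (r',r))"
    proof -
      fix s r assume r: "r < p"
      have "\<beta> (s+n) r = (\<Sum>i<n. \<Sum>r'<p. \<beta> (s+n-1-i) r' * (- A (n-(n-1)+i) $$ (r',r)))"
      proof -
        have "min (s+n) (Suc (n-1)) = n" "\<not> s+n \<le> n-1" "n-(n-1) = 1" using n1 by auto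
        moreover have "\<beta> (s+n) r = f (s+n) (n*m+((n-1)*p+r))" unfolding \<beta>_def ..
        ultimately show ?thesis using ub[of "n-1" r "s+n"] r n1 by simp
      qed
      also have "\<dots> = (\<Sum>i<n. \<Sum>r'<p. \<beta> (s+(n - Suc i)) r' * (- A (n-(n - Suc i)) $$ (r',r)))"
        by (intro sum.cong refl) (use n1 in \<open>auto simp: Suc_diff_Suc\<close>)
      also have "\<dots> = (\<Sum>i<n. \<Sum>r'<p. \<beta> (s+i) r' * (- A (n-i) $$ (r',r)))"
        by (rule sum.nat_diff_reindex)
      finally show "\<beta> (s+n) r = - (\<Sum>i<n. \<Sum>r'<p. \<beta> (s+i) r' * A (n-i) $$ (r',r))"
        by (simp add: sum_negf)
    qed
    define psi where "psi s l = (\<Sum>i<n. \<Sum>r<p. \<beta> (s+i) r * Mi A Cb Ab n p i r l)" for s l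
    have psirec: "\<And>s j. j < p*n \<Longrightarrow> psi (Suc s) j = (\<Sum>l<p*n. psi s l * Ab $$ (l,j))"
      unfolding psi_def by (rule psi_rec[OF io Ab Bb Cb Ak n1 E2])
    have P0: "\<forall>j<p*n*m. (\<Sum>l<p*n. vec (p*n) (psi 0) $ l * ctrb_mat Ab Bb $$ (l,j)) = 0"
    proof (intro allI impI)
      fix j assume j: "j < p*n*m"
      define s where "s = j div m"
      define t where "t = j mod m"
      have t: "t < m" unfolding t_def using m1 by simp
      have s: "s < p*n" unfolding s_def using j by (simp add: less_mult_imp_div_less)
      have jst: "j = s*m+t" unfolding s_def t_def by simp
      have "(\<Sum>l<p*n. vec (p*n) (psi 0) $ l * ctrb_mat Ab Bb $$ (l,j)) = (\<Sum>l<p*n. psi 0 l * (Ab ^\<^sub>m s * Bb) $$ (l,t))"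
        unfolding jst using ctrb_entry[OF Ab Bb _ s t] by simp
      also have "\<dots> = (\<Sum>l<p*n. psi s l * Bb $$ (l,t))"
        by (rule rowit_gen[where f=psi, OF Ab psirec Bb t, symmetric])
      also have "\<dots> = (\<Sum>i<n. \<Sum>r<p. \<beta> (s+i) r * B (n-i) $$ (r,t))"
        unfolding psi_def by (rule psi_Bb[OF io Ab Bb Cb Ak n1 t])
      also have "\<dots> = 0"
      proof (rule E1[OF _ t])
        have "n \<le> n*m" using m1 by (metis mult.right_neutral mult_le_mono2)
        then show "s + n < N" using s unfolding N_def by linarith
      qed
      finally show "(\<Sum>l<p*n. vec (p*n) (psi 0) $ l * ctrb_mat Ab Bb $$ (l,j)) = 0" .
    qed
    have rkAB: "vec_space.rank (p*n) (ctrb_mat Ab Bb) = p*n"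
      using rAB Ab Bb unfolding reachable_pair_def mat_rank_def ctrb_mat_def by simp
    have psi0: "vec (p*n) (psi 0) = 0\<^sub>v (p*n)"
      by (rule rank_R1[OF ctrb_carrier[OF Ab Bb] rkAB _ P0]) simp
    have psi0': "\<And>l. l < p*n \<Longrightarrow> psi 0 l = 0"
    proof -
      fix l assume l: "l < p*n"
      have "vec (p*n) (psi 0) $ l = 0\<^sub>v (p*n) $ l" using psi0 by simp
      then show "psi 0 l = 0" using l by simp
    qed
    define tau where "tau u r' = (\<Sum>i\<le>u. \<Sum>r<p. \<beta> i r * Ap A (u-i) r r')" for u r'
    have psitau: "\<And>j. psi 0 j = (\<Sum>u<n. \<Sum>r'<p. tau u r' * Cp Cb Ab (n-1-u) r' j)"
    proof -
      fix j
      define G where "G i k = (\<Sum>r<p. \<Sum>r'<p. \<beta> i r * Ap A k r r' * Cp Cb Ab (n-1-i-k) r' j)" for i k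
      have "psi 0 j = (\<Sum>i<n. \<Sum>r<p. \<Sum>k<n-i. \<Sum>r'<p. \<beta> i r * Ap A k r r' * Cp Cb Ab (n-1-i-k) r' j)"
        unfolding psi_def Mi_def by (simp add: sum_distrib_left mult.assoc)
      also have "\<dots> = (\<Sum>i<n. \<Sum>k<n-i. G i k)"
        unfolding G_def by (rule sum.cong[OF refl]) (rule sum.swap)
      also have "\<dots> = (\<Sum>(i,k)\<in>{(i,k). i+k<n}. G i k)"
      proof -
        have "(SIGMA i:{..<n}. {..<n-i}) = {(i,k). i+k<n}" by auto
        then show ?thesis by (simp add: sum.Sigma)
      qed
      also have "\<dots> = (\<Sum>u<n. \<Sum>i\<le>u. G i (u-i))" by (rule sum.triangle_reindex)
      also have "\<dots> = (\<Sum>u<n. \<Sum>r'<p. tau u r' * Cp Cb Ab (n-1-u) r' j)"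
      proof (rule sum.cong[OF refl])
        fix u assume u: "u \<in> {..<n}"
        have "(\<Sum>i\<le>u. G i (u-i)) = (\<Sum>i\<le>u. \<Sum>r<p. \<Sum>r'<p. \<beta> i r * Ap A (u-i) r r' * Cp Cb Ab (n-1-u) r' j)"
          unfolding G_def by (intro sum.cong refl) auto
        also have "\<dots> = (\<Sum>i\<le>u. \<Sum>r'<p. \<Sum>r<p. \<beta> i r * Ap A (u-i) r r' * Cp Cb Ab (n-1-u) r' j)"
          by (rule sum.cong[OF refl]) (rule sum.swap)
        also have "\<dots> = (\<Sum>r'<p. \<Sum>i\<le>u. \<Sum>r<p. \<beta> i r * Ap A (u-i) r r' * Cp Cb Ab (n-1-u) r' j)"
          by (rule sum.swap)
        also have "\<dots> = (\<Sum>r'<p. tau u r' * Cp Cb Ab (n-1-u) r' j)"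
          unfolding tau_def by (simp add: sum_distrib_right)
        finally show "(\<Sum>i\<le>u. G i (u-i)) = (\<Sum>r'<p. tau u r' * Cp Cb Ab (n-1-u) r' j)" .
      qed
      finally show "psi 0 j = (\<Sum>u<n. \<Sum>r'<p. tau u r' * Cp Cb Ab (n-1-u) r' j)" .
    qed
    have OC: "obs_mat Cb Ab n \<in> carrier_mat (p*n) (p*n)" using Cb unfolding obs_mat_def by auto
    have rkO: "vec_space.rank (p*n) (obs_mat Cb Ab n) = p*n"
      using obs OC unfolding mat_rank_def by (simp add: carrier_matD)
    define w' where "w' = vec (p*n) (\<lambda>i. tau (n-1-i div p) (i mod p))"
    have w'0: "w' = 0\<^sub>v (p*n)"
    proof (rule rank_R1[OF OC rkO])
      show "w' \<in> carrier_vec (p*n)" unfolding w'_def by simp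
      show "\<forall>j<p*n. (\<Sum>i<p*n. w' $ i * obs_mat Cb Ab n $$ (i,j)) = 0"
      proof (intro allI impI)
        fix j assume j: "j < p*n"
        have "(\<Sum>i<p*n. w' $ i * obs_mat Cb Ab n $$ (i,j)) = (\<Sum>i<n*p. w' $ i * obs_mat Cb Ab n $$ (i,j))"
          by (simp add: mult.commute)
        also have "\<dots> = (\<Sum>q<n. \<Sum>r'<p. w' $ (q*p+r') * obs_mat Cb Ab n $$ (q*p+r',j))" by (rule sum_blocks)
        also have "\<dots> = (\<Sum>q<n. \<Sum>r'<p. tau (n - Suc q) r' * Cp Cb Ab q r' j)"
        proof (intro sum.cong refl)
          fix q r' assume q: "q \<in> {..<n}" and r': "r' \<in> {..<p}"
          have i: "q*p+r' < p*n" using blt[of q n r' p] q r' by (simp add: mult.commute)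
          show "w' $ (q*p+r') * obs_mat Cb Ab n $$ (q*p+r',j) = tau (n - Suc q) r' * Cp Cb Ab q r' j"
            using i j Cb r' unfolding w'_def obs_mat_def Cp_def by (simp add: carrier_matD)
        qed
        also have "\<dots> = (\<Sum>q<n. \<Sum>r'<p. tau (n - Suc q) r' * Cp Cb Ab (n-1-(n - Suc q)) r' j)"
          by (intro sum.cong refl) auto
        also have "\<dots> = (\<Sum>u<n. \<Sum>r'<p. tau u r' * Cp Cb Ab (n-1-u) r' j)"
          by (rule sum.nat_diff_reindex[where g="\<lambda>u. \<Sum>r'<p. tau u r' * Cp Cb Ab (n-1-u) r' j"])
        also have "\<dots> = 0" using psitau psi0' j by simp
        finally show "(\<Sum>i<p*n. w' $ i * obs_mat Cb Ab n $$ (i,j)) = 0" .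
      qed
    qed
    have tau0: "\<And>u r'. u < n \<Longrightarrow> r' < p \<Longrightarrow> tau u r' = 0"
    proof -
      fix u r' assume u: "u < n" and r': "r' < p"
      have i: "(n-1-u)*p + r' < p*n" using blt[of "n-1-u" n r' p] u r' by (simp add: mult.commute)
      have "w' $ ((n-1-u)*p + r') = 0" using w'0 i by simp
      moreover have "n - 1 - (n-1-u) = u" using u by simp
      ultimately show "tau u r' = 0" using i r' unfolding w'_def by simp
    qed
    have beta0: "\<And>u r'. u < n \<Longrightarrow> r' < p \<Longrightarrow> \<beta> u r' = 0"
    proof -
      fix u
      show "\<And>r'. u < n \<Longrightarrow> r' < p \<Longrightarrow> \<beta> u r' = 0"
      proof (induct u rule: less_induct)
        case (less u)
        fix r' assume u: "u < n" and r': "r' < p"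
        have "tau u r' = (\<Sum>i<u. \<Sum>r<p. \<beta> i r * Ap A (u-i) r r') + (\<Sum>r<p. \<beta> u r * Ap A (u-u) r r')"
          unfolding tau_def by (simp add: lessThan_Suc_atMost[symmetric])
        also have "(\<Sum>i<u. \<Sum>r<p. \<beta> i r * Ap A (u-i) r r') = 0"
          using less u by (intro sum.neutral) auto
        also have "(\<Sum>r<p. \<beta> u r * Ap A (u-u) r r') = \<beta> u r'"
          unfolding Ap_def using sum_delta_mult(1)[OF r', of "\<beta> u"] by simp
        finally show "\<beta> u r' = 0" using tau0[OF u r'] by simp
      qed
    qed
    have Nn: "n \<le> N" unfolding N_def using m1 by (metis le_add1 mult.right_neutral mult_le_mono2 order_trans)
    show "w = 0\<^sub>v N"
    proof (rule eq_vecI)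
      show "dim_vec w = dim_vec (0\<^sub>v N :: real vec)" using w by simp
      fix i assume "i < dim_vec (0\<^sub>v N :: real vec)"
      then have i: "i < N" by simp
      show "w $ i = 0\<^sub>v N $ i"
      proof (cases "i < n*m")
        case True
        define b where "b = i div m"
        define t where "t = i mod m"
        have t: "t < m" unfolding t_def using m1 by simp
        have b: "b < n" unfolding b_def using True by (simp add: less_mult_imp_div_less)
        have ibt: "i = b*m+t" unfolding b_def t_def by simp
        define k where "k = n-1-b"
        have k: "k < N" "k \<le> N" "k \<le> n-1" using Nn b n1 unfolding k_def by auto
        have "f k ((n-1)*m+t) = f 0 ((n-1-k)*m+t) + (\<Sum>i<min k (Suc (n-1)). \<Sum>r<p. \<beta> (k-1-i) r * B (n-(n-1)+i) $$ (r,t))"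
          using ua[OF k(2) _ t, of "n-1"] n1 k by simp
        also have "(\<Sum>i<min k (Suc (n-1)). \<Sum>r<p. \<beta> (k-1-i) r * B (n-(n-1)+i) $$ (r,t)) = 0"
          using beta0 k n1 by (intro sum.neutral) auto
        finally have "f 0 ((n-1-k)*m+t) = 0" using H0[OF k(1) t] by simp
        moreover have "n-1-k = b" unfolding k_def using b by simp
        ultimately show ?thesis using f0 i ibt by simp
      next
        case False
        define i' where "i' = i - n*m"
        have i': "i' < p*n" using i False unfolding i'_def N_def by simp
        define b where "b = i' div p"
        define r where "r = i' mod p"
        have r: "r < p" unfolding r_def using p1 by simp
        have b: "b < n" unfolding b_def using i' by (simp add: less_mult_imp_div_less mult.commute)
        have ibt: "i = n*m+(b*p+r)" unfolding b_def r_def i'_def using False by simp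
        define k where "k = n-1-b"
        have k: "k < n" "k \<le> n-1" using b n1 unfolding k_def by auto
        have "\<beta> k r = f k (n*m+((n-1)*p+r))" unfolding \<beta>_def ..
        also have "\<dots> = f 0 (n*m+((n-1-k)*p+r)) + (\<Sum>i<min k (Suc (n-1)). \<Sum>r'<p. \<beta> (k-1-i) r' * (- A (n-(n-1)+i) $$ (r',r)))"
          using ub[of "n-1" r k] n1 k r by simp
        also have "(\<Sum>i<min k (Suc (n-1)). \<Sum>r'<p. \<beta> (k-1-i) r' * (- A (n-(n-1)+i) $$ (r',r))) = 0"
          using beta0 k n1 by (intro sum.neutral) auto
        finally have "f 0 (n*m+((n-1-k)*p+r)) = 0" using beta0[OF k(1) r] by simp
        moreover have "n-1-k = b" unfolding k_def using b by simp
        ultimately show ?thesis using f0 i ibt by simp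
      qed
    qed
  qed
  show ?thesis
    unfolding reachable_pair_def mat_rank_def using AA BB ctrbC rk
    by (simp add: carrier_matD)
qed

lemma int_pow:
  fixes t :: real assumes t: "0 \<le> t"
  shows "((\<lambda>s. s^k / fact k) has_integral t^Suc k / fact (Suc k)) {0..t}"
proof -
  have "((\<lambda>s. s^k / fact k) has_integral ((\<lambda>s. s^Suc k / fact (Suc k)) t - (\<lambda>s. s^Suc k / fact (Suc k)) 0)) {0..t}"
  proof (rule fundamental_theorem_of_calculus[OF t])
    fix x :: real assume "x \<in> {0..t}"
    have "((\<lambda>s. s^Suc k / fact (Suc k)) has_real_derivative (real (Suc k) * x^k / fact (Suc k))) (at x within {0..t})"
      using DERIV_cdivide[OF DERIV_pow[of "Suc k" x "{0..t}"], of "fact (Suc k)"] by simp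
    moreover have "real (Suc k) * x^k / fact (Suc k) = x^k / fact k"
      by (simp add: fact_Suc)
    ultimately show "((\<lambda>s. s^Suc k / fact (Suc k)) has_vector_derivative x^k / fact k) (at x within {0..t})"
      by (simp add: has_real_derivative_iff_has_vector_derivative)
  qed
  then show ?thesis by simp
qed

lemma pow_commute:
  fixes F :: "real mat"
  assumes F: "F \<in> carrier_mat d d"
  shows "F ^\<^sub>m k * F = F * F ^\<^sub>m k"
proof (induct k)
  case 0 then show ?case using F by simp
next
  case (Suc k)
  have "F ^\<^sub>m Suc k * F = (F ^\<^sub>m k * F) * F" by simp
  also have "\<dots> = (F * F ^\<^sub>m k) * F" using Suc by simp
  also have "\<dots> = F * (F ^\<^sub>m k * F)" using F by (simp add: assoc_mult_mat[of _ d d _ d _ d])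
  finally show ?case by simp
qed

lemma pow_bound:
  fixes F :: "real mat"
  assumes F: "F \<in> carrier_mat d d" and K: "\<And>l. l < d \<Longrightarrow> (\<Sum>i<d. \<bar>F $$ (i,l)\<bar>) \<le> K" and K1: "1 \<le> K"
  shows "i < d \<Longrightarrow> j < d \<Longrightarrow> \<bar>(F ^\<^sub>m k) $$ (i,j)\<bar> \<le> K^k"
proof (induct k arbitrary: j)
  case 0 then show ?case using F by simp
next
  case (Suc k)
  have "(F ^\<^sub>m Suc k) $$ (i,j) = (\<Sum>l<d. (F ^\<^sub>m k) $$ (i,l) * F $$ (l,j))"
    using mult_entry[of "F ^\<^sub>m k" d d F d i j] F Suc.prems by simp
  also have "\<bar>\<dots>\<bar> \<le> (\<Sum>l<d. \<bar>(F ^\<^sub>m k) $$ (i,l)\<bar> * \<bar>F $$ (l,j)\<bar>)"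
    by (rule order.trans[OF sum_abs]) (simp add: abs_mult)
  also have "\<dots> \<le> (\<Sum>l<d. K^k * \<bar>F $$ (l,j)\<bar>)"
    using Suc by (intro sum_mono mult_right_mono) auto
  also have "\<dots> = K^k * (\<Sum>l<d. \<bar>F $$ (l,j)\<bar>)" by (simp add: sum_distrib_left)
  also have "\<dots> \<le> K^k * K" using K[OF Suc.prems(2)] K1 by (intro mult_left_mono) auto
  finally show ?case by (simp add: mult.commute)
qed

lemma picard:
  fixes F :: "real mat" and x0 :: "real vec" and y :: "real \<Rightarrow> nat \<Rightarrow> real" and T :: real
  assumes F: "F \<in> carrier_mat d d" and x0: "x0 \<in> carrier_vec d" and T: "0 \<le> T"
    and cont: "\<And>i. i < d \<Longrightarrow> continuous_on {0..T} (\<lambda>s. y s i)"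
    and eq: "\<And>t i. t \<in> {0..T} \<Longrightarrow> i < d \<Longrightarrow> y t i = x0 $ i + integral {0..t} (\<lambda>s. \<Sum>l<d. F $$ (i,l) * y s l)"
    and i: "i < d"
  shows "y T i = (mat_exp F T *\<^sub>v x0) $ i"
proof -
  define K where "K = 1 + (\<Sum>i<d. \<Sum>j<d. \<bar>F $$ (i,j)\<bar>)"
  have K1: "1 \<le> K" unfolding K_def by (simp add: sum_nonneg)
  have Kcol: "\<And>l. l < d \<Longrightarrow> (\<Sum>i<d. \<bar>F $$ (i,l)\<bar>) \<le> K"
  proof -
    fix l assume l: "l < d"
    have "(\<Sum>i<d. \<bar>F $$ (i,l)\<bar>) \<le> (\<Sum>i<d. \<Sum>j<d. \<bar>F $$ (i,j)\<bar>)"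
      using l by (intro sum_mono member_le_sum) auto
    then show "(\<Sum>i<d. \<bar>F $$ (i,l)\<bar>) \<le> K" unfolding K_def by simp
  qed
  define S where "S N t i = (\<Sum>k<N. t^k / fact k * (F ^\<^sub>m k *\<^sub>v x0) $ i)" for N t i
  define E where "E N t i = y t i - S N t i" for N t i
  have Scont: "\<And>N i A. continuous_on A (\<lambda>s. S N s i)" unfolding S_def by (intro continuous_intros) auto
  have Econt: "\<And>N i. i < d \<Longrightarrow> continuous_on {0..T} (\<lambda>s. E N s i)"
    unfolding E_def using cont Scont by (intro continuous_intros) auto
  have FS: "\<And>N (s::real) i. i < d \<Longrightarrow> (\<Sum>l<d. F $$ (i,l) * S N s l) = (\<Sum>k<N. s^k / fact k * (F ^\<^sub>m Suc k *\<^sub>v x0) $ i)"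
  proof -
    fix N :: nat and s :: real and i :: nat assume i: "i < d"
    have e: "\<And>k. (\<Sum>l<d. F $$ (i,l) * (F ^\<^sub>m k *\<^sub>v x0) $ l) = (F ^\<^sub>m Suc k *\<^sub>v x0) $ i"
    proof -
      fix k
      have "(\<Sum>l<d. F $$ (i,l) * (F ^\<^sub>m k *\<^sub>v x0) $ l) = (F *\<^sub>v (F ^\<^sub>m k *\<^sub>v x0)) $ i"
        using mv_entry[of F d d "F ^\<^sub>m k *\<^sub>v x0" i] F x0 i mult_mat_vec_carrier[OF pow_carrier_mat[OF F] x0] by simp
      also have "\<dots> = ((F * F ^\<^sub>m k) *\<^sub>v x0) $ i"
        using assoc_mult_mat_vec[OF F pow_carrier_mat[OF F] x0, of k] by simp
      also have "F * F ^\<^sub>m k = F ^\<^sub>m Suc k" using pow_commute[OF F, of k] by simp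
      finally show "(\<Sum>l<d. F $$ (i,l) * (F ^\<^sub>m k *\<^sub>v x0) $ l) = (F ^\<^sub>m Suc k *\<^sub>v x0) $ i" .
    qed
    have "(\<Sum>l<d. F $$ (i,l) * S N s l) = (\<Sum>l<d. \<Sum>k<N. s^k / fact k * (F $$ (i,l) * (F ^\<^sub>m k *\<^sub>v x0) $ l))"
      unfolding S_def by (simp add: sum_distrib_left mult.left_commute)
    also have "\<dots> = (\<Sum>k<N. \<Sum>l<d. s^k / fact k * (F $$ (i,l) * (F ^\<^sub>m k *\<^sub>v x0) $ l))" by (rule sum.swap)
    also have "\<dots> = (\<Sum>k<N. s^k / fact k * (\<Sum>l<d. F $$ (i,l) * (F ^\<^sub>m k *\<^sub>v x0) $ l))"
      by (simp only: sum_distrib_left)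
    also have "\<dots> = (\<Sum>k<N. s^k / fact k * (F ^\<^sub>m Suc k *\<^sub>v x0) $ i)"
      by (simp only: e)
    finally show "(\<Sum>l<d. F $$ (i,l) * S N s l) = (\<Sum>k<N. s^k / fact k * (F ^\<^sub>m Suc k *\<^sub>v x0) $ i)" .
  qed
  have Srec: "\<And>N (t::real) i. 0 \<le> t \<Longrightarrow> i < d \<Longrightarrow> S (Suc N) t i = x0 $ i + integral {0..t} (\<lambda>s. \<Sum>l<d. F $$ (i,l) * S N s l)"
  proof -
    fix N :: nat and t :: real and i :: nat assume t: "0 \<le> t" and i: "i < d"
    have "((\<lambda>s. \<Sum>k<N. s^k / fact k * (F ^\<^sub>m Suc k *\<^sub>v x0) $ i) has_integral
          (\<Sum>k<N. t^Suc k / fact (Suc k) * (F ^\<^sub>m Suc k *\<^sub>v x0) $ i)) {0..t}"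
      by (intro has_integral_sum finite_lessThan has_integral_mult_left int_pow[OF t])
    then have "integral {0..t} (\<lambda>s. \<Sum>l<d. F $$ (i,l) * S N s l) = (\<Sum>k<N. t^Suc k / fact (Suc k) * (F ^\<^sub>m Suc k *\<^sub>v x0) $ i)"
      using FS[OF i] by (simp add: integral_unique)
    moreover have "S (Suc N) t i = x0 $ i + (\<Sum>k<N. t^Suc k / fact (Suc k) * (F ^\<^sub>m Suc k *\<^sub>v x0) $ i)"
    proof -
      have "S (Suc N) t i = t^0 / fact 0 * (F ^\<^sub>m 0 *\<^sub>v x0) $ i + (\<Sum>k<N. t^Suc k / fact (Suc k) * (F ^\<^sub>m Suc k *\<^sub>v x0) $ i)"
        unfolding S_def by (rule sum.lessThan_Suc_shift)
      moreover have "t^0 / fact 0 * (F ^\<^sub>m 0 *\<^sub>v x0) $ i = x0 $ i" using F x0 i by simp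
      ultimately show ?thesis by simp
    qed
    ultimately show "S (Suc N) t i = x0 $ i + integral {0..t} (\<lambda>s. \<Sum>l<d. F $$ (i,l) * S N s l)" by simp
  qed
  have gcont: "\<And>N i t. i < d \<Longrightarrow> t \<in> {0..T} \<Longrightarrow> continuous_on {0..t} (\<lambda>s. \<Sum>l<d. F $$ (i,l) * E N s l)"
  proof -
    fix N i t assume i: "i < d" and t: "t \<in> {0..T}"
    have sub: "{0..t} \<subseteq> {0..T}" using t by auto
    have "\<And>l. l < d \<Longrightarrow> continuous_on {0..t} (\<lambda>s. E N s l)"
      using continuous_on_subset[OF Econt sub] by blast
    then show "continuous_on {0..t} (\<lambda>s. \<Sum>l<d. F $$ (i,l) * E N s l)" by (intro continuous_intros) auto
  qed
  have Erec: "\<And>N t i. t \<in> {0..T} \<Longrightarrow> i < d \<Longrightarrow> E (Suc N) t i = integral {0..t} (\<lambda>s. \<Sum>l<d. F $$ (i,l) * E N s l)"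
  proof -
    fix N t i assume t: "t \<in> {0..T}" and i: "i < d"
    have sub: "{0..t} \<subseteq> {0..T}" using t by auto
    have yc: "\<And>l. l < d \<Longrightarrow> continuous_on {0..t} (\<lambda>s. y s l)"
      using continuous_on_subset[OF cont sub] by blast
    have i1: "(\<lambda>s. \<Sum>l<d. F $$ (i,l) * y s l) integrable_on {0..t}"
      using yc by (intro integrable_continuous_interval continuous_intros) auto
    have i2: "(\<lambda>s. \<Sum>l<d. F $$ (i,l) * S N s l) integrable_on {0..t}"
      using Scont by (intro integrable_continuous_interval continuous_intros) auto
    have "E (Suc N) t i = integral {0..t} (\<lambda>s. \<Sum>l<d. F $$ (i,l) * y s l) - integral {0..t} (\<lambda>s. \<Sum>l<d. F $$ (i,l) * S N s l)"
      unfolding E_def using eq[OF t i] Srec[of t i N] t i by simp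
    also have "\<dots> = integral {0..t} (\<lambda>s. (\<Sum>l<d. F $$ (i,l) * y s l) - (\<Sum>l<d. F $$ (i,l) * S N s l))"
      by (rule integral_diff[OF i1 i2, symmetric])
    also have "\<dots> = integral {0..t} (\<lambda>s. \<Sum>l<d. F $$ (i,l) * E N s l)"
      unfolding E_def by (simp add: sum_subtractf right_diff_distrib)
    finally show "E (Suc N) t i = integral {0..t} (\<lambda>s. \<Sum>l<d. F $$ (i,l) * E N s l)" .
  qed
  obtain M where M: "\<And>s. s \<in> {0..T} \<Longrightarrow> (\<Sum>i<d. \<bar>y s i\<bar>) \<le> M"
  proof -
    have "continuous_on {0..T} (\<lambda>s. \<Sum>i<d. \<bar>y s i\<bar>)" using cont by (intro continuous_intros) auto
    then obtain x where "x \<in> {0..T}" "\<forall>s\<in>{0..T}. (\<Sum>i<d. \<bar>y s i\<bar>) \<le> (\<Sum>i<d. \<bar>y x i\<bar>)"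
      using continuous_attains_sup[of "{0..T}" "\<lambda>s. \<Sum>i<d. \<bar>y s i\<bar>"] T by auto
    then show ?thesis using that by blast
  qed
  have M0: "0 \<le> M"
  proof -
    have "0 \<le> (\<Sum>i<d. \<bar>y 0 i\<bar>)" by (simp add: sum_nonneg)
    moreover have "(\<Sum>i<d. \<bar>y 0 i\<bar>) \<le> M" using M[of 0] T by simp
    ultimately show ?thesis by linarith
  qed
  have bound: "\<And>N t. t \<in> {0..T} \<Longrightarrow> (\<Sum>i<d. \<bar>E N t i\<bar>) \<le> M * K^N * (t^N / fact N)"
  proof -
    fix N show "\<And>t. t \<in> {0..T} \<Longrightarrow> (\<Sum>i<d. \<bar>E N t i\<bar>) \<le> M * K^N * (t^N / fact N)"
    proof (induct N)
      case 0
      then show ?case using M unfolding E_def S_def by simp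
    next
      case (Suc N)
      fix t assume t: "t \<in> {0..T}"
      have t0: "0 \<le> t" using t by simp
      let ?g = "\<lambda>i s. \<Sum>l<d. F $$ (i,l) * E N s l"
      have gi: "\<And>i. i < d \<Longrightarrow> ?g i integrable_on {0..t}"
        using gcont[OF _ t] by (intro integrable_continuous_interval) auto
      have gai: "\<And>i. i < d \<Longrightarrow> (\<lambda>s. \<bar>?g i s\<bar>) integrable_on {0..t}"
      proof -
        fix i assume i: "i < d"
        show "(\<lambda>s. \<bar>?g i s\<bar>) integrable_on {0..t}"
          by (rule integrable_continuous_interval) (rule continuous_on_rabs[OF gcont[OF i t]])
      qed
      have "(\<Sum>i<d. \<bar>E (Suc N) t i\<bar>) = (\<Sum>i<d. \<bar>integral {0..t} (?g i)\<bar>)"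
        using Erec[OF t] by simp
      also have "\<dots> \<le> (\<Sum>i<d. integral {0..t} (\<lambda>s. \<bar>?g i s\<bar>))"
      proof (rule sum_mono)
        fix i assume "i \<in> {..<d}"
        then have i: "i < d" by simp
        show "\<bar>integral {0..t} (?g i)\<bar> \<le> integral {0..t} (\<lambda>s. \<bar>?g i s\<bar>)"
          using integral_norm_bound_integral[OF gi[OF i] gai[OF i], of] by simp
      qed
      also have "\<dots> = integral {0..t} (\<lambda>s. \<Sum>i<d. \<bar>?g i s\<bar>)"
        by (rule integral_sum[symmetric]) (use gai in auto)
      also have "\<dots> \<le> integral {0..t} (\<lambda>s. M * K^Suc N * (s^N / fact N))"
      proof (rule integral_le)
        show "(\<lambda>s. \<Sum>i<d. \<bar>?g i s\<bar>) integrable_on {0..t}" using gai by (intro integrable_sum) auto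
        show "(\<lambda>s. M * K^Suc N * (s^N / fact N)) integrable_on {0..t}"
          using int_pow[OF t0, of N] by (intro integrable_on_mult_right) (auto simp: has_integral_integrable)
        fix s assume s: "s \<in> {0..t}"
        then have sT: "s \<in> {0..T}" using t by simp
        have "(\<Sum>i<d. \<bar>?g i s\<bar>) \<le> (\<Sum>i<d. \<Sum>l<d. \<bar>F $$ (i,l)\<bar> * \<bar>E N s l\<bar>)"
          by (intro sum_mono order.trans[OF sum_abs]) (simp add: abs_mult)
        also have "\<dots> = (\<Sum>l<d. (\<Sum>i<d. \<bar>F $$ (i,l)\<bar>) * \<bar>E N s l\<bar>)"
          by (subst sum.swap) (simp add: sum_distrib_right)
        also have "\<dots> \<le> (\<Sum>l<d. K * \<bar>E N s l\<bar>)"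
          using Kcol by (intro sum_mono mult_right_mono) auto
        also have "\<dots> = K * (\<Sum>l<d. \<bar>E N s l\<bar>)" by (simp add: sum_distrib_left)
        also have "\<dots> \<le> K * (M * K^N * (s^N / fact N))"
          using Suc.hyps[OF sT] K1 by (intro mult_left_mono) auto
        also have "\<dots> = M * K^Suc N * (s^N / fact N)" by simp
        finally show "(\<Sum>i<d. \<bar>?g i s\<bar>) \<le> M * K^Suc N * (s^N / fact N)" .
      qed
      also have "\<dots> = M * K^Suc N * integral {0..t} (\<lambda>s. s^N / fact N)"
        by (rule integral_mult_right)
      also have "\<dots> = M * K^Suc N * (t^Suc N / fact (Suc N))"
        by (simp only: integral_unique[OF int_pow[OF t0, of N]])
      finally show "(\<Sum>i<d. \<bar>E (Suc N) t i\<bar>) \<le> M * K^Suc N * (t^Suc N / fact (Suc N))" .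
    qed
  qed
  have Elim: "(\<lambda>N. E N T i) \<longlonglongrightarrow> 0"
  proof (rule Lim_null_comparison)
    have TT: "T \<in> {0..T}" using T by simp
    show "\<forall>\<^sub>F N in sequentially. norm (E N T i) \<le> M * (inverse (fact N) * (K*T)^N)"
    proof (rule always_eventually, rule allI)
      fix N
      have "norm (E N T i) \<le> (\<Sum>i<d. \<bar>E N T i\<bar>)"
        using i member_le_sum[of i "{..<d}" "\<lambda>i. \<bar>E N T i\<bar>"] by simp
      also have "\<dots> \<le> M * K^N * (T^N / fact N)" by (rule bound[OF TT])
      also have "\<dots> = M * (inverse (fact N) * (K*T)^N)" by (simp add: power_mult_distrib divide_inverse mult_ac)
      finally show "norm (E N T i) \<le> M * (inverse (fact N) * (K*T)^N)" .
    qed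
    show "(\<lambda>N. M * (inverse (fact N) * (K*T)^N)) \<longlonglongrightarrow> 0"
      using tendsto_mult_right_zero[OF summable_LIMSEQ_zero[OF summable_exp[of "K*T"]], of M] by simp
  qed
  have summ: "\<And>j. j < d \<Longrightarrow> summable (\<lambda>k. T^k / fact k * (F ^\<^sub>m k) $$ (i,j))"
  proof -
    fix j assume j: "j < d"
    show "summable (\<lambda>k. T^k / fact k * (F ^\<^sub>m k) $$ (i,j))"
    proof (rule summable_comparison_test'[OF summable_exp[of "K*T"]])
      fix k :: nat
      have "norm (T^k / fact k * (F ^\<^sub>m k) $$ (i,j)) = T^k / fact k * \<bar>(F ^\<^sub>m k) $$ (i,j)\<bar>"
        using T by (simp add: abs_mult)
      also have "\<dots> \<le> T^k / fact k * K^k"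
        using pow_bound[OF F Kcol K1 i j] T by (intro mult_left_mono) auto
      also have "\<dots> = inverse (fact k) * (K*T)^k" by (simp add: power_mult_distrib divide_inverse mult_ac)
      finally show "norm (T^k / fact k * (F ^\<^sub>m k) $$ (i,j)) \<le> inverse (fact k) * (K*T)^k" .
    qed
  qed
  have Sform: "\<And>N. S N T i = (\<Sum>j<d. x0 $ j * (\<Sum>k<N. T^k / fact k * (F ^\<^sub>m k) $$ (i,j)))"
  proof -
    fix N
    have "S N T i = (\<Sum>k<N. T^k / fact k * (\<Sum>j<d. (F ^\<^sub>m k) $$ (i,j) * x0 $ j))"
      unfolding S_def using mv_entry[of "F ^\<^sub>m k" d d x0 i for k] F x0 i by simp
    also have "\<dots> = (\<Sum>k<N. \<Sum>j<d. x0 $ j * (T^k / fact k * (F ^\<^sub>m k) $$ (i,j)))"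
      by (simp add: sum_distrib_left mult.commute mult.left_commute)
    also have "\<dots> = (\<Sum>j<d. \<Sum>k<N. x0 $ j * (T^k / fact k * (F ^\<^sub>m k) $$ (i,j)))" by (rule sum.swap)
    also have "\<dots> = (\<Sum>j<d. x0 $ j * (\<Sum>k<N. T^k / fact k * (F ^\<^sub>m k) $$ (i,j)))"
      by (simp add: sum_distrib_left)
    finally show "S N T i = (\<Sum>j<d. x0 $ j * (\<Sum>k<N. T^k / fact k * (F ^\<^sub>m k) $$ (i,j)))" .
  qed
  have expform: "(mat_exp F T *\<^sub>v x0) $ i = (\<Sum>j<d. x0 $ j * (\<Sum>k. T^k / fact k * (F ^\<^sub>m k) $$ (i,j)))"
  proof -
    have ME: "mat_exp F T \<in> carrier_mat d d" using F unfolding mat_exp_def by auto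
    have "(mat_exp F T *\<^sub>v x0) $ i = (\<Sum>j<d. mat_exp F T $$ (i,j) * x0 $ j)"
      by (rule mv_entry[OF ME x0 i])
    also have "\<dots> = (\<Sum>j<d. x0 $ j * (\<Sum>k. T^k / fact k * (F ^\<^sub>m k) $$ (i,j)))"
      using F i unfolding mat_exp_def by (intro sum.cong refl) (auto simp: mult.commute)
    finally show ?thesis .
  qed
  have Slim: "(\<lambda>N. S N T i) \<longlonglongrightarrow> (mat_exp F T *\<^sub>v x0) $ i"
    unfolding Sform expform
    by (intro tendsto_sum tendsto_mult_left summable_LIMSEQ summ) auto
  have "(\<lambda>N. S N T i + E N T i) \<longlonglongrightarrow> (mat_exp F T *\<^sub>v x0) $ i + 0"
    by (rule tendsto_add[OF Slim Elim])
  moreover have "\<And>N. S N T i + E N T i = y T i" unfolding E_def by simp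
  ultimately show ?thesis by (simp add: LIMSEQ_const_iff)
qed

definition bez :: "nat \<Rightarrow> (nat \<Rightarrow> real) \<Rightarrow> (nat \<Rightarrow> real) \<Rightarrow> nat \<Rightarrow> nat \<Rightarrow> real" where
  "bez n cc G k j = (\<Sum>i\<le>k. if k+j+1-i \<le> n then cc (n-i) * G (n-(k+j+1-i)) - cc (n-(k+j+1-i)) * G (n-i) else 0)"

lemma tele:
  fixes h :: "nat \<Rightarrow> real"
  shows "(\<Sum>i<L. h i - h (L - i)) = h 0 - h L"
proof -
  have "(\<Sum>i<L. h (L - i)) = (\<Sum>i<L. h (Suc i))"
  proof -
    have "(\<Sum>i<L. h (L - i)) = (\<Sum>i<L. (\<lambda>i. h (Suc i)) (L - Suc i))"
      by (intro sum.cong refl) (simp add: Suc_diff_Suc)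
    also have "\<dots> = (\<Sum>i<L. h (Suc i))" by (rule sum.nat_diff_reindex)
    finally show ?thesis .
  qed
  then have "(\<Sum>i<L. h i - h (L - i)) = (\<Sum>i<L. h i - h (Suc i))" by (simp add: sum_subtractf)
  also have "\<dots> = h 0 - h L" by (rule sum_lessThan_telescope')
  finally show ?thesis .
qed

context
  fixes n :: nat and cc G :: "nat \<Rightarrow> real"
  assumes n1: "n \<ge> 1"
begin

lemma bez_last_col:
  assumes k: "k < n"
  shows "bez n cc G k (n-1) = cc (n-k) * G 0 - cc 0 * G (n-k)"
proof -
  have "bez n cc G k (n-1) = (\<Sum>i\<le>k. if i = k then cc (n-k) * G 0 - cc 0 * G (n-k) else 0)"
    unfolding bez_def using n1 k by (intro sum.cong refl) auto
  also have "\<dots> = cc (n-k) * G 0 - cc 0 * G (n-k)" by simp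
  finally show ?thesis .
qed

lemma bez_last_row:
  assumes j: "j < n"
  shows "bez n cc G (n-1) j = cc (n-j) * G 0 - cc 0 * G (n-j)"
proof -
  define h where "h x = cc (n-j-x) * G x" for x
  have "bez n cc G (n-1) j = (\<Sum>i\<le>n-1. if j \<le> i then h (i-j) - h (n - j - (i-j)) else 0)"
    unfolding bez_def h_def using n1 j by (intro sum.cong refl) (auto simp: algebra_simps)
  also have "\<dots> = (\<Sum>i\<in>{..n-1} \<inter> {i. j \<le> i}. h (i-j) - h (n - j - (i-j)))"
    by (simp only: sum.inter_restrict[OF finite_atMost] mem_Collect_eq)
  also have "{..n-1} \<inter> {i. j \<le> i} = (\<lambda>i. i + j) ` {..<n-j}"
  proof -
    have "\<And>x. x \<le> n-1 \<Longrightarrow> j \<le> x \<Longrightarrow> x \<in> (\<lambda>i. i + j) ` {..<n-j}"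
    proof -
      fix x assume "x \<le> n-1" "j \<le> x"
      then have "x - j \<in> {..<n-j}" "x = (x-j) + j" using j n1 by auto
      then show "x \<in> (\<lambda>i. i + j) ` {..<n-j}" by blast
    qed
    then show ?thesis using j n1 by auto
  qed
  also have "(\<Sum>i\<in>(\<lambda>i. i + j) ` {..<n-j}. h (i-j) - h (n - j - (i-j))) = (\<Sum>i<n-j. h i - h (n - j - i))"
    by (subst sum.reindex) (auto simp: inj_on_def)
  also have "\<dots> = h 0 - h (n-j)" by (rule tele)
  finally show ?thesis unfolding h_def by simp
qed

lemma bez_step:
  assumes k: "k < n" and j: "1 \<le> j" "j < n"
  shows "bez n cc G k (j-1) = (if 1 \<le> k then bez n cc G (k-1) j else 0) + (cc (n-k) * G (n-j) - cc (n-j) * G (n-k))"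
proof (cases k)
  case 0
  then show ?thesis unfolding bez_def using j by simp
next
  case (Suc k1)
  have "bez n cc G k (j-1) = (\<Sum>i\<le>Suc k1. if k+j-i \<le> n then cc (n-i) * G (n-(k+j-i)) - cc (n-(k+j-i)) * G (n-i) else 0)"
    unfolding bez_def Suc using j by (intro sum.cong refl) auto
  also have "\<dots> = (\<Sum>i\<le>k1. if k+j-i \<le> n then cc (n-i) * G (n-(k+j-i)) - cc (n-(k+j-i)) * G (n-i) else 0)
       + (cc (n-k) * G (n-j) - cc (n-j) * G (n-k))"
    using j k Suc by simp
  also have "(\<Sum>i\<le>k1. if k+j-i \<le> n then cc (n-i) * G (n-(k+j-i)) - cc (n-(k+j-i)) * G (n-i) else 0) = bez n cc G (k-1) j"
    unfolding bez_def Suc by (intro sum.cong refl) auto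
  finally show ?thesis using Suc by simp
qed

lemma bez_first_col:
  assumes k: "1 \<le> k" "k < n"
  shows "bez n cc G (k-1) 0 = cc n * G (n-k) - cc (n-k) * G n"
proof -
  define h where "h x = cc (n-x) * G (n-k+x)" for x
  have "bez n cc G (k-1) 0 = (\<Sum>i\<le>k-1. h i - h (k - i))"
    unfolding bez_def h_def using k by (intro sum.cong refl) (auto simp: algebra_simps)
  also have "{..k-1} = {..<k}" using k by auto
  also have "(\<Sum>i<k. h i - h (k - i)) = h 0 - h k" by (rule tele)
  finally show ?thesis unfolding h_def using k by simp
qed

lemma bez_shift:
  assumes cc0: "cc 0 = 1" and k: "k < n" and b: "b < n"
  shows "(if 1 \<le> b then bez n cc G k (b-1) else 0) - cc (n-b) * bez n cc G k (n-1)
       = (if 1 \<le> k then bez n cc G (k-1) b else 0) - cc (n-k) * bez n cc G (n-1) b"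
proof (cases "1 \<le> b")
  case True
  define X where "X = (if 1 \<le> k then bez n cc G (k-1) b else 0)"
  have e1: "bez n cc G k (b-1) = X + (cc (n-k) * G (n-b) - cc (n-b) * G (n-k))"
    using bez_step[OF k True b] unfolding X_def .
  have e2: "bez n cc G k (n-1) = cc (n-k) * G 0 - G (n-k)" using bez_last_col[OF k] cc0 by simp
  have e3: "bez n cc G (n-1) b = cc (n-b) * G 0 - G (n-b)" using bez_last_row[OF b] cc0 by simp
  show ?thesis unfolding X_def[symmetric] using True by (simp only: e1 e2 e3 if_True) (simp add: algebra_simps)
next
  case False
  then have b0: "b = 0" by simp
  show ?thesis
  proof (cases "1 \<le> k")
    case True
    have e1: "bez n cc G (k-1) 0 = cc n * G (n-k) - cc (n-k) * G n" using bez_first_col[OF True k] .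
    have e2: "bez n cc G k (n-1) = cc (n-k) * G 0 - G (n-k)" using bez_last_col[OF k] cc0 by simp
    have e3: "bez n cc G (n-1) 0 = cc n * G 0 - G n" using bez_last_row[OF b] cc0 b0 by simp
    show ?thesis using True b0 by (simp only: e1 e2 e3 if_True if_False) (simp add: algebra_simps)
  next
    case False
    then have "k = 0" by simp
    then show ?thesis using b0 bez_last_col[OF k] bez_last_row[OF b] cc0 by simp
  qed
qed

end

definition cpr :: "(nat \<Rightarrow> real) \<Rightarrow> nat \<Rightarrow> real" where "cpr c i = (if i = 0 then 1 else c i)"

definition Qe :: "nat \<Rightarrow> (nat \<Rightarrow> real) \<Rightarrow> (nat \<Rightarrow> real mat) \<Rightarrow> nat \<Rightarrow> nat \<Rightarrow> nat \<Rightarrow> nat \<Rightarrow> real" where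
  "Qe n c A k j r t = bez n (cpr c) (\<lambda>i. Ap A i r t) k j"

definition Pe :: "nat \<Rightarrow> (nat \<Rightarrow> real) \<Rightarrow> (nat \<Rightarrow> real mat) \<Rightarrow> nat \<Rightarrow> nat \<Rightarrow> nat \<Rightarrow> nat \<Rightarrow> real" where
  "Pe n c B k j r t = - bez n (cpr c) (\<lambda>i. if i = 0 then 0 else B i $$ (r,t)) k j"

lemma chain:
  fixes P V :: "nat \<Rightarrow> real" and w :: real and c :: "nat \<Rightarrow> real"
  assumes n1: "n \<ge> 1"
  shows "(\<Sum>j<n. P j * ((if j < n-1 then V (j+1) else 0) + (if j = n-1 then w - (\<Sum>b<n. c (n-b) * V b) else 0)))
       = (\<Sum>b<n. ((if 1 \<le> b then P (b-1) else 0) - c (n-b) * P (n-1)) * V b) + P (n-1) * w"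
proof -
  obtain n1 where n: "n = Suc n1" using n1 by (cases n) auto
  have "(\<Sum>j<n. P j * ((if j < n-1 then V (j+1) else 0) + (if j = n-1 then w - (\<Sum>b<n. c (n-b) * V b) else 0)))
      = (\<Sum>j<n1. P j * V (Suc j)) + P n1 * (w - (\<Sum>b<n. c (n-b) * V b))"
    unfolding n by (simp add: sum.lessThan_Suc)
  also have "(\<Sum>j<n1. P j * V (Suc j)) = (\<Sum>b<n. (if 1 \<le> b then P (b-1) else 0) * V b)"
    unfolding n by (subst sum.lessThan_Suc_shift) simp
  finally show ?thesis using n
    by (simp add: left_diff_distrib sum_subtractf sum_distrib_left sum_distrib_right right_diff_distrib distrib_left mult.assoc mult.left_commute)
qed

context
  fixes n :: nat and c :: "nat \<Rightarrow> real" and A B :: "nat \<Rightarrow> real mat"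
  assumes n1: "n \<ge> 1"
begin

lemma Pe_lastcol: "k < n \<Longrightarrow> Pe n c B k (n-1) r t = B (n-k) $$ (r,t)"
  unfolding Pe_def using bez_last_col[OF n1] by (simp add: cpr_def)

lemma Pe_lastrow: "j < n \<Longrightarrow> Pe n c B (n-1) j r t = B (n-j) $$ (r,t)"
  unfolding Pe_def using bez_last_row[OF n1] by (simp add: cpr_def)

lemma Qe_lastcol: "k < n \<Longrightarrow> Qe n c A k (n-1) r t = c (n-k) * (if r = t then 1 else 0) - A (n-k) $$ (r,t)"
  unfolding Qe_def using bez_last_col[OF n1] by (simp add: cpr_def Ap_def)

lemma Qe_lastrow: "j < n \<Longrightarrow> Qe n c A (n-1) j r t = c (n-j) * (if r = t then 1 else 0) - A (n-j) $$ (r,t)"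
  unfolding Qe_def using bez_last_row[OF n1] by (simp add: cpr_def Ap_def)

lemma Pe_shift: "k < n \<Longrightarrow> b < n \<Longrightarrow>
  (if 1 \<le> b then Pe n c B k (b-1) r t else 0) - c (n-b) * Pe n c B k (n-1) r t
   = (if 1 \<le> k then Pe n c B (k-1) b r t else 0) - c (n-k) * Pe n c B (n-1) b r t"
  using bez_shift[OF n1, where cc="cpr c" and G="\<lambda>i. if i = 0 then 0 else B i $$ (r,t)" and k=k and b=b]
  unfolding Pe_def by (auto simp: cpr_def algebra_simps split: if_splits)

lemma Qe_shift: "k < n \<Longrightarrow> b < n \<Longrightarrow>
  (if 1 \<le> b then Qe n c A k (b-1) r t else 0) - c (n-b) * Qe n c A k (n-1) r t
   = (if 1 \<le> k then Qe n c A (k-1) b r t else 0) - c (n-k) * Qe n c A (n-1) b r t"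
  using bez_shift[OF n1, where cc="cpr c" and G="\<lambda>i. Ap A i r t" and k=k and b=b]
  unfolding Qe_def by (auto simp: cpr_def algebra_simps split: if_splits)

end

context
  fixes n m p :: nat and c :: "nat \<Rightarrow> real" and A B :: "nat \<Rightarrow> real mat"
  assumes n1: "n \<ge> 1"
begin

lemma deriv_id:
  fixes X Z U :: "nat \<Rightarrow> nat \<Rightarrow> real" and uu :: "nat \<Rightarrow> real"
  assumes k: "k < n" and r: "r < p"
  defines "xt \<equiv> \<lambda>k r. X k r - (\<Sum>j<n. \<Sum>t<m. Pe n c B k j r t * Z j t) - (\<Sum>j<n. \<Sum>t<p. Qe n c A k j r t * U j t)"
  shows "((if 1 \<le> k then X (k-1) r else 0) - (\<Sum>r'<p. A (n-k) $$ (r,r') * X (n-1) r') + (\<Sum>t<m. B (n-k) $$ (r,t) * uu t))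
   - (\<Sum>j<n. \<Sum>t<m. Pe n c B k j r t * ((if j < n-1 then Z (j+1) t else 0) + (if j = n-1 then uu t - (\<Sum>b<n. c (n-b) * Z b t) else 0)))
   - (\<Sum>j<n. \<Sum>t<p. Qe n c A k j r t * ((if j < n-1 then U (j+1) t else 0) + (if j = n-1 then X (n-1) t - (\<Sum>b<n. c (n-b) * U b t) else 0)))
   = (if 1 \<le> k then xt (k-1) r else 0) - c (n-k) * xt (n-1) r"
proof -
  have PZ: "(\<Sum>j<n. \<Sum>t<m. Pe n c B k j r t * ((if j < n-1 then Z (j+1) t else 0) + (if j = n-1 then uu t - (\<Sum>b<n. c (n-b) * Z b t) else 0)))
     = (\<Sum>t<m. \<Sum>b<n. ((if 1 \<le> k then Pe n c B (k-1) b r t else 0) - c (n-k) * Pe n c B (n-1) b r t) * Z b t)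
       + (\<Sum>t<m. B (n-k) $$ (r,t) * uu t)"
  proof -
    have "(\<Sum>j<n. \<Sum>t<m. Pe n c B k j r t * ((if j < n-1 then Z (j+1) t else 0) + (if j = n-1 then uu t - (\<Sum>b<n. c (n-b) * Z b t) else 0)))
       = (\<Sum>t<m. \<Sum>j<n. Pe n c B k j r t * ((if j < n-1 then Z (j+1) t else 0) + (if j = n-1 then uu t - (\<Sum>b<n. c (n-b) * Z b t) else 0)))"
      by (rule sum.swap)
    also have "\<dots> = (\<Sum>t<m. (\<Sum>b<n. ((if 1 \<le> b then Pe n c B k (b-1) r t else 0) - c (n-b) * Pe n c B k (n-1) r t) * Z b t) + Pe n c B k (n-1) r t * uu t)"
      by (rule sum.cong[OF refl]) (rule chain[OF n1])
    also have "\<dots> = (\<Sum>t<m. (\<Sum>b<n. ((if 1 \<le> k then Pe n c B (k-1) b r t else 0) - c (n-k) * Pe n c B (n-1) b r t) * Z b t) + B (n-k) $$ (r,t) * uu t)"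
      using Pe_shift[OF n1 k] Pe_lastcol[OF n1 k] by simp
    finally show ?thesis by (simp add: sum.distrib)
  qed
  have QU: "(\<Sum>j<n. \<Sum>t<p. Qe n c A k j r t * ((if j < n-1 then U (j+1) t else 0) + (if j = n-1 then X (n-1) t - (\<Sum>b<n. c (n-b) * U b t) else 0)))
     = (\<Sum>t<p. \<Sum>b<n. ((if 1 \<le> k then Qe n c A (k-1) b r t else 0) - c (n-k) * Qe n c A (n-1) b r t) * U b t)
       + (c (n-k) * X (n-1) r - (\<Sum>t<p. A (n-k) $$ (r,t) * X (n-1) t))"
  proof -
    have "(\<Sum>j<n. \<Sum>t<p. Qe n c A k j r t * ((if j < n-1 then U (j+1) t else 0) + (if j = n-1 then X (n-1) t - (\<Sum>b<n. c (n-b) * U b t) else 0)))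
       = (\<Sum>t<p. \<Sum>j<n. Qe n c A k j r t * ((if j < n-1 then U (j+1) t else 0) + (if j = n-1 then X (n-1) t - (\<Sum>b<n. c (n-b) * U b t) else 0)))"
      by (rule sum.swap)
    also have "\<dots> = (\<Sum>t<p. (\<Sum>b<n. ((if 1 \<le> b then Qe n c A k (b-1) r t else 0) - c (n-b) * Qe n c A k (n-1) r t) * U b t) + Qe n c A k (n-1) r t * X (n-1) t)"
      by (rule sum.cong[OF refl]) (rule chain[OF n1])
    also have "\<dots> = (\<Sum>t<p. (\<Sum>b<n. ((if 1 \<le> k then Qe n c A (k-1) b r t else 0) - c (n-k) * Qe n c A (n-1) b r t) * U b t)
         + (c (n-k) * (if r = t then 1 else 0) - A (n-k) $$ (r,t)) * X (n-1) t)"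
      using Qe_shift[OF n1 k] Qe_lastcol[OF n1 k] by simp
    also have "\<dots> = (\<Sum>t<p. \<Sum>b<n. ((if 1 \<le> k then Qe n c A (k-1) b r t else 0) - c (n-k) * Qe n c A (n-1) b r t) * U b t)
         + (\<Sum>t<p. (c (n-k) * (if r = t then 1 else 0) - A (n-k) $$ (r,t)) * X (n-1) t)"
      by (simp add: sum.distrib)
    also have "(\<Sum>t<p. (c (n-k) * (if r = t then 1 else 0) - A (n-k) $$ (r,t)) * X (n-1) t)
        = c (n-k) * X (n-1) r - (\<Sum>t<p. A (n-k) $$ (r,t) * X (n-1) t)"
    proof -
      have "(\<Sum>t<p. (c (n-k) * (if r = t then 1 else 0) - A (n-k) $$ (r,t)) * X (n-1) t)
         = (\<Sum>t<p. (if r = t then 1 else 0) * (c (n-k) * X (n-1) t)) - (\<Sum>t<p. A (n-k) $$ (r,t) * X (n-1) t)"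
        by (simp add: left_diff_distrib sum_subtractf mult.assoc mult.left_commute)
      also have "(\<Sum>t<p. (if r = t then 1 else 0) * (c (n-k) * X (n-1) t)) = c (n-k) * X (n-1) r"
        using sum_delta_mult(4)[OF r, of "\<lambda>t. c (n-k) * X (n-1) t"] .
      finally show ?thesis .
    qed
    finally show ?thesis .
  qed
  have xtf: "\<And>k'. xt k' r = X k' r - (\<Sum>t<m. \<Sum>b<n. Pe n c B k' b r t * Z b t) - (\<Sum>t<p. \<Sum>b<n. Qe n c A k' b r t * U b t)"
    unfolding xt_def by (simp add: sum.swap[of _ "{..<n}"])
  show ?thesis
  proof (cases "1 \<le> k")
    case True
    show ?thesis unfolding PZ QU xtf using True
      by (simp add: left_diff_distrib sum_subtractf sum_distrib_left mult.assoc right_diff_distrib sum_negf)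
  next
    case False
    show ?thesis unfolding PZ QU xtf using False
      by (simp add: left_diff_distrib sum_subtractf sum_distrib_left mult.assoc right_diff_distrib sum_negf)
  qed
qed

end

lemma AM_carrier: "A_M n p A \<in> carrier_mat (p*n) (p*n)" unfolding A_M_def by simp
lemma BM_carrier: "B_M n m p B \<in> carrier_mat (p*n) m" unfolding B_M_def by simp
lemma CM_carrier: "C_M n p \<in> carrier_mat p (p*n)" unfolding C_M_def by simp
lemma LB_carrier: "L_B n m p B \<in> carrier_mat (p*n) (m*n)" unfolding L_B_def by simp
lemma Ac_carrier: "A_c n p A \<in> carrier_mat (p*n) (p*n)" unfolding A_c_def by simp
lemma KA_carrier: "kron (A_r n c) (1\<^sub>m q) \<in> carrier_mat (n*q) (n*q)"
  using kron_carrier[OF A_r_carrier, of "1\<^sub>m q" q q n c] by simp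
lemma KB_carrier: "kron (B_r n) (1\<^sub>m q) \<in> carrier_mat (n*q) q"
  using kron_carrier[OF B_r_carrier, of "1\<^sub>m q" q q n] by simp

lemma blk_sum_delta:
  fixes g :: "nat \<Rightarrow> nat \<Rightarrow> real"
  assumes "b < n" "t < q"
  shows "(\<Sum>b'<n. \<Sum>t'<q. (if b' = b \<and> t' = t then 1 else 0) * g b' t') = g b t"
proof -
  have "(\<Sum>b'<n. \<Sum>t'<q. (if b' = b \<and> t' = t then 1 else 0) * g b' t') = (\<Sum>b'<n. if b' = b then g b' t else 0)"
  proof (rule sum.cong[OF refl])
    fix b' show "(\<Sum>t'<q. (if b' = b \<and> t' = t then 1 else 0) * g b' t') = (if b' = b then g b' t else 0)"
      using sum_delta_mult(3)[OF assms(2), of "g b'"] by (cases "b' = b") auto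
  qed
  also have "\<dots> = g b t" using assms by simp
  finally show ?thesis .
qed

lemma AMv:
  fixes x :: "real vec"
  assumes x: "x \<in> carrier_vec (p*n)" and k: "k < n" and r: "r < p"
  shows "(A_M n p A *\<^sub>v x) $ (k*p+r) = (if 1 \<le> k then x $ ((k-1)*p+r) else 0) - (\<Sum>r'<p. A (n-k) $$ (r,r') * x $ ((n-1)*p+r'))"
proof -
  obtain n1 where n: "n = Suc n1" using k by (cases n) auto
  have i: "k*p+r < p*n" using blt[OF k r] by (simp add: mult.commute)
  have "(A_M n p A *\<^sub>v x) $ (k*p+r) = (\<Sum>l<p*n. A_M n p A $$ (k*p+r, l) * x $ l)"
    by (rule mv_entry[OF AM_carrier x i])
  also have "\<dots> = (\<Sum>l<n*p. A_M n p A $$ (k*p+r, l) * x $ l)" by (simp add: mult.commute)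
  also have "\<dots> = (\<Sum>b<n. \<Sum>r'<p. A_M n p A $$ (k*p+r, b*p+r') * x $ (b*p+r'))" by (rule sum_blocks)
  also have "\<dots> = (\<Sum>b<n. \<Sum>r'<p. (if b < n-1 then (if k = b+1 \<and> r = r' then 1 else 0) else - A (n-k) $$ (r, r')) * x $ (b*p+r'))"
  proof (intro sum.cong refl)
    fix b r' assume b: "b \<in> {..<n}" and r': "r' \<in> {..<p}"
    have j: "b*p+r' < p*n" using blt[of b n r' p] b r' by (simp add: mult.commute)
    have e: "\<not> b < n - 1 \<Longrightarrow> b*p + r' - p*(n-1) = r'" using b by (subgoal_tac "b = n-1") (auto simp: mult.commute)
    have e2: "(k*p+r = b*p+r'+p) = (k = b+1 \<and> r = r')"
      using beq[of r p r' k "b+1"] r r' by (simp add: ac_simps)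
    have e3: "(b*p + r' < p*(n-1)) = (b < n-1)" using blt_iff[of r' p b "n-1"] r' by (simp add: mult.commute)
    show "A_M n p A $$ (k*p+r, b*p+r') * x $ (b*p+r') = (if b < n-1 then (if k = b+1 \<and> r = r' then 1 else 0) else - A (n-k) $$ (r, r')) * x $ (b*p+r')"
      using i j e e2 e3 r unfolding A_M_def by simp
  qed
  also have "\<dots> = (\<Sum>b<n1. \<Sum>r'<p. (if k = b+1 \<and> r = r' then 1 else 0) * x $ (b*p+r')) - (\<Sum>r'<p. A (n-k) $$ (r,r') * x $ ((n-1)*p+r'))"
    unfolding n by (simp add: sum_negf)
  also have "(\<Sum>b<n1. \<Sum>r'<p. (if k = b+1 \<and> r = r' then 1 else 0) * x $ (b*p+r')) = (if 1 \<le> k then x $ ((k-1)*p+r) else 0)"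
  proof (cases k)
    case 0 then show ?thesis by simp
  next
    case (Suc k1)
    then have k1: "k1 < n1" using k n by simp
    have "(\<Sum>b<n1. \<Sum>r'<p. (if k = b+1 \<and> r = r' then 1 else 0) * x $ (b*p+r')) = (\<Sum>b<n1. \<Sum>r'<p. (if b = k1 \<and> r' = r then 1 else 0) * x $ (b*p+r'))"
      using Suc by (intro sum.cong refl) auto
    also have "\<dots> = x $ (k1*p+r)" by (rule blk_sum_delta[OF k1 r])
    finally show ?thesis using Suc by simp
  qed
  finally show ?thesis .
qed

lemma BMv:
  fixes u :: "real vec"
  assumes u: "u \<in> carrier_vec m" and k: "k < n" and r: "r < p"
  shows "(B_M n m p B *\<^sub>v u) $ (k*p+r) = (\<Sum>t<m. B (n-k) $$ (r,t) * u $ t)"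
proof -
  have i: "k*p+r < p*n" using blt[OF k r] by (simp add: mult.commute)
  show ?thesis using mv_entry[OF BM_carrier u i] i r unfolding B_M_def by simp
qed

lemma CMv:
  fixes x :: "real vec"
  assumes x: "x \<in> carrier_vec (p*n)" and r: "r < p" and n1: "n \<ge> 1"
  shows "(C_M n p *\<^sub>v x) $ r = x $ ((n-1)*p+r)"
proof -
  have j: "(n-1)*p+r < p*n" using blt[of "n-1" n r p] r n1 by (simp add: mult.commute)
  have "(C_M n p *\<^sub>v x) $ r = (\<Sum>l<p*n. C_M n p $$ (r,l) * x $ l)" by (rule mv_entry[OF CM_carrier x r])
  also have "\<dots> = (\<Sum>l<p*n. (if l = (n-1)*p+r then 1 else 0) * x $ l)"
    using r unfolding C_M_def by (intro sum.cong refl) (auto simp: mult.commute)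
  also have "\<dots> = x $ ((n-1)*p+r)" using sum_delta_mult(3)[OF j, of "\<lambda>l. x $ l"] .
  finally show ?thesis .
qed

lemma KAv:
  fixes v :: "real vec"
  assumes v: "v \<in> carrier_vec (n*q)" and b: "b < n" and t: "t < q"
  shows "(kron (A_r n c) (1\<^sub>m q) *\<^sub>v v) $ (b*q+t) =
     (if b < n-1 then v $ ((b+1)*q+t) else - (\<Sum>b'<n. c (n-b') * v $ (b'*q+t)))"
proof -
  have i: "b*q+t < n*q" using blt[OF b t] .
  have "(kron (A_r n c) (1\<^sub>m q) *\<^sub>v v) $ (b*q+t) = (\<Sum>l<n*q. kron (A_r n c) (1\<^sub>m q) $$ (b*q+t, l) * v $ l)"
    by (rule mv_entry[OF KA_carrier v i])
  also have "\<dots> = (\<Sum>b'<n. \<Sum>t'<q. kron (A_r n c) (1\<^sub>m q) $$ (b*q+t, b'*q+t') * v $ (b'*q+t'))" by (rule sum_blocks)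
  also have "\<dots> = (\<Sum>b'<n. \<Sum>t'<q. (A_r n c $$ (b,b') * (if t = t' then 1 else 0)) * v $ (b'*q+t'))"
  proof (intro sum.cong refl)
    fix b' t' assume "b' \<in> {..<n}" "t' \<in> {..<q}"
    then show "kron (A_r n c) (1\<^sub>m q) $$ (b*q+t, b'*q+t') * v $ (b'*q+t') = (A_r n c $$ (b,b') * (if t = t' then 1 else 0)) * v $ (b'*q+t')"
      using kron_entry[where X="A_r n c" and Y="1\<^sub>m q" and a=n and b=n and c=q and d=q and i=b and k=t and j=b' and l=t'] A_r_carrier[of n c] b t by simp
  qed
  also have "\<dots> = (\<Sum>b'<n. A_r n c $$ (b,b') * v $ (b'*q+t))"
  proof (rule sum.cong[OF refl])
    fix b' show "(\<Sum>t'<q. (A_r n c $$ (b,b') * (if t = t' then 1 else 0)) * v $ (b'*q+t')) = A_r n c $$ (b,b') * v $ (b'*q+t)"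
      using sum_delta_mult(4)[OF t, of "\<lambda>t'. A_r n c $$ (b,b') * v $ (b'*q+t')"] by (simp add: ac_simps)
  qed
  also have "\<dots> = (if b < n-1 then v $ ((b+1)*q+t) else - (\<Sum>b'<n. c (n-b') * v $ (b'*q+t)))"
  proof (cases "b < n-1")
    case True
    have "(\<Sum>b'<n. A_r n c $$ (b,b') * v $ (b'*q+t)) = (\<Sum>b'<n. (if b' = b+1 then 1 else 0) * v $ (b'*q+t))"
      using True b by (intro sum.cong refl) (simp add: A_r_entry)
    also have "\<dots> = v $ ((b+1)*q+t)" using sum_delta_mult(3)[of "b+1" n "\<lambda>b'. v $ (b'*q+t)"] True by simp
    finally show ?thesis using True by simp
  next
    case False
    have "(\<Sum>b'<n. A_r n c $$ (b,b') * v $ (b'*q+t)) = (\<Sum>b'<n. - (c (n-b') * v $ (b'*q+t)))"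
      using False b by (intro sum.cong refl) (simp add: A_r_entry)
    then show ?thesis using False by (simp add: sum_negf)
  qed
  finally show ?thesis .
qed

lemma KBv:
  fixes w :: "real vec"
  assumes w: "w \<in> carrier_vec q" and b: "b < n" and t: "t < q"
  shows "(kron (B_r n) (1\<^sub>m q) *\<^sub>v w) $ (b*q+t) = (if b = n-1 then w $ t else 0)"
proof -
  have i: "b*q+t < n*q" using blt[OF b t] .
  have "(kron (B_r n) (1\<^sub>m q) *\<^sub>v w) $ (b*q+t) = (\<Sum>l<q. kron (B_r n) (1\<^sub>m q) $$ (b*q+t, l) * w $ l)"
    by (rule mv_entry[OF KB_carrier w i])
  also have "\<dots> = (\<Sum>l<q. ((if b = n-1 then 1 else 0) * (if t = l then 1 else 0)) * w $ l)"
  proof (intro sum.cong refl)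
    fix l assume l: "l \<in> {..<q}"
    then show "kron (B_r n) (1\<^sub>m q) $$ (b*q+t, l) * w $ l = ((if b = n-1 then 1 else 0) * (if t = l then 1 else 0)) * w $ l"
      using kron_entry[where X="B_r n" and Y="1\<^sub>m q" and a=n and b=1 and c=q and d=q and i=b and k=t and j=0 and l=l]
        B_r_carrier[of n] B_r_entry[OF b] b t by simp
  qed
  also have "\<dots> = (if b = n-1 then w $ t else 0)"
    using sum_delta_mult(4)[OF t, of "\<lambda>l. w $ l"] by (simp add: mult.assoc)
  finally show ?thesis .
qed

lemma Frow:
  fixes y :: "nat \<Rightarrow> real"
  assumes k: "k < n" and r: "r < p"
  shows "(\<Sum>l<p*n. transpose_mat (kron (A_r n c) (1\<^sub>m p)) $$ (k*p+r, l) * y l)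
       = (if 1 \<le> k then y ((k-1)*p+r) else 0) - c (n-k) * y ((n-1)*p+r)"
proof -
  have i: "k*p+r < n*p" using blt[OF k r] .
  have "(\<Sum>l<p*n. transpose_mat (kron (A_r n c) (1\<^sub>m p)) $$ (k*p+r, l) * y l)
     = (\<Sum>l<n*p. transpose_mat (kron (A_r n c) (1\<^sub>m p)) $$ (k*p+r, l) * y l)" by (simp add: mult.commute)
  also have "\<dots> = (\<Sum>b<n. \<Sum>r'<p. transpose_mat (kron (A_r n c) (1\<^sub>m p)) $$ (k*p+r, b*p+r') * y (b*p+r'))" by (rule sum_blocks)
  also have "\<dots> = (\<Sum>b<n. \<Sum>r'<p. (A_r n c $$ (b,k) * (if r' = r then 1 else 0)) * y (b*p+r'))"
  proof (intro sum.cong refl)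
    fix b r' assume b: "b \<in> {..<n}" and r': "r' \<in> {..<p}"
    have j: "b*p+r' < n*p" using blt[of b n r' p] b r' by simp
    show "transpose_mat (kron (A_r n c) (1\<^sub>m p)) $$ (k*p+r, b*p+r') * y (b*p+r') = (A_r n c $$ (b,k) * (if r' = r then 1 else 0)) * y (b*p+r')"
      using KA_carrier[of n c p] i j
        kron_entry[where X="A_r n c" and Y="1\<^sub>m p" and a=n and b=n and c=p and d=p and i=b and k=r' and j=k and l=r]
        A_r_carrier[of n c] b r' k r by (simp add: carrier_matD)
  qed
  also have "\<dots> = (\<Sum>b<n. y (b*p+r) * A_r n c $$ (b,k))"
  proof (rule sum.cong[OF refl])
    fix b show "(\<Sum>r'<p. (A_r n c $$ (b,k) * (if r' = r then 1 else 0)) * y (b*p+r')) = y (b*p+r) * A_r n c $$ (b,k)"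
      using sum_delta_mult(3)[OF r, of "\<lambda>r'. A_r n c $$ (b,k) * y (b*p+r')"] by (simp add: ac_simps)
  qed
  also have "\<dots> = (if 1 \<le> k then y ((k-1)*p+r) else 0) - c (n-k) * y ((n-1)*p+r)"
    by (rule A_r_colsum[OF k])
  finally show ?thesis .
qed

lemma AMf_carrier: "A_Mf n m p A B c \<in> carrier_mat (n*m+p*n) (n*m+p*n)" using AMf_dims by blast

lemma AMf_rowz:
  fixes z w :: "real vec"
  assumes z: "z \<in> carrier_vec (n*m)" and w: "w \<in> carrier_vec (p*n)" and i: "i < n*m"
  shows "(A_Mf n m p A B c *\<^sub>v (z @\<^sub>v w)) $ i = (kron (A_r n c) (1\<^sub>m m) *\<^sub>v z) $ i"
proof -
  have zw: "z @\<^sub>v w \<in> carrier_vec (n*m+p*n)" using z w by simp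
  have iN: "i < n*m+p*n" using i by simp
  have "(A_Mf n m p A B c *\<^sub>v (z @\<^sub>v w)) $ i = (\<Sum>l<n*m+p*n. A_Mf n m p A B c $$ (i,l) * (z @\<^sub>v w) $ l)"
    by (rule mv_entry[OF AMf_carrier zw iN])
  also have "\<dots> = (\<Sum>l<n*m. A_Mf n m p A B c $$ (i,l) * (z @\<^sub>v w) $ l) + (\<Sum>l<p*n. A_Mf n m p A B c $$ (i,n*m+l) * (z @\<^sub>v w) $ (n*m+l))"
    by (rule sum_add_split)
  also have "(\<Sum>l<p*n. A_Mf n m p A B c $$ (i,n*m+l) * (z @\<^sub>v w) $ (n*m+l)) = 0"
    using i KA_carrier[of n c m] Ac_carrier[of n p A] unfolding A_Mf_def
    by (intro sum.neutral) (auto simp: carrier_matD mult.commute[of m n])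
  also have "(\<Sum>l<n*m. A_Mf n m p A B c $$ (i,l) * (z @\<^sub>v w) $ l) = (\<Sum>l<n*m. kron (A_r n c) (1\<^sub>m m) $$ (i,l) * z $ l)"
    using i z w KA_carrier[of n c m] Ac_carrier[of n p A] unfolding A_Mf_def
    by (intro sum.cong refl) (auto simp: carrier_matD)
  also have "\<dots> = (kron (A_r n c) (1\<^sub>m m) *\<^sub>v z) $ i" by (rule mv_entry[OF KA_carrier z i, symmetric])
  finally show ?thesis by simp
qed

lemma AMf_rowm:
  fixes z w :: "real vec"
  assumes z: "z \<in> carrier_vec (n*m)" and w: "w \<in> carrier_vec (p*n)" and i: "i < p*n"
  shows "(A_Mf n m p A B c *\<^sub>v (z @\<^sub>v w)) $ (n*m+i) = (L_B n m p B *\<^sub>v z) $ i + (A_c n p A *\<^sub>v w) $ i"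
proof -
  have zw: "z @\<^sub>v w \<in> carrier_vec (n*m+p*n)" using z w by simp
  have iN: "n*m+i < n*m+p*n" using i by simp
  have z': "z \<in> carrier_vec (m*n)" using z by (simp add: mult.commute)
  have "(A_Mf n m p A B c *\<^sub>v (z @\<^sub>v w)) $ (n*m+i) = (\<Sum>l<n*m+p*n. A_Mf n m p A B c $$ (n*m+i,l) * (z @\<^sub>v w) $ l)"
    by (rule mv_entry[OF AMf_carrier zw iN])
  also have "\<dots> = (\<Sum>l<n*m. A_Mf n m p A B c $$ (n*m+i,l) * (z @\<^sub>v w) $ l) + (\<Sum>l<p*n. A_Mf n m p A B c $$ (n*m+i,n*m+l) * (z @\<^sub>v w) $ (n*m+l))"
    by (rule sum_add_split)
  also have "(\<Sum>l<p*n. A_Mf n m p A B c $$ (n*m+i,n*m+l) * (z @\<^sub>v w) $ (n*m+l)) = (\<Sum>l<p*n. A_c n p A $$ (i,l) * w $ l)"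
    using i z w KA_carrier[of n c m] Ac_carrier[of n p A] unfolding A_Mf_def
    by (intro sum.cong refl) (auto simp: carrier_matD)
  also have "\<dots> = (A_c n p A *\<^sub>v w) $ i" by (rule mv_entry[OF Ac_carrier w i, symmetric])
  also have "(\<Sum>l<n*m. A_Mf n m p A B c $$ (n*m+i,l) * (z @\<^sub>v w) $ l) = (\<Sum>l<m*n. L_B n m p B $$ (i,l) * z $ l)"
    using i z w KA_carrier[of n c m] Ac_carrier[of n p A] LB_carrier[of n m p B] unfolding A_Mf_def
    by (auto simp: carrier_matD mult.commute[of m n] intro!: sum.cong)
  also have "\<dots> = (L_B n m p B *\<^sub>v z) $ i" by (rule mv_entry[OF LB_carrier z' i, symmetric])
  finally show ?thesis by simp
qed

lemma LBv:
  fixes z :: "real vec"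
  assumes z: "z \<in> carrier_vec (m*n)" and b: "b < n" and r: "r < p"
  shows "(L_B n m p B *\<^sub>v z) $ (b*p+r) = (if b < n-1 then 0 else (\<Sum>j<n. \<Sum>t<m. B (n-j) $$ (r,t) * z $ (j*m+t)))"
proof -
  have i: "b*p+r < p*n" using blt[OF b r] by (simp add: mult.commute)
  have "(L_B n m p B *\<^sub>v z) $ (b*p+r) = (\<Sum>l<m*n. L_B n m p B $$ (b*p+r, l) * z $ l)"
    by (rule mv_entry[OF LB_carrier z i])
  also have "\<dots> = (\<Sum>l<n*m. L_B n m p B $$ (b*p+r, l) * z $ l)" by (simp add: mult.commute)
  also have "\<dots> = (\<Sum>j<n. \<Sum>t<m. L_B n m p B $$ (b*p+r, j*m+t) * z $ (j*m+t))" by (rule sum_blocks)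
  also have "\<dots> = (\<Sum>j<n. \<Sum>t<m. (if b < n-1 then 0 else B (n-j) $$ (r,t)) * z $ (j*m+t))"
  proof (intro sum.cong refl)
    fix j t assume j: "j \<in> {..<n}" and t: "t \<in> {..<m}"
    have jj: "j*m+t < m*n" using blt[of j n t m] j t by (simp add: mult.commute)
    have e: "\<not> b < n - 1 \<Longrightarrow> b*p + r - (n-1)*p = r" using b by (subgoal_tac "b = n-1") auto
    have e3: "(b*p + r < (n-1)*p) = (b < n-1)" using blt_iff[of r p b "n-1"] r by simp
    show "L_B n m p B $$ (b*p+r, j*m+t) * z $ (j*m+t) = (if b < n-1 then 0 else B (n-j) $$ (r,t)) * z $ (j*m+t)"
      using i jj e e3 t unfolding L_B_def by simp
  qed
  also have "\<dots> = (if b < n-1 then 0 else (\<Sum>j<n. \<Sum>t<m. B (n-j) $$ (r,t) * z $ (j*m+t)))" by simp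
  finally show ?thesis .
qed

lemma Acv:
  fixes w :: "real vec"
  assumes w: "w \<in> carrier_vec (p*n)" and b: "b < n" and r: "r < p"
  shows "(A_c n p A *\<^sub>v w) $ (b*p+r) = (if b < n-1 then w $ ((b+1)*p+r) else - (\<Sum>j<n. \<Sum>r'<p. A (n-j) $$ (r,r') * w $ (j*p+r')))"
proof -
  have i: "b*p+r < p*n" using blt[OF b r] by (simp add: mult.commute)
  have "(A_c n p A *\<^sub>v w) $ (b*p+r) = (\<Sum>l<p*n. A_c n p A $$ (b*p+r, l) * w $ l)"
    by (rule mv_entry[OF Ac_carrier w i])
  also have "\<dots> = (\<Sum>l<n*p. A_c n p A $$ (b*p+r, l) * w $ l)" by (simp add: mult.commute)
  also have "\<dots> = (\<Sum>j<n. \<Sum>r'<p. A_c n p A $$ (b*p+r, j*p+r') * w $ (j*p+r'))" by (rule sum_blocks)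
  also have "\<dots> = (\<Sum>j<n. \<Sum>r'<p. (if b < n-1 then (if j = b+1 \<and> r' = r then 1 else 0) else - A (n-j) $$ (r,r')) * w $ (j*p+r'))"
  proof (intro sum.cong refl)
    fix j r' assume j: "j \<in> {..<n}" and r': "r' \<in> {..<p}"
    have jj: "j*p+r' < p*n" using blt[of j n r' p] j r' by (simp add: mult.commute)
    have e: "\<not> b < n - 1 \<Longrightarrow> b*p + r - (n-1)*p = r" using b by (subgoal_tac "b = n-1") auto
    have e2: "(j*p+r' = b*p+r+p) = (j = b+1 \<and> r' = r)"
      using beq[of r' p r j "b+1"] r r' by (simp add: ac_simps)
    have e3: "(b*p + r < (n-1)*p) = (b < n-1)" using blt_iff[of r p b "n-1"] r by simp
    show "A_c n p A $$ (b*p+r, j*p+r') * w $ (j*p+r') = (if b < n-1 then (if j = b+1 \<and> r' = r then 1 else 0) else - A (n-j) $$ (r,r')) * w $ (j*p+r')"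
      using i jj e e2 e3 r' unfolding A_c_def by simp
  qed
  also have "\<dots> = (if b < n-1 then w $ ((b+1)*p+r) else - (\<Sum>j<n. \<Sum>r'<p. A (n-j) $$ (r,r') * w $ (j*p+r')))"
  proof (cases "b < n-1")
    case True
    have "b+1 < n" using True by simp
    then show ?thesis using True blk_sum_delta[of "b+1" n r p "\<lambda>j r'. w $ (j*p+r')"] r by simp
  next
    case False
    then show ?thesis by (simp add: sum_negf)
  qed
  finally show ?thesis .
qed

lemma BMf_rowz:
  fixes u :: "real vec"
  assumes u: "u \<in> carrier_vec m" and i: "i < n*m"
  shows "(B_Mf n m p *\<^sub>v u) $ i = (kron (B_r n) (1\<^sub>m m) *\<^sub>v u) $ i"
proof -
  have iN: "i < n*m+p*n" using i by simp
  have "(B_Mf n m p *\<^sub>v u) $ i = (\<Sum>l<m. B_Mf n m p $$ (i,l) * u $ l)" by (rule mv_entry[OF BMf_dims u iN])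
  also have "\<dots> = (\<Sum>l<m. kron (B_r n) (1\<^sub>m m) $$ (i,l) * u $ l)"
    using i KB_carrier[of n m] unfolding B_Mf_def append_rows_def by (intro sum.cong refl) (auto simp: carrier_matD)
  also have "\<dots> = (kron (B_r n) (1\<^sub>m m) *\<^sub>v u) $ i" by (rule mv_entry[OF KB_carrier u i, symmetric])
  finally show ?thesis .
qed

lemma BMf_rowm:
  fixes u :: "real vec"
  assumes u: "u \<in> carrier_vec m" and i: "i < p*n"
  shows "(B_Mf n m p *\<^sub>v u) $ (n*m+i) = 0"
proof -
  have iN: "n*m+i < n*m+p*n" using i by simp
  have "(B_Mf n m p *\<^sub>v u) $ (n*m+i) = (\<Sum>l<m. B_Mf n m p $$ (n*m+i,l) * u $ l)" by (rule mv_entry[OF BMf_dims u iN])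
  also have "\<dots> = 0"
    using i KB_carrier[of n m] unfolding B_Mf_def append_rows_def by (intro sum.neutral) (auto simp: carrier_matD)
  finally show ?thesis .
qed

lemma GMf_carrier: "G_Mf n m p \<in> carrier_mat (n*m+p*n) (p*n)"
  unfolding G_Mf_def using KB_carrier[of n p] CM_carrier[of n p]
  by (auto simp: append_rows_def mult.commute[of m n] carrier_matD)

lemma GMf_rowz:
  fixes v :: "real vec"
  assumes v: "v \<in> carrier_vec (p*n)" and i: "i < n*m"
  shows "(G_Mf n m p *\<^sub>v v) $ i = 0"
proof -
  have iN: "i < n*m+p*n" using i by simp
  have "(G_Mf n m p *\<^sub>v v) $ i = (\<Sum>l<p*n. G_Mf n m p $$ (i,l) * v $ l)" by (rule mv_entry[OF GMf_carrier v iN])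
  also have "\<dots> = 0"
    using i KB_carrier[of n p] CM_carrier[of n p] unfolding G_Mf_def append_rows_def
    by (intro sum.neutral) (auto simp: carrier_matD mult.commute[of m n])
  finally show ?thesis .
qed

lemma GMf_rowm:
  fixes v :: "real vec"
  assumes v: "v \<in> carrier_vec (p*n)" and i: "i < p*n"
  shows "(G_Mf n m p *\<^sub>v v) $ (n*m+i) = (kron (B_r n) (1\<^sub>m p) *\<^sub>v (C_M n p *\<^sub>v v)) $ i"
proof -
  have iN: "n*m+i < n*m+p*n" using i by simp
  have i': "i < n*p" using i by (simp add: mult.commute)
  have KC: "kron (B_r n) (1\<^sub>m p) * C_M n p \<in> carrier_mat (n*p) (p*n)" using KB_carrier[of n p] CM_carrier[of n p] by simp
  have "(G_Mf n m p *\<^sub>v v) $ (n*m+i) = (\<Sum>l<p*n. G_Mf n m p $$ (n*m+i,l) * v $ l)" by (rule mv_entry[OF GMf_carrier v iN])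
  also have "\<dots> = (\<Sum>l<p*n. (kron (B_r n) (1\<^sub>m p) * C_M n p) $$ (i,l) * v $ l)"
    using i KC unfolding G_Mf_def append_rows_def
    by (intro sum.cong refl) (auto simp: carrier_matD mult.commute[of m n] mult.commute[of n p])
  also have "\<dots> = ((kron (B_r n) (1\<^sub>m p) * C_M n p) *\<^sub>v v) $ i" by (rule mv_entry[OF KC v i', symmetric])
  also have "\<dots> = (kron (B_r n) (1\<^sub>m p) *\<^sub>v (C_M n p *\<^sub>v v)) $ i"
    using assoc_mult_mat_vec[OF KB_carrier CM_carrier v] by simp
  finally show ?thesis .
qed

lemma indef_cont:
  fixes phi f :: "real \<Rightarrow> real"
  assumes f: "f integrable_on {0..T}" and e: "\<And>t. t \<in> {0..T} \<Longrightarrow> phi t = a + integral {0..t} f"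
  shows "continuous_on {0..T} phi"
proof (rule continuous_on_eq)
  show "continuous_on {0..T} (\<lambda>t. a + integral {0..t} f)"
    by (intro continuous_intros indefinite_integral_continuous_1[OF f])
  show "\<And>t. t \<in> {0..T} \<Longrightarrow> a + integral {0..t} f = phi t" using e by simp
qed

lemma lin_int:
  fixes f :: "real \<Rightarrow> real" and g h :: "nat \<Rightarrow> nat \<Rightarrow> real \<Rightarrow> real" and P Q :: "nat \<Rightarrow> nat \<Rightarrow> real"
  assumes f: "f integrable_on S"
    and g: "\<And>j t. j < n \<Longrightarrow> t < m \<Longrightarrow> g j t integrable_on S"
    and h: "\<And>j t. j < n \<Longrightarrow> t < p \<Longrightarrow> h j t integrable_on S"
  shows "integral S (\<lambda>s. f s - (\<Sum>j<n. \<Sum>t<m. P j t * g j t s) - (\<Sum>j<n. \<Sum>t<p. Q j t * h j t s))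
       = integral S f - (\<Sum>j<n. \<Sum>t<m. P j t * integral S (g j t)) - (\<Sum>j<n. \<Sum>t<p. Q j t * integral S (h j t))"
proof -
  have gi: "(\<lambda>s. \<Sum>j<n. \<Sum>t<m. P j t * g j t s) integrable_on S"
    using g by (intro integrable_sum integrable_on_mult_right) auto
  have hi: "(\<lambda>s. \<Sum>j<n. \<Sum>t<p. Q j t * h j t s) integrable_on S"
    using h by (intro integrable_sum integrable_on_mult_right) auto
  have ig: "integral S (\<lambda>s. \<Sum>j<n. \<Sum>t<m. P j t * g j t s) = (\<Sum>j<n. \<Sum>t<m. P j t * integral S (g j t))"
  proof -
    have "integral S (\<lambda>s. \<Sum>j<n. \<Sum>t<m. P j t * g j t s) = (\<Sum>j<n. integral S (\<lambda>s. \<Sum>t<m. P j t * g j t s))"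
      using g by (intro integral_sum) (auto intro!: integrable_sum integrable_on_mult_right)
    also have "\<dots> = (\<Sum>j<n. \<Sum>t<m. integral S (\<lambda>s. P j t * g j t s))"
      using g by (intro sum.cong refl integral_sum) (auto intro!: integrable_on_mult_right)
    finally show ?thesis by simp
  qed
  have ih: "integral S (\<lambda>s. \<Sum>j<n. \<Sum>t<p. Q j t * h j t s) = (\<Sum>j<n. \<Sum>t<p. Q j t * integral S (h j t))"
  proof -
    have "integral S (\<lambda>s. \<Sum>j<n. \<Sum>t<p. Q j t * h j t s) = (\<Sum>j<n. integral S (\<lambda>s. \<Sum>t<p. Q j t * h j t s))"
      using h by (intro integral_sum) (auto intro!: integrable_sum integrable_on_mult_right)
    also have "\<dots> = (\<Sum>j<n. \<Sum>t<p. integral S (\<lambda>s. Q j t * h j t s))"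
      using h by (intro sum.cong refl integral_sum) (auto intro!: integrable_on_mult_right)
    finally show ?thesis by simp
  qed
  have "integral S (\<lambda>s. f s - (\<Sum>j<n. \<Sum>t<m. P j t * g j t s) - (\<Sum>j<n. \<Sum>t<p. Q j t * h j t s))
      = integral S (\<lambda>s. f s - (\<Sum>j<n. \<Sum>t<m. P j t * g j t s)) - integral S (\<lambda>s. \<Sum>j<n. \<Sum>t<p. Q j t * h j t s)"
    by (rule integral_diff[OF integrable_diff[OF f gi] hi])
  also have "integral S (\<lambda>s. f s - (\<Sum>j<n. \<Sum>t<m. P j t * g j t s)) = integral S f - integral S (\<lambda>s. \<Sum>j<n. \<Sum>t<m. P j t * g j t s)"
    by (rule integral_diff[OF f gi])
  finally show ?thesis unfolding ig ih .
qed

lemma set_int_HK: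
  fixes f :: "real \<Rightarrow> real"
  assumes "set_integrable lborel {0..t} f"
  shows "f integrable_on {0..t}" "(LINT s:{0..t}|lborel. f s) = integral {0..t} f"
  using set_borel_integral_eq_integral[OF assms] by auto

lemma ode_main:
  fixes n m p :: nat and A B :: "nat \<Rightarrow> real mat" and c :: "nat \<Rightarrow> real"
    and x0 :: "real vec" and u x \<zeta> \<mu> :: "real \<Rightarrow> real vec"
  assumes n1: "n \<ge> 1" and x0: "x0 \<in> carrier_vec (p*n)"
    and uI: "loc_integrable_input m u"
    and Hx: "solves_lin_ode (A_M n p A) (B_M n m p B) x0 u x"
    and Hz: "solves_lin_ode (kron (A_r n c) (1\<^sub>m m)) (kron (B_r n) (1\<^sub>m m)) (0\<^sub>v (m * n)) u \<zeta>"
    and Hm: "solves_lin_ode (kron (A_r n c) (1\<^sub>m p)) (kron (B_r n) (1\<^sub>m p)) (0\<^sub>v (p * n)) (\<lambda>t. C_M n p *\<^sub>v x t) \<mu>"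
  shows "\<forall>t\<ge>0. \<forall>i<(m + p) * n.
              set_integrable lborel {0..t}
                (\<lambda>s. (A_Mf n m p A B c *\<^sub>v (\<zeta> s @\<^sub>v \<mu> s) + B_Mf n m p *\<^sub>v u s
                      + G_Mf n m p *\<^sub>v (mat_exp (transpose_mat (kron (A_r n c) (1\<^sub>m p))) s *\<^sub>v x0)) $ i)
            \<and> (\<zeta> t @\<^sub>v \<mu> t) $ i =
              (LINT s:{0..t}|lborel.
                 (A_Mf n m p A B c *\<^sub>v (\<zeta> s @\<^sub>v \<mu> s) + B_Mf n m p *\<^sub>v u s
                  + G_Mf n m p *\<^sub>v (mat_exp (transpose_mat (kron (A_r n c) (1\<^sub>m p))) s *\<^sub>v x0)) $ i)"
proof -
  define gx where "gx s = A_M n p A *\<^sub>v x s + B_M n m p B *\<^sub>v u s" for s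
  define gz where "gz s = kron (A_r n c) (1\<^sub>m m) *\<^sub>v \<zeta> s + kron (B_r n) (1\<^sub>m m) *\<^sub>v u s" for s
  define gm where "gm s = kron (A_r n c) (1\<^sub>m p) *\<^sub>v \<mu> s + kron (B_r n) (1\<^sub>m p) *\<^sub>v (C_M n p *\<^sub>v x s)" for s
  have dA: "dim_row (A_M n p A) = p*n" using AM_carrier by blast
  have dKm: "dim_row (kron (A_r n c) (1\<^sub>m m)) = n*m" using KA_carrier by blast
  have dKp: "dim_row (kron (A_r n c) (1\<^sub>m p)) = n*p" using KA_carrier by blast
  have du: "\<And>s. u s \<in> carrier_vec m" using uI unfolding loc_integrable_input_def carrier_vec_def by auto
  have dx: "\<And>s. 0 \<le> s \<Longrightarrow> x s \<in> carrier_vec (p*n)" using Hx dA unfolding solves_lin_ode_def carrier_vec_def by auto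
  have dz: "\<And>s. 0 \<le> s \<Longrightarrow> \<zeta> s \<in> carrier_vec (n*m)" using Hz dKm unfolding solves_lin_ode_def carrier_vec_def by auto
  have dm: "\<And>s. 0 \<le> s \<Longrightarrow> \<mu> s \<in> carrier_vec (p*n)" using Hm dKp unfolding solves_lin_ode_def carrier_vec_def
    by (auto simp: mult.commute)
  have Ix: "\<And>t i. 0 \<le> t \<Longrightarrow> i < p*n \<Longrightarrow> set_integrable lborel {0..t} (\<lambda>s. gx s $ i) \<and> x t $ i = x0 $ i + (LINT s:{0..t}|lborel. gx s $ i)"
    using Hx dA unfolding solves_lin_ode_def gx_def by auto
  have Iz: "\<And>t i. 0 \<le> t \<Longrightarrow> i < n*m \<Longrightarrow> set_integrable lborel {0..t} (\<lambda>s. gz s $ i) \<and> \<zeta> t $ i = (LINT s:{0..t}|lborel. gz s $ i)"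
    using Hz dKm unfolding solves_lin_ode_def gz_def by (auto simp: mult.commute[of m n])
  have Im: "\<And>t i. 0 \<le> t \<Longrightarrow> i < p*n \<Longrightarrow> set_integrable lborel {0..t} (\<lambda>s. gm s $ i) \<and> \<mu> t $ i = (LINT s:{0..t}|lborel. gm s $ i)"
    using Hm dKp unfolding solves_lin_ode_def gm_def by (auto simp: mult.commute[of n p])
  have Kx: "\<And>t i. 0 \<le> t \<Longrightarrow> i < p*n \<Longrightarrow> (\<lambda>s. gx s $ i) integrable_on {0..t} \<and> x t $ i = x0 $ i + integral {0..t} (\<lambda>s. gx s $ i)"
    using Ix set_int_HK by metis
  have Kz: "\<And>t i. 0 \<le> t \<Longrightarrow> i < n*m \<Longrightarrow> (\<lambda>s. gz s $ i) integrable_on {0..t} \<and> \<zeta> t $ i = integral {0..t} (\<lambda>s. gz s $ i)"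
    using Iz set_int_HK by metis
  have Km: "\<And>t i. 0 \<le> t \<Longrightarrow> i < p*n \<Longrightarrow> (\<lambda>s. gm s $ i) integrable_on {0..t} \<and> \<mu> t $ i = integral {0..t} (\<lambda>s. gm s $ i)"
    using Im set_int_HK by metis
  have Cgx: "\<And>s k r. 0 \<le> s \<Longrightarrow> k < n \<Longrightarrow> r < p \<Longrightarrow> gx s $ (k*p+r) = (if 1 \<le> k then x s $ ((k-1)*p+r) else 0)
      - (\<Sum>r'<p. A (n-k) $$ (r,r') * x s $ ((n-1)*p+r')) + (\<Sum>t<m. B (n-k) $$ (r,t) * u s $ t)"
  proof -
    fix s :: real and k r :: nat assume s: "0 \<le> s" and k: "k < n" and r: "r < p"
    have i: "k*p+r < p*n" using blt[OF k r] by (simp add: mult.commute)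
    show "gx s $ (k*p+r) = (if 1 \<le> k then x s $ ((k-1)*p+r) else 0)
      - (\<Sum>r'<p. A (n-k) $$ (r,r') * x s $ ((n-1)*p+r')) + (\<Sum>t<m. B (n-k) $$ (r,t) * u s $ t)"
      unfolding gx_def using AMv[OF dx[OF s] k r, of A] BMv[OF du k r, of B] i BM_carrier[of n m p B] by (simp add: carrier_matD)
  qed
  have Cgz: "\<And>s j t. 0 \<le> s \<Longrightarrow> j < n \<Longrightarrow> t < m \<Longrightarrow> gz s $ (j*m+t) = (if j < n-1 then \<zeta> s $ ((j+1)*m+t) else 0)
      + (if j = n-1 then u s $ t - (\<Sum>b<n. c (n-b) * \<zeta> s $ (b*m+t)) else 0)"
  proof -
    fix s :: real and j t :: nat assume s: "0 \<le> s" and j: "j < n" and t: "t < m"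
    have i: "j*m+t < n*m" using blt[OF j t] .
    show "gz s $ (j*m+t) = (if j < n-1 then \<zeta> s $ ((j+1)*m+t) else 0)
      + (if j = n-1 then u s $ t - (\<Sum>b<n. c (n-b) * \<zeta> s $ (b*m+t)) else 0)"
      unfolding gz_def using KAv[OF dz[OF s] j t, of c] KBv[OF du j t] i KB_carrier[of n m] j by (auto simp: carrier_matD)
  qed
  have Cgm: "\<And>s j r. 0 \<le> s \<Longrightarrow> j < n \<Longrightarrow> r < p \<Longrightarrow> gm s $ (j*p+r) = (if j < n-1 then \<mu> s $ ((j+1)*p+r) else 0)
      + (if j = n-1 then x s $ ((n-1)*p+r) - (\<Sum>b<n. c (n-b) * \<mu> s $ (b*p+r)) else 0)"
  proof -
    fix s :: real and j r :: nat assume s: "0 \<le> s" and j: "j < n" and r: "r < p"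
    have i: "j*p+r < n*p" using blt[OF j r] .
    have ms: "\<mu> s \<in> carrier_vec (n*p)" using dm[OF s] by (simp add: mult.commute)
    have cx: "C_M n p *\<^sub>v x s \<in> carrier_vec p" using CM_carrier[of n p] dx[OF s] by simp
    show "gm s $ (j*p+r) = (if j < n-1 then \<mu> s $ ((j+1)*p+r) else 0)
      + (if j = n-1 then x s $ ((n-1)*p+r) - (\<Sum>b<n. c (n-b) * \<mu> s $ (b*p+r)) else 0)"
      unfolding gm_def using KAv[OF ms j r, of c] KBv[OF cx j r] CMv[OF dx[OF s] r n1] i KB_carrier[of n p] j
      by (auto simp: carrier_matD)
  qed
  define xt where "xt s i = x s $ i - (\<Sum>j<n. \<Sum>t<m. Pe n c B (i div p) j (i mod p) t * \<zeta> s $ (j*m+t))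
      - (\<Sum>j<n. \<Sum>t<p. Qe n c A (i div p) j (i mod p) t * \<mu> s $ (j*p+t))" for s i
  define F where "F = transpose_mat (kron (A_r n c) (1\<^sub>m p))"
  have Fc: "F \<in> carrier_mat (p*n) (p*n)" using KA_carrier[of n c p] unfolding F_def by (simp add: mult.commute)
  have xtb: "\<And>s k r. r < p \<Longrightarrow> xt s (k*p+r) = x s $ (k*p+r) - (\<Sum>j<n. \<Sum>t<m. Pe n c B k j r t * \<zeta> s $ (j*m+t))
      - (\<Sum>j<n. \<Sum>t<p. Qe n c A k j r t * \<mu> s $ (j*p+t))"
    unfolding xt_def by simp
  have DX: "\<And>s i. 0 \<le> s \<Longrightarrow> i < p*n \<Longrightarrow> gx s $ i - (\<Sum>j<n. \<Sum>t<m. Pe n c B (i div p) j (i mod p) t * gz s $ (j*m+t))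
      - (\<Sum>j<n. \<Sum>t<p. Qe n c A (i div p) j (i mod p) t * gm s $ (j*p+t)) = (\<Sum>l<p*n. F $$ (i,l) * xt s l)"
  proof -
    fix s :: real and i :: nat assume s: "0 \<le> s" and i: "i < p*n"
    define k where "k = i div p"
    define r where "r = i mod p"
    have p0: "0 < p" using i by (cases p) auto
    have r: "r < p" unfolding r_def using p0 by simp
    have k: "k < n" unfolding k_def using i by (simp add: less_mult_imp_div_less mult.commute)
    have ikr: "i = k*p+r" unfolding k_def r_def by simp
    have L1: "gx s $ i = (if 1 \<le> k then x s $ ((k-1)*p+r) else 0)
      - (\<Sum>r'<p. A (n-k) $$ (r,r') * x s $ ((n-1)*p+r')) + (\<Sum>t<m. B (n-k) $$ (r,t) * u s $ t)"
      unfolding ikr by (rule Cgx[OF s k r])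
    have L2: "(\<Sum>j<n. \<Sum>t<m. Pe n c B (i div p) j (i mod p) t * gz s $ (j*m+t)) =
       (\<Sum>j<n. \<Sum>t<m. Pe n c B k j r t * ((if j < n-1 then \<zeta> s $ ((j+1)*m+t) else 0)
      + (if j = n-1 then u s $ t - (\<Sum>b<n. c (n-b) * \<zeta> s $ (b*m+t)) else 0)))"
      unfolding k_def[symmetric] r_def[symmetric] using Cgz[OF s] by (intro sum.cong refl) auto
    have L3: "(\<Sum>j<n. \<Sum>t<p. Qe n c A (i div p) j (i mod p) t * gm s $ (j*p+t)) =
       (\<Sum>j<n. \<Sum>t<p. Qe n c A k j r t * ((if j < n-1 then \<mu> s $ ((j+1)*p+t) else 0)
      + (if j = n-1 then x s $ ((n-1)*p+t) - (\<Sum>b<n. c (n-b) * \<mu> s $ (b*p+t)) else 0)))"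
      unfolding k_def[symmetric] r_def[symmetric] using Cgm[OF s] by (intro sum.cong refl) auto
    have R: "(\<Sum>l<p*n. F $$ (i,l) * xt s l) = (if 1 \<le> k then xt s ((k-1)*p+r) else 0) - c (n-k) * xt s ((n-1)*p+r)"
      unfolding F_def ikr by (rule Frow[OF k r])
    have D: "((if 1 \<le> k then x s $ ((k-1)*p+r) else 0) - (\<Sum>r'<p. A (n-k) $$ (r,r') * x s $ ((n-1)*p+r')) + (\<Sum>t<m. B (n-k) $$ (r,t) * u s $ t))
     - (\<Sum>j<n. \<Sum>t<m. Pe n c B k j r t * ((if j < n-1 then \<zeta> s $ ((j+1)*m+t) else 0)
      + (if j = n-1 then u s $ t - (\<Sum>b<n. c (n-b) * \<zeta> s $ (b*m+t)) else 0)))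
     - (\<Sum>j<n. \<Sum>t<p. Qe n c A k j r t * ((if j < n-1 then \<mu> s $ ((j+1)*p+t) else 0)
      + (if j = n-1 then x s $ ((n-1)*p+t) - (\<Sum>b<n. c (n-b) * \<mu> s $ (b*p+t)) else 0)))
     = (if 1 \<le> k then xt s ((k-1)*p+r) else 0) - c (n-k) * xt s ((n-1)*p+r)"
      using deriv_id[OF n1 k r, where m=m and c=c and A=A and B=B and X="\<lambda>k r. x s $ (k*p+r)"
        and Z="\<lambda>j t. \<zeta> s $ (j*m+t)" and U="\<lambda>j t. \<mu> s $ (j*p+t)" and uu="\<lambda>t. u s $ t"]
      unfolding xtb[OF r] by simp
    show "gx s $ i - (\<Sum>j<n. \<Sum>t<m. Pe n c B (i div p) j (i mod p) t * gz s $ (j*m+t))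
      - (\<Sum>j<n. \<Sum>t<p. Qe n c A (i div p) j (i mod p) t * gm s $ (j*p+t)) = (\<Sum>l<p*n. F $$ (i,l) * xt s l)"
      unfolding L1 L2 L3 R D ..
  qed
  have cx: "\<And>T i. 0 \<le> T \<Longrightarrow> i < p*n \<Longrightarrow> continuous_on {0..T} (\<lambda>s. x s $ i)"
  proof -
    fix T :: real and i :: nat assume T: "0 \<le> T" and i: "i < p*n"
    have f: "(\<lambda>s. gx s $ i) integrable_on {0..T}" using Kx[OF T i] by simp
    have e: "\<And>t. t \<in> {0..T} \<Longrightarrow> x t $ i = x0 $ i + integral {0..t} (\<lambda>s. gx s $ i)" using Kx[OF _ i] by simp
    show "continuous_on {0..T} (\<lambda>s. x s $ i)" by (rule indef_cont[OF f e])
  qed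
  have cz: "\<And>T i. 0 \<le> T \<Longrightarrow> i < n*m \<Longrightarrow> continuous_on {0..T} (\<lambda>s. \<zeta> s $ i)"
  proof -
    fix T :: real and i :: nat assume T: "0 \<le> T" and i: "i < n*m"
    have f: "(\<lambda>s. gz s $ i) integrable_on {0..T}" using Kz[OF T i] by simp
    have e: "\<And>t. t \<in> {0..T} \<Longrightarrow> \<zeta> t $ i = 0 + integral {0..t} (\<lambda>s. gz s $ i)" using Kz[OF _ i] by simp
    show "continuous_on {0..T} (\<lambda>s. \<zeta> s $ i)" by (rule indef_cont[OF f e])
  qed
  have cm: "\<And>T i. 0 \<le> T \<Longrightarrow> i < p*n \<Longrightarrow> continuous_on {0..T} (\<lambda>s. \<mu> s $ i)"
  proof -
    fix T :: real and i :: nat assume T: "0 \<le> T" and i: "i < p*n"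
    have f: "(\<lambda>s. gm s $ i) integrable_on {0..T}" using Km[OF T i] by simp
    have e: "\<And>t. t \<in> {0..T} \<Longrightarrow> \<mu> t $ i = 0 + integral {0..t} (\<lambda>s. gm s $ i)" using Km[OF _ i] by simp
    show "continuous_on {0..T} (\<lambda>s. \<mu> s $ i)" by (rule indef_cont[OF f e])
  qed
  have cxt: "\<And>T i. 0 \<le> T \<Longrightarrow> i < p*n \<Longrightarrow> continuous_on {0..T} (\<lambda>s. xt s i)"
  proof -
    fix T :: real and i :: nat assume T: "0 \<le> T" and i: "i < p*n"
    have "\<And>j t. j < n \<Longrightarrow> t < m \<Longrightarrow> continuous_on {0..T} (\<lambda>s. \<zeta> s $ (j*m+t))"
      using cz[OF T] blt by blast
    moreover have "\<And>j t. j < n \<Longrightarrow> t < p \<Longrightarrow> continuous_on {0..T} (\<lambda>s. \<mu> s $ (j*p+t))"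
      using cm[OF T] blt by (metis mult.commute)
    ultimately show "continuous_on {0..T} (\<lambda>s. xt s i)"
      unfolding xt_def using cx[OF T i] by (intro continuous_intros) auto
  qed
  have eqT: "\<And>t i. 0 \<le> t \<Longrightarrow> i < p*n \<Longrightarrow> xt t i = x0 $ i + integral {0..t} (\<lambda>s. \<Sum>l<p*n. F $$ (i,l) * xt s l)"
  proof -
    fix t :: real and i :: nat assume t: "0 \<le> t" and i: "i < p*n"
    have zi: "\<And>j t'. j < n \<Longrightarrow> t' < m \<Longrightarrow> j*m+t' < n*m" using blt by blast
    have mi: "\<And>j t'. j < n \<Longrightarrow> t' < p \<Longrightarrow> j*p+t' < p*n" using blt by (metis mult.commute)
    have "xt t i = (x0 $ i + integral {0..t} (\<lambda>s. gx s $ i))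
       - (\<Sum>j<n. \<Sum>t'<m. Pe n c B (i div p) j (i mod p) t' * integral {0..t} (\<lambda>s. gz s $ (j*m+t')))
       - (\<Sum>j<n. \<Sum>t'<p. Qe n c A (i div p) j (i mod p) t' * integral {0..t} (\<lambda>s. gm s $ (j*p+t')))"
      unfolding xt_def using Kx[OF t i] Kz[OF t zi] Km[OF t mi] by simp
    also have "\<dots> = x0 $ i + (integral {0..t} (\<lambda>s. gx s $ i)
       - (\<Sum>j<n. \<Sum>t'<m. Pe n c B (i div p) j (i mod p) t' * integral {0..t} (\<lambda>s. gz s $ (j*m+t')))
       - (\<Sum>j<n. \<Sum>t'<p. Qe n c A (i div p) j (i mod p) t' * integral {0..t} (\<lambda>s. gm s $ (j*p+t'))))" by simp
    also have "integral {0..t} (\<lambda>s. gx s $ i)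
       - (\<Sum>j<n. \<Sum>t'<m. Pe n c B (i div p) j (i mod p) t' * integral {0..t} (\<lambda>s. gz s $ (j*m+t')))
       - (\<Sum>j<n. \<Sum>t'<p. Qe n c A (i div p) j (i mod p) t' * integral {0..t} (\<lambda>s. gm s $ (j*p+t')))
       = integral {0..t} (\<lambda>s. gx s $ i - (\<Sum>j<n. \<Sum>t'<m. Pe n c B (i div p) j (i mod p) t' * gz s $ (j*m+t'))
          - (\<Sum>j<n. \<Sum>t'<p. Qe n c A (i div p) j (i mod p) t' * gm s $ (j*p+t')))"
      by (rule lin_int[symmetric]) (use Kx[OF t i] Kz[OF t zi] Km[OF t mi] in auto)
    also have "\<dots> = integral {0..t} (\<lambda>s. \<Sum>l<p*n. F $$ (i,l) * xt s l)"
      by (rule Henstock_Kurzweil_Integration.integral_cong) (use DX i in auto)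
    finally show "xt t i = x0 $ i + integral {0..t} (\<lambda>s. \<Sum>l<p*n. F $$ (i,l) * xt s l)" .
  qed
  have pic: "\<And>s i. 0 \<le> s \<Longrightarrow> i < p*n \<Longrightarrow> xt s i = (mat_exp F s *\<^sub>v x0) $ i"
  proof -
    fix s :: real and i :: nat assume s: "0 \<le> s" and i: "i < p*n"
    show "xt s i = (mat_exp F s *\<^sub>v x0) $ i"
      by (rule picard[OF Fc x0 s cxt[OF s] eqT i]) auto
  qed
  have Ec: "\<And>s. mat_exp F s *\<^sub>v x0 \<in> carrier_vec (p*n)"
  proof -
    fix s
    have "mat_exp F s \<in> carrier_mat (p*n) (p*n)" using Fc unfolding mat_exp_def by auto
    then show "mat_exp F s *\<^sub>v x0 \<in> carrier_vec (p*n)" using x0 by simp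
  qed
  have N: "(m + p) * n = n*m + p*n" by (simp add: algebra_simps)
  show ?thesis unfolding F_def[symmetric] N
  proof (intro allI impI)
    fix t :: real and i :: nat assume t: "0 \<le> t" and i: "i < n*m + p*n"
    define R where "R s = (A_Mf n m p A B c *\<^sub>v (\<zeta> s @\<^sub>v \<mu> s) + B_Mf n m p *\<^sub>v u s + G_Mf n m p *\<^sub>v (mat_exp F s *\<^sub>v x0)) $ i" for s
    have Rs: "\<And>s. 0 \<le> s \<Longrightarrow> R s = (A_Mf n m p A B c *\<^sub>v (\<zeta> s @\<^sub>v \<mu> s)) $ i + (B_Mf n m p *\<^sub>v u s) $ i + (G_Mf n m p *\<^sub>v (mat_exp F s *\<^sub>v x0)) $ i"
      unfolding R_def using i AMf_carrier[of n m p A B c] BMf_dims[of n m p] GMf_carrier[of n m p]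
      by (simp add: carrier_matD)
    have sets: "{0..t} \<in> sets lborel" by simp
    show "set_integrable lborel {0..t} (\<lambda>s. R s) \<and> (\<zeta> t @\<^sub>v \<mu> t) $ i = (LINT s:{0..t}|lborel. R s)"
    proof (cases "i < n*m")
      case True
      have eq: "\<And>s. s \<in> {0..t} \<Longrightarrow> R s = gz s $ i"
      proof -
        fix s :: real assume "s \<in> {0..t}"
        then have s: "0 \<le> s" by simp
        show "R s = gz s $ i"
          unfolding Rs[OF s] gz_def using AMf_rowz[OF dz[OF s] dm[OF s] True, of A B c] BMf_rowz[where p=p, OF du[of s] True]
            GMf_rowz[where m=m, OF Ec[of s] True] True KB_carrier[of n m] by (simp add: carrier_matD)
      qed
      have "set_integrable lborel {0..t} (\<lambda>s. R s) = set_integrable lborel {0..t} (\<lambda>s. gz s $ i)"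
        by (rule set_integrable_cong) (use eq in auto)
      moreover have "(LINT s:{0..t}|lborel. R s) = (LINT s:{0..t}|lborel. gz s $ i)"
        by (rule set_lebesgue_integral_cong[OF sets]) (use eq in auto)
      moreover have "(\<zeta> t @\<^sub>v \<mu> t) $ i = \<zeta> t $ i" using dz[OF t] dm[OF t] True i by simp
      ultimately show ?thesis using Iz[OF t True] by simp
    next
      case False
      define i' where "i' = i - n*m"
      have i': "i' < p*n" using i False unfolding i'_def by simp
      have ii: "i = n*m + i'" using False unfolding i'_def by simp
      define b where "b = i' div p"
      define r where "r = i' mod p"
      have p0: "0 < p" using i' by (cases p) auto
      have r: "r < p" unfolding r_def using p0 by simp
      have b: "b < n" unfolding b_def using i' by (simp add: less_mult_imp_div_less mult.commute)
      have ibr: "i' = b*p+r" unfolding b_def r_def by simp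
      have eq: "\<And>s. s \<in> {0..t} \<Longrightarrow> R s = gm s $ i'"
      proof -
        fix s :: real assume "s \<in> {0..t}"
        then have s: "0 \<le> s" by simp
        have zs: "\<zeta> s \<in> carrier_vec (m*n)" using dz[OF s] by (simp add: mult.commute)
        have cE: "C_M n p *\<^sub>v (mat_exp F s *\<^sub>v x0) \<in> carrier_vec p" using CM_carrier[of n p] Ec by simp
        have R1: "R s = (L_B n m p B *\<^sub>v \<zeta> s) $ (b*p+r) + (A_c n p A *\<^sub>v \<mu> s) $ (b*p+r)
            + (kron (B_r n) (1\<^sub>m p) *\<^sub>v (C_M n p *\<^sub>v (mat_exp F s *\<^sub>v x0))) $ (b*p+r)"
          unfolding Rs[OF s] ii using AMf_rowm[OF dz[OF s] dm[OF s] i', of A B c] BMf_rowm[where n=n, OF du[of s] i']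
            GMf_rowm[where m=m, OF Ec[of s] i'] ibr by simp
        have KBE: "(kron (B_r n) (1\<^sub>m p) *\<^sub>v (C_M n p *\<^sub>v (mat_exp F s *\<^sub>v x0))) $ (b*p+r)
            = (if b = n-1 then xt s ((n-1)*p+r) else 0)"
        proof -
          have j: "(n-1)*p+r < p*n" using blt[of "n-1" n r p] n1 r by (simp add: mult.commute)
          show ?thesis using KBv[OF cE b r] CMv[OF Ec[of s] r n1] pic[OF s j] by simp
        qed
        show "R s = gm s $ i'"
        proof (cases "b < n-1")
          case True
          then show ?thesis unfolding R1 KBE ibr Cgm[OF s b r] using LBv[OF zs b r, of B] Acv[OF dm[OF s] b r, of A] True by simp
        next
          case False
          then have bn: "b = n-1" using b by simp
          have Qs: "(\<Sum>j<n. \<Sum>t<p. Qe n c A (n-1) j r t * \<mu> s $ (j*p+t))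
              = (\<Sum>j<n. c (n-j) * \<mu> s $ (j*p+r)) - (\<Sum>j<n. \<Sum>t<p. A (n-j) $$ (r,t) * \<mu> s $ (j*p+t))"
          proof -
            have "(\<Sum>j<n. \<Sum>t<p. Qe n c A (n-1) j r t * \<mu> s $ (j*p+t))
                = (\<Sum>j<n. (\<Sum>t<p. (if r = t then 1 else 0) * (c (n-j) * \<mu> s $ (j*p+t))) - (\<Sum>t<p. A (n-j) $$ (r,t) * \<mu> s $ (j*p+t)))"
              using Qe_lastrow[OF n1, of _ c A r] by (intro sum.cong refl) (simp add: left_diff_distrib sum_subtractf mult.assoc mult.left_commute)
            also have "\<dots> = (\<Sum>j<n. c (n-j) * \<mu> s $ (j*p+r) - (\<Sum>t<p. A (n-j) $$ (r,t) * \<mu> s $ (j*p+t)))"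
              using sum_delta_mult(4)[OF r] by simp
            finally show ?thesis by (simp add: sum_subtractf)
          qed
          have Ps: "(\<Sum>j<n. \<Sum>t<m. Pe n c B (n-1) j r t * \<zeta> s $ (j*m+t)) = (\<Sum>j<n. \<Sum>t<m. B (n-j) $$ (r,t) * \<zeta> s $ (j*m+t))"
            using Pe_lastrow[OF n1, of _ c B r] by simp
          show ?thesis unfolding R1 KBE ibr Cgm[OF s b r] xtb[OF r] Qs Ps
            using LBv[OF zs b r, of B] Acv[OF dm[OF s] b r, of A] bn by simp
        qed
      qed
      have "set_integrable lborel {0..t} (\<lambda>s. R s) = set_integrable lborel {0..t} (\<lambda>s. gm s $ i')"
        by (rule set_integrable_cong) (use eq in auto)
      moreover have "(LINT s:{0..t}|lborel. R s) = (LINT s:{0..t}|lborel. gm s $ i')"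
        by (rule set_lebesgue_integral_cong[OF sets]) (use eq in auto)
      moreover have "(\<zeta> t @\<^sub>v \<mu> t) $ i = \<mu> t $ i'" using dz[OF t] dm[OF t] ii i by simp
      ultimately show ?thesis using Im[OF t i'] by simp
    qed
  qed
qed

theorem theorem1:
  fixes n m p :: nat
    and A B :: "nat \<Rightarrow> real mat"
  assumes "n \<ge> 1" and "m \<ge> 1" and "p \<ge> 1"
    and "\<forall>i\<in>{1..n}. A i \<in> carrier_mat p p"
    and "\<forall>i\<in>{1..n}. B i \<in> carrier_mat p m"
    and "assumption_1' n m p A B"
  shows "\<forall>(c :: nat \<Rightarrow> real) (x0 :: real vec) (u :: real \<Rightarrow> real vec)
            (x :: real \<Rightarrow> real vec) (\<zeta> :: real \<Rightarrow> real vec) (\<mu> :: real \<Rightarrow> real vec).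
           x0 \<in> carrier_vec (p * n) \<longrightarrow>
           loc_integrable_input m u \<longrightarrow>
           solves_lin_ode (A_M n p A) (B_M n m p B) x0 u x \<longrightarrow>
           solves_lin_ode (kron (A_r n c) (1\<^sub>m m)) (kron (B_r n) (1\<^sub>m m)) (0\<^sub>v (m * n)) u \<zeta> \<longrightarrow>
           solves_lin_ode (kron (A_r n c) (1\<^sub>m p)) (kron (B_r n) (1\<^sub>m p)) (0\<^sub>v (p * n))
              (\<lambda>t. C_M n p *\<^sub>v x t) \<mu> \<longrightarrow>
           (\<forall>t\<ge>0. \<forall>i<(m + p) * n.
              set_integrable lborel {0..t}
                (\<lambda>s. (A_Mf n m p A B c *\<^sub>v (\<zeta> s @\<^sub>v \<mu> s) + B_Mf n m p *\<^sub>v u s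
                      + G_Mf n m p *\<^sub>v (mat_exp (transpose_mat (kron (A_r n c) (1\<^sub>m p))) s *\<^sub>v x0)) $ i)
            \<and> (\<zeta> t @\<^sub>v \<mu> t) $ i =
              (LINT s:{0..t}|lborel.
                 (A_Mf n m p A B c *\<^sub>v (\<zeta> s @\<^sub>v \<mu> s) + B_Mf n m p *\<^sub>v u s
                  + G_Mf n m p *\<^sub>v (mat_exp (transpose_mat (kron (A_r n c) (1\<^sub>m p))) s *\<^sub>v x0)) $ i))
           \<and> reachable_pair (A_Mf n m p A B c) (B_Mf n m p)"
  proof (intro allI impI, rule conjI)
  fix c :: "nat \<Rightarrow> real" and x0 :: "real vec" and u x \<zeta> \<mu> :: "real \<Rightarrow> real vec"
  assume x0: "x0 \<in> carrier_vec (p * n)" and uI: "loc_integrable_input m u"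
    and Hx: "solves_lin_ode (A_M n p A) (B_M n m p B) x0 u x"
    and Hz: "solves_lin_ode (kron (A_r n c) (1\<^sub>m m)) (kron (B_r n) (1\<^sub>m m)) (0\<^sub>v (m * n)) u \<zeta>"
    and Hm: "solves_lin_ode (kron (A_r n c) (1\<^sub>m p)) (kron (B_r n) (1\<^sub>m p)) (0\<^sub>v (p * n)) (\<lambda>t. C_M n p *\<^sub>v x t) \<mu>"
  show "\<forall>t\<ge>0. \<forall>i<(m + p) * n.
              set_integrable lborel {0..t}
                (\<lambda>s. (A_Mf n m p A B c *\<^sub>v (\<zeta> s @\<^sub>v \<mu> s) + B_Mf n m p *\<^sub>v u s
                      + G_Mf n m p *\<^sub>v (mat_exp (transpose_mat (kron (A_r n c) (1\<^sub>m p))) s *\<^sub>v x0)) $ i)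
            \<and> (\<zeta> t @\<^sub>v \<mu> t) $ i =
              (LINT s:{0..t}|lborel.
                 (A_Mf n m p A B c *\<^sub>v (\<zeta> s @\<^sub>v \<mu> s) + B_Mf n m p *\<^sub>v u s
                  + G_Mf n m p *\<^sub>v (mat_exp (transpose_mat (kron (A_r n c) (1\<^sub>m p))) s *\<^sub>v x0)) $ i)"
    by (rule ode_main[OF assms(1) x0 uI Hx Hz Hm])
  show "reachable_pair (A_Mf n m p A B c) (B_Mf n m p)"
    by (rule reach_main[OF assms])
qed

end
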